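(* Let $R$ be a commutative ring with identity and $S$ a multiplicative subset of $R$. An $R$-module $F$ is $u$-$S$-flat if and only if every short ($u$-$S$-)exact sequence $0\rightarrow A\rightarrow B\rightarrow F\rightarrow 0$ of $R$-modules is $u$-$S$-pure.
   Context: A multiplicative subset $S$ satisfies $1\in S$ and is closed under products. An $R$-module $T$ is $u$-$S$-torsion if $sT=0$ for some $s\in S$. A short sequence $0\to A\xrightarrow{f}B\xrightarrow{g}C\to 0$ is $u$-$S$-exact if there is $s\in S$ with $s\,\mathrm{Ker}(f)=0$, $s\,\mathrm{Ker}(g)\subseteq\mathrm{Im}(f)$, $s\,\mathrm{Im}(f)\subseteq\mathrm{Ker}(g)$, $sC\subseteq\mathrm{Im}(g)$. It is $u$-$S$-pure if for every $R$-module $M$ the induced sequence $0\rightarrow M\otimes_RA\rightarrow M\otimes_RB\rightarrow M\otimes_RC\rightarrow 0$ is $u$-$S$-exact. An $R$-module $F$ is $u$-$S$-flat if for every short $u$-$S$-exact sequence $0\to A\to B\to C\to 0$ the induced sequence $0\to A\otimes_RF\to B\otimes_RF\to C\otimes_RF\to 0$ is $u$-$S$-exact; equivalently, $\mathrm{Tor}_1^R(M,F)$ is $u$-$S$-torsion for every $R$-module $M$. *)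

theory Defs
  imports "HOL-Algebra.Module"
begin

definition mult_subset :: "'r ring \<Rightarrow> 'r set \<Rightarrow> bool" where
  "mult_subset R S \<longleftrightarrow> S \<subseteq> carrier R \<and> \<one>\<^bsub>R\<^esub> \<in> S \<and>
     (\<forall>s\<in>S. \<forall>t\<in>S. s \<otimes>\<^bsub>R\<^esub> t \<in> S)"

definition mod_hom :: "'r ring \<Rightarrow> ('r,'a) module \<Rightarrow> ('r,'b) module \<Rightarrow> ('a \<Rightarrow> 'b) \<Rightarrow> bool" where
  "mod_hom R M N f \<longleftrightarrow> f \<in> carrier M \<rightarrow> carrier N \<and>
     (\<forall>x\<in>carrier M. \<forall>y\<in>carrier M. f (x \<oplus>\<^bsub>M\<^esub> y) = f x \<oplus>\<^bsub>N\<^esub> f y) \<and>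
     (\<forall>r\<in>carrier R. \<forall>x\<in>carrier M. f (r \<odot>\<^bsub>M\<^esub> x) = r \<odot>\<^bsub>N\<^esub> f x)"

definition u_S_exact :: "'r ring \<Rightarrow> 'r set \<Rightarrow> ('r,'a) module \<Rightarrow> ('r,'b) module \<Rightarrow> ('r,'c) module
    \<Rightarrow> ('a \<Rightarrow> 'b) \<Rightarrow> ('b \<Rightarrow> 'c) \<Rightarrow> bool" where
  "u_S_exact R S A B C f g \<longleftrightarrow> (\<exists>s\<in>S.
     (\<forall>a\<in>carrier A. f a = \<zero>\<^bsub>B\<^esub> \<longrightarrow> s \<odot>\<^bsub>A\<^esub> a = \<zero>\<^bsub>A\<^esub>) \<and>
     (\<forall>b\<in>carrier B. g b = \<zero>\<^bsub>C\<^esub> \<longrightarrow> s \<odot>\<^bsub>B\<^esub> b \<in> f ` carrier A) \<and>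
     (\<forall>a\<in>carrier A. g (s \<odot>\<^bsub>B\<^esub> f a) = \<zero>\<^bsub>C\<^esub>) \<and>
     (\<forall>c\<in>carrier C. s \<odot>\<^bsub>C\<^esub> c \<in> g ` carrier B))"

definition short_exact :: "('r,'a) module \<Rightarrow> ('r,'b) module \<Rightarrow> ('r,'c) module
    \<Rightarrow> ('a \<Rightarrow> 'b) \<Rightarrow> ('b \<Rightarrow> 'c) \<Rightarrow> bool" where
  "short_exact A B C f g \<longleftrightarrow>
     {a\<in>carrier A. f a = \<zero>\<^bsub>B\<^esub>} = {\<zero>\<^bsub>A\<^esub>} \<and>
     {b\<in>carrier B. g b = \<zero>\<^bsub>C\<^esub>} = f ` carrier A \<and>
     g ` carrier B = carrier C"

text \<open>Free R-module on the set carrier M x carrier A: finitely supported formal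
  R-linear combinations.\<close>
definition tfree :: "'r ring \<Rightarrow> ('r,'m) module \<Rightarrow> ('r,'a) module \<Rightarrow> ('m \<times> 'a \<Rightarrow> 'r) set" where
  "tfree R M A = {x. (\<forall>p. x p \<in> carrier R) \<and>
      (\<forall>p. p \<notin> carrier M \<times> carrier A \<longrightarrow> x p = \<zero>\<^bsub>R\<^esub>) \<and>
      finite {p. x p \<noteq> \<zero>\<^bsub>R\<^esub>}}"

definition fadd :: "'r ring \<Rightarrow> ('p \<Rightarrow> 'r) \<Rightarrow> ('p \<Rightarrow> 'r) \<Rightarrow> 'p \<Rightarrow> 'r" where
  "fadd R x y = (\<lambda>p. x p \<oplus>\<^bsub>R\<^esub> y p)"

definition fsmult :: "'r ring \<Rightarrow> 'r \<Rightarrow> ('p \<Rightarrow> 'r) \<Rightarrow> 'p \<Rightarrow> 'r" where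
  "fsmult R r x = (\<lambda>p. r \<otimes>\<^bsub>R\<^esub> x p)"

definition fneg :: "'r ring \<Rightarrow> ('p \<Rightarrow> 'r) \<Rightarrow> 'p \<Rightarrow> 'r" where
  "fneg R x = (\<lambda>p. \<ominus>\<^bsub>R\<^esub> x p)"

definition fdelta :: "'r ring \<Rightarrow> 'p \<Rightarrow> 'p \<Rightarrow> 'r" where
  "fdelta R q = (\<lambda>p. if p = q then \<one>\<^bsub>R\<^esub> else \<zero>\<^bsub>R\<^esub>)"

definition fzero :: "'r ring \<Rightarrow> 'p \<Rightarrow> 'r" where
  "fzero R = (\<lambda>p. \<zero>\<^bsub>R\<^esub>)"

definition tgens :: "'r ring \<Rightarrow> ('r,'m) module \<Rightarrow> ('r,'a) module \<Rightarrow> ('m \<times> 'a \<Rightarrow> 'r) set" where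
  "tgens R M A =
     {fadd R (fdelta R (m \<oplus>\<^bsub>M\<^esub> m', a)) (fneg R (fadd R (fdelta R (m, a)) (fdelta R (m', a))))
        | m m' a. m \<in> carrier M \<and> m' \<in> carrier M \<and> a \<in> carrier A} \<union>
     {fadd R (fdelta R (m, a \<oplus>\<^bsub>A\<^esub> a')) (fneg R (fadd R (fdelta R (m, a)) (fdelta R (m, a'))))
        | m a a'. m \<in> carrier M \<and> a \<in> carrier A \<and> a' \<in> carrier A} \<union>
     {fadd R (fdelta R (r \<odot>\<^bsub>M\<^esub> m, a)) (fneg R (fsmult R r (fdelta R (m, a))))
        | r m a. r \<in> carrier R \<and> m \<in> carrier M \<and> a \<in> carrier A} \<union>
     {fadd R (fdelta R (m, r \<odot>\<^bsub>A\<^esub> a)) (fneg R (fsmult R r (fdelta R (m, a))))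
        | r m a. r \<in> carrier R \<and> m \<in> carrier M \<and> a \<in> carrier A}"

definition trel :: "'r ring \<Rightarrow> ('r,'m) module \<Rightarrow> ('r,'a) module \<Rightarrow> ('m \<times> 'a \<Rightarrow> 'r) set" where
  "trel R M A = \<Inter>{N. N \<subseteq> tfree R M A \<and> fzero R \<in> N \<and> tgens R M A \<subseteq> N \<and>
      (\<forall>x\<in>N. \<forall>y\<in>N. fadd R x y \<in> N) \<and> (\<forall>r\<in>carrier R. \<forall>x\<in>N. fsmult R r x \<in> N)}"

definition tclass :: "'r ring \<Rightarrow> ('r,'m) module \<Rightarrow> ('r,'a) module \<Rightarrow> ('m \<times> 'a \<Rightarrow> 'r)
    \<Rightarrow> ('m \<times> 'a \<Rightarrow> 'r) set" where
  "tclass R M A x = {y \<in> tfree R M A. fadd R y (fneg R x) \<in> trel R M A}"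

text \<open>The tensor product M (x)_R A as an R-module (elements are cosets;
  the multiplicative fields of the record are irrelevant).\<close>
definition tensor :: "'r ring \<Rightarrow> ('r,'m) module \<Rightarrow> ('r,'a) module
    \<Rightarrow> ('r, ('m \<times> 'a \<Rightarrow> 'r) set) module" where
  "tensor R M A =
    \<lparr>carrier = tclass R M A ` tfree R M A,
     mult = (\<lambda>X Y. trel R M A),
     one = trel R M A,
     zero = tclass R M A (fzero R),
     add = (\<lambda>X Y. tclass R M A (fadd R (SOME x. x \<in> X) (SOME y. y \<in> Y))),
     smult = (\<lambda>r X. tclass R M A (fsmult R r (SOME x. x \<in> X)))\<rparr>"

definition tpush :: "'r ring \<Rightarrow> ('r,'m) module \<Rightarrow> ('r,'a) module \<Rightarrow> ('r,'m2) module \<Rightarrow> ('r,'a2) module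
    \<Rightarrow> ('m \<Rightarrow> 'm2) \<Rightarrow> ('a \<Rightarrow> 'a2) \<Rightarrow> ('m \<times> 'a \<Rightarrow> 'r) \<Rightarrow> ('m2 \<times> 'a2 \<Rightarrow> 'r)" where
  "tpush R M A M' A' f g x = (\<lambda>(b, d).
     if (b, d) \<in> carrier M' \<times> carrier A'
     then finsum R x {(m, a). m \<in> carrier M \<and> a \<in> carrier A \<and> f m = b \<and> g a = d \<and> x (m, a) \<noteq> \<zero>\<^bsub>R\<^esub>}
     else \<zero>\<^bsub>R\<^esub>)"

definition tensor_map :: "'r ring \<Rightarrow> ('r,'m) module \<Rightarrow> ('r,'a) module \<Rightarrow> ('r,'m2) module \<Rightarrow> ('r,'a2) module
    \<Rightarrow> ('m \<Rightarrow> 'm2) \<Rightarrow> ('a \<Rightarrow> 'a2) \<Rightarrow> ('m \<times> 'a \<Rightarrow> 'r) set \<Rightarrow> ('m2 \<times> 'a2 \<Rightarrow> 'r) set" where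
  "tensor_map R M A M' A' f g X = tclass R M' A' (tpush R M A M' A' f g (SOME x. x \<in> X))"

text \<open>0 -> A -> B -> C -> 0 is u-S-pure, where the test modules M range over all
  R-modules whose carrier lives in the type 'm.\<close>
definition u_S_pure :: "'m itself \<Rightarrow> 'r ring \<Rightarrow> 'r set \<Rightarrow> ('r,'a) module \<Rightarrow> ('r,'b) module
    \<Rightarrow> ('r,'c) module \<Rightarrow> ('a \<Rightarrow> 'b) \<Rightarrow> ('b \<Rightarrow> 'c) \<Rightarrow> bool" where
  "u_S_pure _ R S A B C f g \<longleftrightarrow> (\<forall>M :: ('r,'m) module. module R M \<longrightarrow>
     u_S_exact R S (tensor R M A) (tensor R M B) (tensor R M C)
       (tensor_map R M A M B id f) (tensor_map R M B M C id g))"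

text \<open>F is u-S-flat, tested against all u-S-exact sequences 0 -> A -> B -> C -> 0 with
  carriers in the types 'a, 'b, 'c.\<close>
definition u_S_flat :: "'a itself \<Rightarrow> 'b itself \<Rightarrow> 'c itself \<Rightarrow> 'r ring \<Rightarrow> 'r set
    \<Rightarrow> ('r,'f) module \<Rightarrow> bool" where
  "u_S_flat _ _ _ R S F \<longleftrightarrow> (\<forall>(A :: ('r,'a) module) (B :: ('r,'b) module) (C :: ('r,'c) module) f g.
     module R A \<and> module R B \<and> module R C \<and> mod_hom R A B f \<and> mod_hom R B C g \<and>
     u_S_exact R S A B C f g \<longrightarrow>
     u_S_exact R S (tensor R A F) (tensor R B F) (tensor R C F)
       (tensor_map R A F B F f id) (tensor_map R B F C F g id))"

end

theory Submission
  imports Defs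
begin

lemma fadd_app: "fadd R x y p = x p \<oplus>\<^bsub>R\<^esub> y p" by (simp add: fadd_def)
lemma fsmult_app: "fsmult R r x p = r \<otimes>\<^bsub>R\<^esub> x p" by (simp add: fsmult_def)
lemma fneg_app: "fneg R x p = \<ominus>\<^bsub>R\<^esub> x p" by (simp add: fneg_def)
lemma fzero_app: "fzero R p = \<zero>\<^bsub>R\<^esub>" by (simp add: fzero_def)
lemma fdelta_app: "fdelta R q p = (if p = q then \<one>\<^bsub>R\<^esub> else \<zero>\<^bsub>R\<^esub>)" by (simp add: fdelta_def)
lemmas fapp = fadd_app fsmult_app fneg_app fzero_app

locale cr = cring R for R :: "'r ring" (structure)

context cr begin

definition FV where "FV = {x. \<forall>p. x p \<in> carrier R}"

lemma FV_I[intro]: "(\<And>p. x p \<in> carrier R) \<Longrightarrow> x \<in> FV" by (simp add: FV_def)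
lemma FV_D[simp]: "x \<in> FV \<Longrightarrow> x p \<in> carrier R" by (simp add: FV_def)

lemma fadd_FV[simp]: "x \<in> FV \<Longrightarrow> y \<in> FV \<Longrightarrow> fadd R x y \<in> FV" by (auto simp: fapp)
lemma fsmult_FV[simp]: "r \<in> carrier R \<Longrightarrow> x \<in> FV \<Longrightarrow> fsmult R r x \<in> FV" by (auto simp: fapp)
lemma fneg_FV[simp]: "x \<in> FV \<Longrightarrow> fneg R x \<in> FV" by (auto simp: fapp)
lemma fzero_FV[simp]: "fzero R \<in> FV" by (auto simp: fapp)
lemma fdelta_FV[simp]: "fdelta R q \<in> FV" by (auto simp: fdelta_app)

lemma tfree_iff: "x \<in> tfree R M X \<longleftrightarrow> x \<in> FV \<and> (\<forall>p. p \<notin> carrier M \<times> carrier X \<longrightarrow> x p = \<zero>)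
   \<and> finite {p. x p \<noteq> \<zero>}"
  by (simp only: tfree_def FV_def mem_Collect_eq)

lemma tfree_FV[simp]: "x \<in> tfree R M X \<Longrightarrow> x \<in> FV" by (simp add: tfree_iff)
lemma tfree_out: assumes "x \<in> tfree R M X" "p \<notin> carrier M \<times> carrier X" shows "x p = \<zero>"
proof -
  have "\<forall>p. p \<notin> carrier M \<times> carrier X \<longrightarrow> x p = \<zero>" using assms(1) unfolding tfree_iff by (rule conjunct1[OF conjunct2])
  then show ?thesis using assms(2) by (cases p) auto
qed
lemma tfree_fin: "x \<in> tfree R M X \<Longrightarrow> finite {p. x p \<noteq> \<zero>}"
  by (simp add: tfree_iff)
lemma tfree_supp: "x \<in> tfree R M X \<Longrightarrow> {p. x p \<noteq> \<zero>} \<subseteq> carrier M \<times> carrier X"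
proof
  fix p assume "x \<in> tfree R M X" "p \<in> {p. x p \<noteq> \<zero>}"
  then show "p \<in> carrier M \<times> carrier X" using tfree_out[of x M X p] by auto
qed

lemma tfreeI: "x \<in> FV \<Longrightarrow> (\<And>p. p \<notin> carrier M \<times> carrier X \<Longrightarrow> x p = \<zero>) \<Longrightarrow> {p. x p \<noteq> \<zero>} \<subseteq> F
   \<Longrightarrow> finite F \<Longrightarrow> x \<in> tfree R M X"
  unfolding tfree_iff by (blast intro: finite_subset)

lemma fadd_tfree[simp]: "x \<in> tfree R M X \<Longrightarrow> y \<in> tfree R M X \<Longrightarrow> fadd R x y \<in> tfree R M X"
  apply (rule tfreeI[where F="{p. x p \<noteq> \<zero>} \<union> {p. y p \<noteq> \<zero>}"])
  apply simp
  apply (simp add: tfree_out fapp)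
  apply (auto simp: fapp)[1]
  by (simp add: tfree_fin)

lemma fsmult_tfree[simp]: "r \<in> carrier R \<Longrightarrow> x \<in> tfree R M X \<Longrightarrow> fsmult R r x \<in> tfree R M X"
  apply (rule tfreeI[where F="{p. x p \<noteq> \<zero>}"])
  apply simp
  apply (simp add: tfree_out fapp)
  apply (auto simp: fapp)[1]
  by (simp add: tfree_fin)

lemma fneg_tfree[simp]: "x \<in> tfree R M X \<Longrightarrow> fneg R x \<in> tfree R M X"
  apply (rule tfreeI[where F="{p. x p \<noteq> \<zero>}"])
  apply simp
  apply (simp add: tfree_out fapp)
  apply (auto simp: fapp)[1]
  by (simp add: tfree_fin)

lemma fzero_tfree[simp]: "fzero R \<in> tfree R M X" by (simp add: tfree_iff fapp)

lemma fdelta_tfree[simp]: "p \<in> carrier M \<times> carrier X \<Longrightarrow> fdelta R p \<in> tfree R M X"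
  apply (rule tfreeI[where F="{p}"])
  apply simp
  apply (auto simp: fdelta_app)
  done

lemma fdelta_tfree'[simp]: "m \<in> carrier M \<Longrightarrow> a \<in> carrier X \<Longrightarrow> fdelta R (m, a) \<in> tfree R M X"
  by simp

lemma f_eqI: "(\<And>p. x p = y p) \<Longrightarrow> x = y" by (rule ext)

lemma fadd_fzero_r[simp]: "x \<in> FV \<Longrightarrow> fadd R x (fzero R) = x" by (rule ext) (simp add: fapp)
lemma fadd_fzero_l[simp]: "x \<in> FV \<Longrightarrow> fadd R (fzero R) x = x" by (rule ext) (simp add: fapp)
lemma fneg_fzero[simp]: "fneg R (fzero R) = fzero R" by (rule ext) (simp add: fapp)
lemma fsmult_fzero[simp]: "r \<in> carrier R \<Longrightarrow> fsmult R r (fzero R) = fzero R" by (rule ext) (simp add: fapp)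
lemma fsmult_zero[simp]: "x \<in> FV \<Longrightarrow> fsmult R \<zero> x = fzero R" by (rule ext) (simp add: fapp)
lemma fsmult_one[simp]: "x \<in> FV \<Longrightarrow> fsmult R \<one> x = x" by (rule ext) (simp add: fapp)
lemma fneg_smult: "x \<in> FV \<Longrightarrow> fneg R x = fsmult R (\<ominus> \<one>) x" by (rule ext) (simp add: fapp l_minus)
lemma fadd_comm: "x \<in> FV \<Longrightarrow> y \<in> FV \<Longrightarrow> fadd R x y = fadd R y x" by (rule ext) (simp add: fapp a_comm)
lemma fadd_assoc: "x \<in> FV \<Longrightarrow> y \<in> FV \<Longrightarrow> z \<in> FV \<Longrightarrow> fadd R (fadd R x y) z = fadd R x (fadd R y z)"
  by (rule ext) (simp add: fapp a_assoc)
lemma fsmult_fadd: "r \<in> carrier R \<Longrightarrow> x \<in> FV \<Longrightarrow> y \<in> FV \<Longrightarrow> fsmult R r (fadd R x y) = fadd R (fsmult R r x) (fsmult R r y)"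
  by (rule ext) (simp add: fapp r_distr)
lemma fsmult_assoc: "r \<in> carrier R \<Longrightarrow> t \<in> carrier R \<Longrightarrow> x \<in> FV \<Longrightarrow> fsmult R r (fsmult R t x) = fsmult R (r \<otimes> t) x"
  by (rule ext) (simp add: fapp m_assoc)
lemma fadd_smult_distr: "r \<in> carrier R \<Longrightarrow> t \<in> carrier R \<Longrightarrow> x \<in> FV \<Longrightarrow> fadd R (fsmult R r x) (fsmult R t x) = fsmult R (r \<oplus> t) x"
  by (rule ext) (simp add: fapp l_distr)
lemma fsub_self[simp]: "x \<in> FV \<Longrightarrow> fadd R x (fneg R x) = fzero R" by (rule ext) (simp add: fapp r_neg)

end

context cr begin

lemma supp_fin_empty: "finite {p. x p \<noteq> \<zero>} \<Longrightarrow> card {p. x p \<noteq> \<zero>} = 0 \<Longrightarrow> x = fzero R"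
  by (rule ext) (auto simp: fapp)

lemma tfree_induct[consumes 1, case_names zero step]:
  assumes x: "x \<in> tfree R M X" and z: "P (fzero R)"
  and st: "\<And>y r p. y \<in> tfree R M X \<Longrightarrow> P y \<Longrightarrow> r \<in> carrier R \<Longrightarrow> p \<in> carrier M \<times> carrier X
     \<Longrightarrow> y p = \<zero> \<Longrightarrow> P (fadd R y (fsmult R r (fdelta R p)))"
  shows "P x"
proof -
  have "\<forall>x. x \<in> tfree R M X \<longrightarrow> card {p. x p \<noteq> \<zero>} = n \<longrightarrow> P x" for n
  proof (induction n)
    case 0
    then show ?case using z supp_fin_empty tfree_fin by blast
  next
    case (Suc n)
    show ?case
    proof (intro allI impI)
      fix x assume xt: "x \<in> tfree R M X" and c: "card {p. x p \<noteq> \<zero>} = Suc n"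
      then obtain p where p: "x p \<noteq> \<zero>" by (metis (mono_tags, lifting) Collect_empty_eq card.empty nat.distinct(1))
      define y where "y = x(p := \<zero>)"
      have pc: "p \<in> carrier M \<times> carrier X" using p tfree_out[OF xt] by blast
      have yt: "y \<in> tfree R M X"
      proof (rule tfreeI[where F="{p. x p \<noteq> \<zero>}"])
        show "y \<in> FV" unfolding y_def using xt by (intro FV_I) simp
        show "y q = \<zero>" if "q \<notin> carrier M \<times> carrier X" for q
          unfolding y_def using tfree_out[OF xt that] by simp
        show "{p. y p \<noteq> \<zero>} \<subseteq> {p. x p \<noteq> \<zero>}" unfolding y_def by auto
        show "finite {p. x p \<noteq> \<zero>}" by (rule tfree_fin[OF xt])
      qed
      have sy: "{q. y q \<noteq> \<zero>} = {q. x q \<noteq> \<zero>} - {p}" by (auto simp: y_def)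
      have "card {q. y q \<noteq> \<zero>} = n" unfolding sy using c p tfree_fin[OF xt] by simp
      then have Py: "P y" using Suc.IH yt by blast
      have xe: "x = fadd R y (fsmult R (x p) (fdelta R p))"
      proof (rule ext)
        fix q show "x q = fadd R y (fsmult R (x p) (fdelta R p)) q"
          using xt by (cases "q = p") (auto simp: y_def fdelta_app fapp)
      qed
      show "P x" apply (subst xe) apply (rule st[OF yt Py]) using xt pc by (auto simp: y_def)
    qed
  qed
  then show ?thesis using x by blast
qed

lemma mod_ab: "module R M \<Longrightarrow> abelian_group M" by (rule module.axioms(2))

lemma mod_add[simp]: "module R M \<Longrightarrow> x \<in> carrier M \<Longrightarrow> y \<in> carrier M \<Longrightarrow> x \<oplus>\<^bsub>M\<^esub> y \<in> carrier M"
  by (rule abelian_monoid.a_closed[OF abelian_group.axioms(1)[OF mod_ab]])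
lemma mod_zero[simp]: "module R M \<Longrightarrow> \<zero>\<^bsub>M\<^esub> \<in> carrier M"
  by (rule abelian_monoid.zero_closed[OF abelian_group.axioms(1)[OF mod_ab]])
lemma mod_neg[simp]: "module R M \<Longrightarrow> x \<in> carrier M \<Longrightarrow> \<ominus>\<^bsub>M\<^esub> x \<in> carrier M"
  by (rule abelian_group.a_inv_closed[OF mod_ab])
lemma mod_minus[simp]: "module R M \<Longrightarrow> x \<in> carrier M \<Longrightarrow> y \<in> carrier M \<Longrightarrow> x \<ominus>\<^bsub>M\<^esub> y \<in> carrier M"
  by (rule abelian_group.minus_closed[OF mod_ab])
lemma mod_smult[simp]: "module R M \<Longrightarrow> r \<in> carrier R \<Longrightarrow> x \<in> carrier M \<Longrightarrow> r \<odot>\<^bsub>M\<^esub> x \<in> carrier M"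
  by (rule module.smult_closed)

lemma tgens_tfree: "module R M \<Longrightarrow> module R X \<Longrightarrow> tgens R M X \<subseteq> tfree R M X"
proof -
  assume m: "module R M" "module R X"
  show ?thesis unfolding tgens_def
    apply (intro Un_least)
    using m by (auto intro!: fadd_tfree fneg_tfree fsmult_tfree fdelta_tfree')
qed

definition relfam where
  "relfam M X N \<longleftrightarrow> N \<subseteq> tfree R M X \<and> fzero R \<in> N \<and> tgens R M X \<subseteq> N \<and>
      (\<forall>x\<in>N. \<forall>y\<in>N. fadd R x y \<in> N) \<and> (\<forall>r\<in>carrier R. \<forall>x\<in>N. fsmult R r x \<in> N)"

lemma trel_eq: "trel R M X = \<Inter>{N. relfam M X N}"
  unfolding trel_def relfam_def by simp

lemma trel_minimal:
  assumes "N \<subseteq> tfree R M X" "fzero R \<in> N" "tgens R M X \<subseteq> N"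
    "\<And>x y. x \<in> N \<Longrightarrow> y \<in> N \<Longrightarrow> fadd R x y \<in> N"
    "\<And>r x. r \<in> carrier R \<Longrightarrow> x \<in> N \<Longrightarrow> fsmult R r x \<in> N"
  shows "trel R M X \<subseteq> N"
  unfolding trel_eq using assms by (intro Inter_lower) (simp add: relfam_def)

lemma trel_fzero[simp]: "fzero R \<in> trel R M X"
  unfolding trel_eq relfam_def by blast
lemma trel_gens: "x \<in> tgens R M X \<Longrightarrow> x \<in> trel R M X"
  unfolding trel_eq relfam_def by blast
lemma trel_fadd[simp]: "x \<in> trel R M X \<Longrightarrow> y \<in> trel R M X \<Longrightarrow> fadd R x y \<in> trel R M X"
  unfolding trel_eq relfam_def by blast
lemma trel_fsmult[simp]: "r \<in> carrier R \<Longrightarrow> x \<in> trel R M X \<Longrightarrow> fsmult R r x \<in> trel R M X"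
  unfolding trel_eq relfam_def by blast

lemma trel_tfree: "module R M \<Longrightarrow> module R X \<Longrightarrow> trel R M X \<subseteq> tfree R M X"
  by (rule trel_minimal) (auto simp: tgens_tfree)

lemma trel_tfree'[simp]: "module R M \<Longrightarrow> module R X \<Longrightarrow> x \<in> trel R M X \<Longrightarrow> x \<in> tfree R M X"
  using trel_tfree by blast

lemma trel_FV[simp]: "module R M \<Longrightarrow> module R X \<Longrightarrow> x \<in> trel R M X \<Longrightarrow> x \<in> FV"
  using trel_tfree tfree_FV by blast

lemma trel_fneg[simp]: "module R M \<Longrightarrow> module R X \<Longrightarrow> x \<in> trel R M X \<Longrightarrow> fneg R x \<in> trel R M X"
  by (simp add: fneg_smult)

end

context cr begin

definition teq where "teq M X x y \<longleftrightarrow> fadd R x (fneg R y) \<in> trel R M X"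

lemma fid_sym: "x \<in> FV \<Longrightarrow> y \<in> FV \<Longrightarrow> fadd R y (fneg R x) = fneg R (fadd R x (fneg R y))"
proof (rule ext)
  fix p assume "x \<in> FV" "y \<in> FV"
  then have "x p \<in> carrier R" "y p \<in> carrier R" by auto
  then show "fadd R y (fneg R x) p = fneg R (fadd R x (fneg R y)) p" by (simp add: fapp) algebra
qed

lemma fid_trans: "x \<in> FV \<Longrightarrow> y \<in> FV \<Longrightarrow> z \<in> FV \<Longrightarrow>
   fadd R x (fneg R z) = fadd R (fadd R x (fneg R y)) (fadd R y (fneg R z))"
proof (rule ext)
  fix p assume "x \<in> FV" "y \<in> FV" "z \<in> FV"
  then have "x p \<in> carrier R" "y p \<in> carrier R" "z p \<in> carrier R" by auto
  then show "fadd R x (fneg R z) p = fadd R (fadd R x (fneg R y)) (fadd R y (fneg R z)) p" by (simp add: fapp) algebra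
qed

lemma fid_add: "x \<in> FV \<Longrightarrow> y \<in> FV \<Longrightarrow> x' \<in> FV \<Longrightarrow> y' \<in> FV \<Longrightarrow>
   fadd R (fadd R x y) (fneg R (fadd R x' y')) = fadd R (fadd R x (fneg R x')) (fadd R y (fneg R y'))"
proof (rule ext)
  fix p assume "x \<in> FV" "y \<in> FV" "x' \<in> FV" "y' \<in> FV"
  then have "x p \<in> carrier R" "y p \<in> carrier R" "x' p \<in> carrier R" "y' p \<in> carrier R" by auto
  then show "fadd R (fadd R x y) (fneg R (fadd R x' y')) p = fadd R (fadd R x (fneg R x')) (fadd R y (fneg R y')) p"
    by (simp add: fapp) algebra
qed

lemma fid_smult: "r \<in> carrier R \<Longrightarrow> x \<in> FV \<Longrightarrow> y \<in> FV \<Longrightarrow>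
   fadd R (fsmult R r x) (fneg R (fsmult R r y)) = fsmult R r (fadd R x (fneg R y))"
proof (rule ext)
  fix p assume "r \<in> carrier R" "x \<in> FV" "y \<in> FV"
  then have "x p \<in> carrier R" "y p \<in> carrier R" "r \<in> carrier R" by auto
  then show "fadd R (fsmult R r x) (fneg R (fsmult R r y)) p = fsmult R r (fadd R x (fneg R y)) p"
    by (simp add: fapp) algebra
qed

lemma fid_move: "u \<in> FV \<Longrightarrow> v \<in> FV \<Longrightarrow> w \<in> FV \<Longrightarrow>
   fadd R v (fneg R (fadd R u (fneg R w))) = fneg R (fadd R u (fneg R (fadd R v w)))"
proof (rule ext)
  fix p assume "u \<in> FV" "v \<in> FV" "w \<in> FV"
  then have "u p \<in> carrier R" "v p \<in> carrier R" "w p \<in> carrier R" by auto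
  then show "fadd R v (fneg R (fadd R u (fneg R w))) p = fneg R (fadd R u (fneg R (fadd R v w))) p"
    by (simp add: fapp) algebra
qed

lemma fid_addrel: "x \<in> FV \<Longrightarrow> r \<in> FV \<Longrightarrow> fadd R (fadd R x r) (fneg R x) = r"
proof (rule ext)
  fix p assume "x \<in> FV" "r \<in> FV"
  then have "x p \<in> carrier R" "r p \<in> carrier R" by auto
  then show "fadd R (fadd R x r) (fneg R x) p = r p" by (simp add: fapp) algebra
qed

context
  fixes M :: "('r,'m) module" and X :: "('r,'x) module"
  assumes mM: "module R M" and mX: "module R X"
begin

lemma teq_refl[simp]: "x \<in> FV \<Longrightarrow> teq M X x x"
  by (simp add: teq_def)

lemma teq_sym: assumes "x \<in> FV" "y \<in> FV" "teq M X x y" shows "teq M X y x"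
  unfolding teq_def fid_sym[OF assms(1,2)] using assms(3) mM mX by (simp add: teq_def)

lemma teq_trans: "x \<in> FV \<Longrightarrow> y \<in> FV \<Longrightarrow> z \<in> FV \<Longrightarrow> teq M X x y \<Longrightarrow> teq M X y z \<Longrightarrow> teq M X x z"
  unfolding teq_def by (subst fid_trans[of x y z]) auto

lemma teq_add: "x \<in> FV \<Longrightarrow> y \<in> FV \<Longrightarrow> x' \<in> FV \<Longrightarrow> y' \<in> FV \<Longrightarrow> teq M X x x' \<Longrightarrow> teq M X y y'
   \<Longrightarrow> teq M X (fadd R x y) (fadd R x' y')"
  unfolding teq_def by (subst fid_add) auto

lemma teq_smult: "r \<in> carrier R \<Longrightarrow> x \<in> FV \<Longrightarrow> y \<in> FV \<Longrightarrow> teq M X x y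
   \<Longrightarrow> teq M X (fsmult R r x) (fsmult R r y)"
  unfolding teq_def by (subst fid_smult) auto

lemma teq_neg: "x \<in> FV \<Longrightarrow> y \<in> FV \<Longrightarrow> teq M X x y \<Longrightarrow> teq M X (fneg R x) (fneg R y)"
  using teq_smult[of "\<ominus> \<one>" x y] by (simp add: fneg_smult)

lemma teq_zero_iff: "x \<in> FV \<Longrightarrow> teq M X x (fzero R) \<longleftrightarrow> x \<in> trel R M X"
  unfolding teq_def by simp

lemma teq_addrel: "x \<in> FV \<Longrightarrow> r \<in> trel R M X \<Longrightarrow> teq M X (fadd R x r) x"
  unfolding teq_def using mM mX by (subst fid_addrel) auto

lemma teq_move: "u \<in> FV \<Longrightarrow> v \<in> FV \<Longrightarrow> w \<in> FV \<Longrightarrow> teq M X u (fadd R v w) \<Longrightarrow>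
  teq M X v (fadd R u (fneg R w))"
  unfolding teq_def using mM mX by (subst fid_move) auto

lemma teq_rel: assumes "x \<in> FV" "y \<in> FV" "teq M X x y" "y \<in> trel R M X" shows "x \<in> trel R M X"
proof -
  have "teq M X y (fzero R)" using assms(2,4) teq_zero_iff by simp
  then have "teq M X x (fzero R)" using teq_trans[OF assms(1,2) fzero_FV assms(3)] by simp
  then show ?thesis using teq_zero_iff assms(1) by simp
qed

lemma tb_ladd: "m \<in> carrier M \<Longrightarrow> m' \<in> carrier M \<Longrightarrow> a \<in> carrier X \<Longrightarrow>
  teq M X (fdelta R (m \<oplus>\<^bsub>M\<^esub> m', a)) (fadd R (fdelta R (m, a)) (fdelta R (m', a)))"
  unfolding teq_def by (rule trel_gens) (unfold tgens_def, blast)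

lemma tb_radd: "m \<in> carrier M \<Longrightarrow> a \<in> carrier X \<Longrightarrow> a' \<in> carrier X \<Longrightarrow>
  teq M X (fdelta R (m, a \<oplus>\<^bsub>X\<^esub> a')) (fadd R (fdelta R (m, a)) (fdelta R (m, a')))"
  unfolding teq_def by (rule trel_gens) (unfold tgens_def, blast)

lemma tb_lsmult: "r \<in> carrier R \<Longrightarrow> m \<in> carrier M \<Longrightarrow> a \<in> carrier X \<Longrightarrow>
  teq M X (fdelta R (r \<odot>\<^bsub>M\<^esub> m, a)) (fsmult R r (fdelta R (m, a)))"
  unfolding teq_def by (rule trel_gens) (unfold tgens_def, blast)

lemma tb_rsmult: "r \<in> carrier R \<Longrightarrow> m \<in> carrier M \<Longrightarrow> a \<in> carrier X \<Longrightarrow>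
  teq M X (fdelta R (m, r \<odot>\<^bsub>X\<^esub> a)) (fsmult R r (fdelta R (m, a)))"
  unfolding teq_def by (rule trel_gens) (unfold tgens_def, blast)

lemma tb_lzero: "a \<in> carrier X \<Longrightarrow> fdelta R (\<zero>\<^bsub>M\<^esub>, a) \<in> trel R M X"
proof -
  assume a: "a \<in> carrier X"
  have "\<zero> \<odot>\<^bsub>M\<^esub> \<zero>\<^bsub>M\<^esub> = \<zero>\<^bsub>M\<^esub>" using mM by (simp add: module.smult_l_null)
  then have "teq M X (fdelta R (\<zero>\<^bsub>M\<^esub>, a)) (fzero R)"
    using tb_lsmult[of \<zero> "\<zero>\<^bsub>M\<^esub>" a] a mM by simp
  then show ?thesis using teq_zero_iff by simp
qed

lemma tb_rzero: "m \<in> carrier M \<Longrightarrow> fdelta R (m, \<zero>\<^bsub>X\<^esub>) \<in> trel R M X"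
proof -
  assume a: "m \<in> carrier M"
  have "\<zero> \<odot>\<^bsub>X\<^esub> \<zero>\<^bsub>X\<^esub> = \<zero>\<^bsub>X\<^esub>" using mX by (simp add: module.smult_l_null)
  then have "teq M X (fdelta R (m, \<zero>\<^bsub>X\<^esub>)) (fzero R)"
    using tb_rsmult[of \<zero> m "\<zero>\<^bsub>X\<^esub>"] a mX by simp
  then show ?thesis using teq_zero_iff by simp
qed

lemma tb_lsub: "m \<in> carrier M \<Longrightarrow> m' \<in> carrier M \<Longrightarrow> a \<in> carrier X \<Longrightarrow>
  teq M X (fdelta R (m \<ominus>\<^bsub>M\<^esub> m', a)) (fadd R (fdelta R (m, a)) (fneg R (fdelta R (m', a))))"
proof -
  assume h: "m \<in> carrier M" "m' \<in> carrier M" "a \<in> carrier X"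
  interpret M: module R M by (rule mM)
  have "(m \<ominus>\<^bsub>M\<^esub> m') \<oplus>\<^bsub>M\<^esub> m' = m" using h
    by (simp add: M.minus_eq M.a_assoc M.l_neg)
  then have "teq M X (fdelta R (m, a)) (fadd R (fdelta R (m \<ominus>\<^bsub>M\<^esub> m', a)) (fdelta R (m', a)))"
    using tb_ladd[of "m \<ominus>\<^bsub>M\<^esub> m'" m' a] h by simp
  from teq_move[OF _ _ _ this] show ?thesis by simp
qed

lemma tb_rsub: "m \<in> carrier M \<Longrightarrow> a \<in> carrier X \<Longrightarrow> a' \<in> carrier X \<Longrightarrow>
  teq M X (fdelta R (m, a \<ominus>\<^bsub>X\<^esub> a')) (fadd R (fdelta R (m, a)) (fneg R (fdelta R (m, a'))))"
proof -
  assume h: "m \<in> carrier M" "a \<in> carrier X" "a' \<in> carrier X"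
  interpret X: module R X by (rule mX)
  have "(a \<ominus>\<^bsub>X\<^esub> a') \<oplus>\<^bsub>X\<^esub> a' = a" using h
    by (simp add: X.minus_eq X.a_assoc X.l_neg)
  then have "teq M X (fdelta R (m, a)) (fadd R (fdelta R (m, a \<ominus>\<^bsub>X\<^esub> a')) (fdelta R (m, a')))"
    using tb_radd[of m "a \<ominus>\<^bsub>X\<^esub> a'" a'] h by simp
  from teq_move[OF _ _ _ this] show ?thesis by simp
qed

end
end

context cr begin

lemma tpush_app: "tpush R M A M' A' f g x q = (if q \<in> carrier M' \<times> carrier A'
   then finsum R x {(m, a). m \<in> carrier M \<and> a \<in> carrier A \<and> f m = fst q \<and> g a = snd q \<and> x (m, a) \<noteq> \<zero>}
   else \<zero>)"
  by (cases q) (simp add: tpush_def)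

lemma tpush_alt:
  assumes x: "x \<in> tfree R M A" and D: "finite D" "D \<subseteq> carrier M \<times> carrier A" "{p. x p \<noteq> \<zero>} \<subseteq> D"
  shows "tpush R M A M' A' f g x q = (if q \<in> carrier M' \<times> carrier A'
   then finsum R x {p \<in> D. f (fst p) = fst q \<and> g (snd p) = snd q} else \<zero>)"
proof (cases "q \<in> carrier M' \<times> carrier A'")
  case False
  then show ?thesis by (simp add: tpush_app)
next
  case True
  let ?A0 = "{(m, a). m \<in> carrier M \<and> a \<in> carrier A \<and> f m = fst q \<and> g a = snd q \<and> x (m, a) \<noteq> \<zero>}"
  let ?B = "{p \<in> D. f (fst p) = fst q \<and> g (snd p) = snd q}"
  have fB: "finite ?B" using D(1) by simp
  have sub: "?A0 \<subseteq> ?B"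
  proof
    fix p assume "p \<in> ?A0"
    then show "p \<in> ?B" using D(3) by (cases p) auto
  qed
  have z: "x i = \<zero>" if "i \<in> ?B - ?A0" for i
  proof -
    obtain m a where i: "i = (m, a)" by (cases i)
    have ma: "m \<in> carrier M" "a \<in> carrier A" using that D(2) i by auto
    have fq: "f m = fst q" "g a = snd q" using that i by auto
    show ?thesis
    proof (rule ccontr)
      assume "x i \<noteq> \<zero>"
      then have "i \<in> ?A0" using ma fq i by simp
      then show False using that by blast
    qed
  qed
  have "finsum R x ?A0 = finsum R x ?B"
  proof (rule add.finprod_mono_neutral_cong_left[OF fB sub])
    show "\<And>i. i \<in> ?B - ?A0 \<Longrightarrow> x i = \<zero>" by (rule z)
    show "x \<in> ?B \<rightarrow> carrier R" by (intro funcsetI) (rule FV_D[OF tfree_FV[OF x]])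
  qed simp
  then show ?thesis using True by (simp add: tpush_app)
qed

lemma supp_sub_carr: "x \<in> tfree R M A \<Longrightarrow> {p. x p \<noteq> \<zero>} \<subseteq> carrier M \<times> carrier A"
  by (rule tfree_supp)

lemma tpush_fadd:
  assumes x: "x \<in> tfree R M A" and y: "y \<in> tfree R M A"
  shows "tpush R M A M' A' f g (fadd R x y) = fadd R (tpush R M A M' A' f g x) (tpush R M A M' A' f g y)"
proof (rule ext)
  fix q
  let ?D = "{p. x p \<noteq> \<zero>} \<union> {p. y p \<noteq> \<zero>}"
  have fD: "finite ?D" using tfree_fin[OF x] tfree_fin[OF y] by simp
  have sD: "?D \<subseteq> carrier M \<times> carrier A" using tfree_supp[OF x] tfree_supp[OF y] by blast
  have xy: "fadd R x y \<in> tfree R M A" using x y by simp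
  have sxy: "{p. fadd R x y p \<noteq> \<zero>} \<subseteq> ?D" using x y by (auto simp: fapp)
  let ?B = "{p \<in> ?D. f (fst p) = fst q \<and> g (snd p) = snd q}"
  have fe: "finsum R (fadd R x y) ?B = finsum R x ?B \<oplus> finsum R y ?B"
    unfolding fadd_def using x y fD by (intro finsum_addf) auto
  have e1: "tpush R M A M' A' f g (fadd R x y) q = (if q \<in> carrier M' \<times> carrier A' then finsum R (fadd R x y) ?B else \<zero>)"
    by (rule tpush_alt[OF xy fD sD sxy])
  have e2: "tpush R M A M' A' f g x q = (if q \<in> carrier M' \<times> carrier A' then finsum R x ?B else \<zero>)"
    by (rule tpush_alt[OF x fD sD]) auto
  have e3: "tpush R M A M' A' f g y q = (if q \<in> carrier M' \<times> carrier A' then finsum R y ?B else \<zero>)"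
    by (rule tpush_alt[OF y fD sD]) auto
  show "tpush R M A M' A' f g (fadd R x y) q = fadd R (tpush R M A M' A' f g x) (tpush R M A M' A' f g y) q"
    unfolding fadd_app[of R "tpush R M A M' A' f g x"] e1 e2 e3 fe by simp
qed

lemma tpush_fsmult:
  assumes x: "x \<in> tfree R M A" and r: "r \<in> carrier R"
  shows "tpush R M A M' A' f g (fsmult R r x) = fsmult R r (tpush R M A M' A' f g x)"
proof (rule ext)
  fix q
  let ?D = "{p. x p \<noteq> \<zero>}"
  have fD: "finite ?D" using tfree_fin[OF x] by simp
  have sD: "?D \<subseteq> carrier M \<times> carrier A" using tfree_supp[OF x] by blast
  have xy: "fsmult R r x \<in> tfree R M A" using x r by simp
  have sxy: "{p. fsmult R r x p \<noteq> \<zero>} \<subseteq> ?D" using x r by (auto simp: fapp)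
  let ?B = "{p \<in> ?D. f (fst p) = fst q \<and> g (snd p) = snd q}"
  have fe: "finsum R (fsmult R r x) ?B = r \<otimes> finsum R x ?B"
    unfolding fsmult_def using x r fD by (intro finsum_rdistr[symmetric]) auto
  have e1: "tpush R M A M' A' f g (fsmult R r x) q = (if q \<in> carrier M' \<times> carrier A' then finsum R (fsmult R r x) ?B else \<zero>)"
    by (rule tpush_alt[OF xy fD sD sxy])
  have e2: "tpush R M A M' A' f g x q = (if q \<in> carrier M' \<times> carrier A' then finsum R x ?B else \<zero>)"
    by (rule tpush_alt[OF x fD sD]) auto
  show "tpush R M A M' A' f g (fsmult R r x) q = fsmult R r (tpush R M A M' A' f g x) q"
    unfolding fsmult_app[of R r "tpush R M A M' A' f g x"] e1 e2 fe using r by simp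
qed

lemma tpush_fzero: "tpush R M A M' A' f g (fzero R) = fzero R"
proof (rule ext)
  fix q show "tpush R M A M' A' f g (fzero R) q = fzero R q"
    using tpush_alt[OF fzero_tfree, of "{}" M A M' A' f g q] by (simp add: fapp)
qed

lemma tpush_fdelta:
  assumes p: "p \<in> carrier M \<times> carrier A" and fp: "f (fst p) \<in> carrier M'" "g (snd p) \<in> carrier A'"
  shows "tpush R M A M' A' f g (fdelta R p) = fdelta R (f (fst p), g (snd p))"
proof (rule ext)
  fix q
  have d: "fdelta R p \<in> tfree R M A" using p by simp
  have s: "{q. fdelta R p q \<noteq> \<zero>} \<subseteq> {p}" by (auto simp: fdelta_app)
  have e: "{p' \<in> {p}. f (fst p') = fst q \<and> g (snd p') = snd q} =
     (if (f (fst p), g (snd p)) = q then {p} else {})" by (cases q) auto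
  have e1: "tpush R M A M' A' f g (fdelta R p) q = (if q \<in> carrier M' \<times> carrier A'
     then finsum R (fdelta R p) {p' \<in> {p}. f (fst p') = fst q \<and> g (snd p') = snd q} else \<zero>)"
    by (rule tpush_alt[OF d _ _ s]) (use p in auto)
  show "tpush R M A M' A' f g (fdelta R p) q = fdelta R (f (fst p), g (snd p)) q"
  proof (cases "(f (fst p), g (snd p)) = q")
    case True
    then have "q \<in> carrier M' \<times> carrier A'" using fp by auto
    then show ?thesis unfolding e1 e using True by (simp add: fdelta_app)
  next
    case False
    then show ?thesis unfolding e1 e using False by (auto simp: fdelta_app)
  qed
qed

lemma tpush_fneg:
  assumes x: "x \<in> tfree R M A"
  shows "tpush R M A M' A' f g (fneg R x) = fneg R (tpush R M A M' A' f g x)"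
proof -
  have "tpush R M A M' A' f g x \<in> FV"
    using x by (auto simp: tpush_app intro!: FV_I finsum_closed)
  then show ?thesis using x by (simp add: fneg_smult tpush_fsmult)
qed

lemma tpush_FV[simp]: "x \<in> FV \<Longrightarrow> tpush R M A M' A' f g x \<in> FV"
  by (auto simp: tpush_app intro!: FV_I finsum_closed)

lemma tpush_tfree:
  assumes x: "x \<in> tfree R M A"
  shows "tpush R M A M' A' f g x \<in> tfree R M' A'"
proof (rule tfreeI[where F="(\<lambda>p. (f (fst p), g (snd p))) ` {p. x p \<noteq> \<zero>}"])
  show "tpush R M A M' A' f g x \<in> FV" using x by simp
  show "tpush R M A M' A' f g x q = \<zero>" if "q \<notin> carrier M' \<times> carrier A'" for q
    using that by (simp add: tpush_app)
  show "finite ((\<lambda>p. (f (fst p), g (snd p))) ` {p. x p \<noteq> \<zero>})" using tfree_fin[OF x] by simp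
  show "{p. tpush R M A M' A' f g x p \<noteq> \<zero>} \<subseteq> (\<lambda>p. (f (fst p), g (snd p))) ` {p. x p \<noteq> \<zero>}"
  proof
    fix q assume q: "q \<in> {p. tpush R M A M' A' f g x p \<noteq> \<zero>}"
    let ?A0 = "{(m, a). m \<in> carrier M \<and> a \<in> carrier A \<and> f m = fst q \<and> g a = snd q \<and> x (m, a) \<noteq> \<zero>}"
    have "?A0 \<noteq> {}"
    proof
      assume e0: "?A0 = {}"
      have "tpush R M A M' A' f g x q = \<zero>" by (subst tpush_app, subst e0, simp)
      then show False using q by simp
    qed
    then obtain m a where "m \<in> carrier M" "a \<in> carrier A" "f m = fst q" "g a = snd q" "x (m, a) \<noteq> \<zero>"
      by blast
    then show "q \<in> (\<lambda>p. (f (fst p), g (snd p))) ` {p. x p \<noteq> \<zero>}"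
      by (intro image_eqI[where x="(m, a)"]) auto
  qed
qed

lemma tpush_step:
  assumes y: "y \<in> tfree R M A" and r: "r \<in> carrier R" and p: "p \<in> carrier M \<times> carrier A"
    and fp: "f (fst p) \<in> carrier M'" "g (snd p) \<in> carrier A'"
  shows "tpush R M A M' A' f g (fadd R y (fsmult R r (fdelta R p))) =
    fadd R (tpush R M A M' A' f g y) (fsmult R r (fdelta R (f (fst p), g (snd p))))"
  using y r p fp by (simp add: tpush_fadd tpush_fsmult tpush_fdelta)

lemma tpush_step':
  assumes y: "y \<in> tfree R M A" and r: "r \<in> carrier R" and p: "m \<in> carrier M" "a \<in> carrier A"
    and fp: "f m \<in> carrier M'" "g a \<in> carrier A'"
  shows "tpush R M A M' A' f g (fadd R y (fsmult R r (fdelta R (m, a)))) =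
    fadd R (tpush R M A M' A' f g y) (fsmult R r (fdelta R (f m, g a)))"
  using tpush_step[OF y r, of "(m, a)" f M' g A'] assms by simp

lemma tpush_cong:
  assumes "\<And>m. m \<in> carrier M \<Longrightarrow> f m = f2 m" "\<And>a. a \<in> carrier A \<Longrightarrow> g a = g2 a"
  shows "tpush R M A M' A' f g x = tpush R M A M' A' f2 g2 x"
proof (rule ext)
  fix q
  have "{(m, a). m \<in> carrier M \<and> a \<in> carrier A \<and> f m = fst q \<and> g a = snd q \<and> x (m, a) \<noteq> \<zero>}
     = {(m, a). m \<in> carrier M \<and> a \<in> carrier A \<and> f2 m = fst q \<and> g2 a = snd q \<and> x (m, a) \<noteq> \<zero>}"
    using assms by auto
  then show "tpush R M A M' A' f g x q = tpush R M A M' A' f2 g2 x q" by (simp add: tpush_app)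
qed

lemma tpush_id:
  assumes x: "x \<in> tfree R M A"
  shows "tpush R M A M A (\<lambda>m. m) (\<lambda>a. a) x = x"
  using x
proof (induction rule: tfree_induct)
  case zero
  then show ?case by (simp only: tpush_fzero)
next
  case (step y r p)
  then show ?case by (cases p) (simp add: tpush_step)
qed

lemma tpush_comp:
  assumes x: "x \<in> tfree R M A"
    and f: "f \<in> carrier M \<rightarrow> carrier M'" and g: "g \<in> carrier A \<rightarrow> carrier A'"
    and f': "f' \<in> carrier M' \<rightarrow> carrier M''" and g': "g' \<in> carrier A' \<rightarrow> carrier A''"
  shows "tpush R M' A' M'' A'' f' g' (tpush R M A M' A' f g x) = tpush R M A M'' A'' (\<lambda>m. f' (f m)) (\<lambda>a. g' (g a)) x"
  using x
proof (induction rule: tfree_induct)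
  case zero
  then show ?case by (simp only: tpush_fzero)
next
  case (step y r p)
  obtain m a where p: "p = (m, a)" by (cases p)
  have m: "m \<in> carrier M" "a \<in> carrier A" using step p by auto
  have "tpush R M A M' A' f g (fadd R y (fsmult R r (fdelta R p))) =
    fadd R (tpush R M A M' A' f g y) (fsmult R r (fdelta R (f m, g a)))"
    unfolding p using step m f g by (intro tpush_step') auto
  moreover have "tpush R M' A' M'' A'' f' g' (fadd R (tpush R M A M' A' f g y) (fsmult R r (fdelta R (f m, g a))))
    = fadd R (tpush R M' A' M'' A'' f' g' (tpush R M A M' A' f g y)) (fsmult R r (fdelta R (f' (f m), g' (g a))))"
    using step m f g f' g' by (intro tpush_step') (auto intro: tpush_tfree)
  moreover have "tpush R M A M'' A'' (\<lambda>m. f' (f m)) (\<lambda>a. g' (g a)) (fadd R y (fsmult R r (fdelta R p))) =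
    fadd R (tpush R M A M'' A'' (\<lambda>m. f' (f m)) (\<lambda>a. g' (g a)) y) (fsmult R r (fdelta R (f' (f m), g' (g a))))"
    unfolding p using step m f g f' g' by (intro tpush_step') auto
  ultimately show ?case using step.IH by simp
qed

end

lemma mh_closed: "mod_hom R M N f \<Longrightarrow> x \<in> carrier M \<Longrightarrow> f x \<in> carrier N"
  unfolding mod_hom_def by blast
lemma mh_funcset: "mod_hom R M N f \<Longrightarrow> f \<in> carrier M \<rightarrow> carrier N"
  unfolding mod_hom_def by blast
lemma mh_add: "mod_hom R M N f \<Longrightarrow> x \<in> carrier M \<Longrightarrow> y \<in> carrier M \<Longrightarrow> f (x \<oplus>\<^bsub>M\<^esub> y) = f x \<oplus>\<^bsub>N\<^esub> f y"
  unfolding mod_hom_def by blast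
lemma mh_smult: "mod_hom R M N f \<Longrightarrow> r \<in> carrier R \<Longrightarrow> x \<in> carrier M \<Longrightarrow> f (r \<odot>\<^bsub>M\<^esub> x) = r \<odot>\<^bsub>N\<^esub> f x"
  unfolding mod_hom_def by blast
lemma mh_id: "mod_hom R M M id"
  unfolding mod_hom_def by simp

context cr begin

lemma mh_zero: "module R M \<Longrightarrow> module R N \<Longrightarrow> mod_hom R M N f \<Longrightarrow> f \<zero>\<^bsub>M\<^esub> = \<zero>\<^bsub>N\<^esub>"
proof -
  assume m: "module R M" "module R N" "mod_hom R M N f"
  have "f (\<zero> \<odot>\<^bsub>M\<^esub> \<zero>\<^bsub>M\<^esub>) = \<zero> \<odot>\<^bsub>N\<^esub> f \<zero>\<^bsub>M\<^esub>" using m by (intro mh_smult) auto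
  moreover have "\<zero> \<odot>\<^bsub>M\<^esub> \<zero>\<^bsub>M\<^esub> = \<zero>\<^bsub>M\<^esub>" using m by (simp add: module.smult_l_null)
  moreover have "\<zero> \<odot>\<^bsub>N\<^esub> f \<zero>\<^bsub>M\<^esub> = \<zero>\<^bsub>N\<^esub>" using m mh_closed[OF m(3)] by (simp add: module.smult_l_null)
  ultimately show ?thesis by simp
qed

lemma mh_minus: "module R M \<Longrightarrow> module R N \<Longrightarrow> mod_hom R M N f \<Longrightarrow> x \<in> carrier M \<Longrightarrow> y \<in> carrier M \<Longrightarrow>
  f (x \<ominus>\<^bsub>M\<^esub> y) = f x \<ominus>\<^bsub>N\<^esub> f y"
proof -
  assume m: "module R M" "module R N" "mod_hom R M N f" and xy: "x \<in> carrier M" "y \<in> carrier M"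
  interpret M: module R M by fact
  interpret N: module R N by fact
  have "f ((x \<ominus>\<^bsub>M\<^esub> y) \<oplus>\<^bsub>M\<^esub> y) = f (x \<ominus>\<^bsub>M\<^esub> y) \<oplus>\<^bsub>N\<^esub> f y" using xy m by (intro mh_add) auto
  moreover have "(x \<ominus>\<^bsub>M\<^esub> y) \<oplus>\<^bsub>M\<^esub> y = x" using xy by (simp add: M.minus_eq M.a_assoc M.l_neg)
  ultimately have e: "f x = f (x \<ominus>\<^bsub>M\<^esub> y) \<oplus>\<^bsub>N\<^esub> f y" by simp
  have c: "f (x \<ominus>\<^bsub>M\<^esub> y) \<in> carrier N" "f y \<in> carrier N" using xy mh_closed[OF m(3)] by auto
  show ?thesis unfolding e using c by (simp add: N.minus_eq N.a_assoc N.r_neg)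
qed

context
  fixes M :: "('r,'m) module" and A :: "('r,'a) module" and M' :: "('r,'m2) module" and A' :: "('r,'a2) module"
    and f g
  assumes mM: "module R M" and mA: "module R A" and mM': "module R M'" and mA': "module R A'"
    and hf: "mod_hom R M M' f" and hg: "mod_hom R A A' g"
begin

lemma tpush_trel: "x \<in> trel R M A \<Longrightarrow> tpush R M A M' A' f g x \<in> trel R M' A'"
proof -
  let ?P = "tpush R M A M' A' f g"
  have fc: "f m \<in> carrier M'" if "m \<in> carrier M" for m using mh_closed[OF hf that] .
  have gc: "g a \<in> carrier A'" if "a \<in> carrier A" for a using mh_closed[OF hg that] .
  have "trel R M A \<subseteq> {x \<in> tfree R M A. ?P x \<in> trel R M' A'}"
  proof (rule trel_minimal)
    show "{x \<in> tfree R M A. ?P x \<in> trel R M' A'} \<subseteq> tfree R M A" by blast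
    show "fzero R \<in> {x \<in> tfree R M A. ?P x \<in> trel R M' A'}" by (simp add: tpush_fzero)
    show "fadd R x y \<in> {x \<in> tfree R M A. ?P x \<in> trel R M' A'}"
      if "x \<in> {x \<in> tfree R M A. ?P x \<in> trel R M' A'}" "y \<in> {x \<in> tfree R M A. ?P x \<in> trel R M' A'}" for x y
      using that by (simp add: tpush_fadd)
    show "fsmult R r x \<in> {x \<in> tfree R M A. ?P x \<in> trel R M' A'}"
      if "r \<in> carrier R" "x \<in> {x \<in> tfree R M A. ?P x \<in> trel R M' A'}" for r x
      using that by (simp add: tpush_fsmult)
    show "tgens R M A \<subseteq> {x \<in> tfree R M A. ?P x \<in> trel R M' A'}"
    proof
      fix x assume x: "x \<in> tgens R M A"
      have xt: "x \<in> tfree R M A" using x tgens_tfree[OF mM mA] by blast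
      have "?P x \<in> tgens R M' A'"
        using x unfolding tgens_def
      proof (elim UnE CollectE exE conjE)
        fix m m' a assume h: "x = fadd R (fdelta R (m \<oplus>\<^bsub>M\<^esub> m', a)) (fneg R (fadd R (fdelta R (m, a)) (fdelta R (m', a))))"
          "m \<in> carrier M" "m' \<in> carrier M" "a \<in> carrier A"
        have "?P x = fadd R (fdelta R (f m \<oplus>\<^bsub>M'\<^esub> f m', g a)) (fneg R (fadd R (fdelta R (f m, g a)) (fdelta R (f m', g a))))"
          using h mM mA fc gc mod_add[OF mM h(2) h(3)] fc[OF mod_add[OF mM h(2) h(3)]]
          by (simp add: tpush_fadd tpush_fneg tpush_fdelta mh_add[OF hf])
        then show "?P x \<in> {fadd R (fdelta R (m \<oplus>\<^bsub>M'\<^esub> m', a)) (fneg R (fadd R (fdelta R (m, a)) (fdelta R (m', a)))) |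
            m m' a. m \<in> carrier M' \<and> m' \<in> carrier M' \<and> a \<in> carrier A'} \<union>
          {fadd R (fdelta R (m, a \<oplus>\<^bsub>A'\<^esub> a')) (fneg R (fadd R (fdelta R (m, a)) (fdelta R (m, a')))) |
            m a a'. m \<in> carrier M' \<and> a \<in> carrier A' \<and> a' \<in> carrier A'} \<union>
          {fadd R (fdelta R (r \<odot>\<^bsub>M'\<^esub> m, a)) (fneg R (fsmult R r (fdelta R (m, a)))) |
            r m a. r \<in> carrier R \<and> m \<in> carrier M' \<and> a \<in> carrier A'} \<union>
          {fadd R (fdelta R (m, r \<odot>\<^bsub>A'\<^esub> a)) (fneg R (fsmult R r (fdelta R (m, a)))) |
            r m a. r \<in> carrier R \<and> m \<in> carrier M' \<and> a \<in> carrier A'}"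
          using h fc gc by blast
      next
        fix m a a' assume h: "x = fadd R (fdelta R (m, a \<oplus>\<^bsub>A\<^esub> a')) (fneg R (fadd R (fdelta R (m, a)) (fdelta R (m, a'))))"
          "m \<in> carrier M" "a \<in> carrier A" "a' \<in> carrier A"
        have "?P x = fadd R (fdelta R (f m, g a \<oplus>\<^bsub>A'\<^esub> g a')) (fneg R (fadd R (fdelta R (f m, g a)) (fdelta R (f m, g a'))))"
          using h mM mA fc gc mod_add[OF mA h(3) h(4)] gc[OF mod_add[OF mA h(3) h(4)]]
          by (simp add: tpush_fadd tpush_fneg tpush_fdelta mh_add[OF hg])
        then show "?P x \<in> {fadd R (fdelta R (m \<oplus>\<^bsub>M'\<^esub> m', a)) (fneg R (fadd R (fdelta R (m, a)) (fdelta R (m', a)))) |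
            m m' a. m \<in> carrier M' \<and> m' \<in> carrier M' \<and> a \<in> carrier A'} \<union>
          {fadd R (fdelta R (m, a \<oplus>\<^bsub>A'\<^esub> a')) (fneg R (fadd R (fdelta R (m, a)) (fdelta R (m, a')))) |
            m a a'. m \<in> carrier M' \<and> a \<in> carrier A' \<and> a' \<in> carrier A'} \<union>
          {fadd R (fdelta R (r \<odot>\<^bsub>M'\<^esub> m, a)) (fneg R (fsmult R r (fdelta R (m, a)))) |
            r m a. r \<in> carrier R \<and> m \<in> carrier M' \<and> a \<in> carrier A'} \<union>
          {fadd R (fdelta R (m, r \<odot>\<^bsub>A'\<^esub> a)) (fneg R (fsmult R r (fdelta R (m, a)))) |
            r m a. r \<in> carrier R \<and> m \<in> carrier M' \<and> a \<in> carrier A'}"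
          using h fc gc by blast
      next
        fix r m a assume h: "x = fadd R (fdelta R (r \<odot>\<^bsub>M\<^esub> m, a)) (fneg R (fsmult R r (fdelta R (m, a))))"
          "r \<in> carrier R" "m \<in> carrier M" "a \<in> carrier A"
        have "?P x = fadd R (fdelta R (r \<odot>\<^bsub>M'\<^esub> f m, g a)) (fneg R (fsmult R r (fdelta R (f m, g a))))"
          using h mM mA fc gc mod_smult[OF mM h(2) h(3)] fc[OF mod_smult[OF mM h(2) h(3)]]
          by (simp add: tpush_fadd tpush_fneg tpush_fsmult tpush_fdelta mh_smult[OF hf])
        then show "?P x \<in> {fadd R (fdelta R (m \<oplus>\<^bsub>M'\<^esub> m', a)) (fneg R (fadd R (fdelta R (m, a)) (fdelta R (m', a)))) |
            m m' a. m \<in> carrier M' \<and> m' \<in> carrier M' \<and> a \<in> carrier A'} \<union>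
          {fadd R (fdelta R (m, a \<oplus>\<^bsub>A'\<^esub> a')) (fneg R (fadd R (fdelta R (m, a)) (fdelta R (m, a')))) |
            m a a'. m \<in> carrier M' \<and> a \<in> carrier A' \<and> a' \<in> carrier A'} \<union>
          {fadd R (fdelta R (r \<odot>\<^bsub>M'\<^esub> m, a)) (fneg R (fsmult R r (fdelta R (m, a)))) |
            r m a. r \<in> carrier R \<and> m \<in> carrier M' \<and> a \<in> carrier A'} \<union>
          {fadd R (fdelta R (m, r \<odot>\<^bsub>A'\<^esub> a)) (fneg R (fsmult R r (fdelta R (m, a)))) |
            r m a. r \<in> carrier R \<and> m \<in> carrier M' \<and> a \<in> carrier A'}"
          using h fc gc by blast
      next
        fix r m a assume h: "x = fadd R (fdelta R (m, r \<odot>\<^bsub>A\<^esub> a)) (fneg R (fsmult R r (fdelta R (m, a))))"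
          "r \<in> carrier R" "m \<in> carrier M" "a \<in> carrier A"
        have "?P x = fadd R (fdelta R (f m, r \<odot>\<^bsub>A'\<^esub> g a)) (fneg R (fsmult R r (fdelta R (f m, g a))))"
          using h mM mA fc gc mod_smult[OF mA h(2) h(4)] gc[OF mod_smult[OF mA h(2) h(4)]]
          by (simp add: tpush_fadd tpush_fneg tpush_fsmult tpush_fdelta mh_smult[OF hg])
        then show "?P x \<in> {fadd R (fdelta R (m \<oplus>\<^bsub>M'\<^esub> m', a)) (fneg R (fadd R (fdelta R (m, a)) (fdelta R (m', a)))) |
            m m' a. m \<in> carrier M' \<and> m' \<in> carrier M' \<and> a \<in> carrier A'} \<union>
          {fadd R (fdelta R (m, a \<oplus>\<^bsub>A'\<^esub> a')) (fneg R (fadd R (fdelta R (m, a)) (fdelta R (m, a')))) |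
            m a a'. m \<in> carrier M' \<and> a \<in> carrier A' \<and> a' \<in> carrier A'} \<union>
          {fadd R (fdelta R (r \<odot>\<^bsub>M'\<^esub> m, a)) (fneg R (fsmult R r (fdelta R (m, a)))) |
            r m a. r \<in> carrier R \<and> m \<in> carrier M' \<and> a \<in> carrier A'} \<union>
          {fadd R (fdelta R (m, r \<odot>\<^bsub>A'\<^esub> a)) (fneg R (fsmult R r (fdelta R (m, a)))) |
            r m a. r \<in> carrier R \<and> m \<in> carrier M' \<and> a \<in> carrier A'}"
          using h fc gc by blast
      qed
      then show "x \<in> {x \<in> tfree R M A. ?P x \<in> trel R M' A'}" using xt trel_gens by blast
    qed
  qed
  then show "x \<in> trel R M A \<Longrightarrow> ?P x \<in> trel R M' A'" by blast
qed

lemma tpush_teq: "x \<in> tfree R M A \<Longrightarrow> y \<in> tfree R M A \<Longrightarrow> teq M A x y \<Longrightarrow>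
  teq M' A' (tpush R M A M' A' f g x) (tpush R M A M' A' f g y)"
  unfolding teq_def
  by (drule tpush_trel) (simp add: tpush_fadd tpush_fneg)

lemma tpush_tfree': "x \<in> tfree R M A \<Longrightarrow> tpush R M A M' A' f g x \<in> tfree R M' A'"
  by (rule tpush_tfree)

end

end

definition fsw :: "('a \<times> 'b \<Rightarrow> 'r) \<Rightarrow> ('b \<times> 'a \<Rightarrow> 'r)" where "fsw x = (\<lambda>q. x (snd q, fst q))"

lemma fsw_app: "fsw x (b, a) = x (a, b)" by (simp add: fsw_def)
lemma fsw_fsw[simp]: "fsw (fsw x) = x" by (simp add: fsw_def)
lemma fsw_fadd: "fsw (fadd R x y) = fadd R (fsw x) (fsw y)" by (rule ext) (simp add: fsw_def fapp)
lemma fsw_fsmult: "fsw (fsmult R r x) = fsmult R r (fsw x)" by (rule ext) (simp add: fsw_def fapp)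
lemma fsw_fneg: "fsw (fneg R x) = fneg R (fsw x)" by (rule ext) (simp add: fsw_def fapp)
lemma fsw_fzero: "fsw (fzero R) = fzero R" by (rule ext) (simp add: fsw_def fapp)
lemma fsw_fdelta: "fsw (fdelta R (m, a)) = fdelta R (a, m)" by (rule ext) (auto simp: fsw_def fdelta_app)
lemmas fsw_simps = fsw_fadd fsw_fsmult fsw_fneg fsw_fzero fsw_fdelta

context cr begin

lemma fsw_FV[simp]: "x \<in> FV \<Longrightarrow> fsw x \<in> FV" by (auto simp: fsw_def)

lemma fsw_tfree[simp]: assumes x: "x \<in> tfree R M X" shows "fsw x \<in> tfree R X M"
proof (rule tfreeI[where F="(\<lambda>q. (snd q, fst q)) ` {p. x p \<noteq> \<zero>}"])
  show "fsw x \<in> FV" using x by simp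
  show "fsw x p = \<zero>" if "p \<notin> carrier X \<times> carrier M" for p
  proof -
    have "(snd p, fst p) \<notin> carrier M \<times> carrier X" using that by (cases p) auto
    then show ?thesis unfolding fsw_def using tfree_out[OF x] by simp
  qed
  show "{p. fsw x p \<noteq> \<zero>} \<subseteq> (\<lambda>q. (snd q, fst q)) ` {p. x p \<noteq> \<zero>}"
  proof
    fix p assume "p \<in> {p. fsw x p \<noteq> \<zero>}"
    then show "p \<in> (\<lambda>q. (snd q, fst q)) ` {p. x p \<noteq> \<zero>}"
      by (intro image_eqI[where x="(snd p, fst p)"]) (auto simp: fsw_def)
  qed
  show "finite ((\<lambda>q. (snd q, fst q)) ` {p. x p \<noteq> \<zero>})" using tfree_fin[OF x] by simp
qed

lemma fsw_trel:
  assumes mM: "module R M" and mX: "module R X" and x: "x \<in> trel R M X"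
  shows "fsw x \<in> trel R X M"
proof -
  have "trel R M X \<subseteq> {x \<in> tfree R M X. fsw x \<in> trel R X M}"
  proof (rule trel_minimal)
    show "fzero R \<in> {x \<in> tfree R M X. fsw x \<in> trel R X M}" by (simp add: fsw_fzero)
  next
    fix x y assume "x \<in> {x \<in> tfree R M X. fsw x \<in> trel R X M}" "y \<in> {x \<in> tfree R M X. fsw x \<in> trel R X M}"
    then show "fadd R x y \<in> {x \<in> tfree R M X. fsw x \<in> trel R X M}" by (simp add: fsw_fadd)
  next
    fix r x assume "r \<in> carrier R" "x \<in> {x \<in> tfree R M X. fsw x \<in> trel R X M}"
    then show "fsmult R r x \<in> {x \<in> tfree R M X. fsw x \<in> trel R X M}" by (simp add: fsw_fsmult)
  next
    show "tgens R M X \<subseteq> {x \<in> tfree R M X. fsw x \<in> trel R X M}"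
    proof
      fix x assume x: "x \<in> tgens R M X"
      have xt: "x \<in> tfree R M X" using x tgens_tfree[OF mM mX] by blast
      have "fsw x \<in> tgens R X M"
        using x unfolding tgens_def
        by (elim UnE CollectE exE conjE) (simp_all add: fsw_simps, blast+)
      then show "x \<in> {x \<in> tfree R M X. fsw x \<in> trel R X M}" using xt trel_gens by blast
    qed
  qed blast
  then show ?thesis using x by blast
qed

lemma fsw_teq: "module R M \<Longrightarrow> module R X \<Longrightarrow> teq M X x y \<Longrightarrow> teq X M (fsw x) (fsw y)"
  unfolding teq_def by (drule fsw_trel) (auto simp: fsw_simps)

lemma fsw_teq_iff: "module R M \<Longrightarrow> module R X \<Longrightarrow> teq X M (fsw x) (fsw y) \<longleftrightarrow> teq M X x y"
  using fsw_teq[of M X x y] fsw_teq[of X M "fsw x" "fsw y"] by auto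

lemma fsw_trel_iff: "module R M \<Longrightarrow> module R X \<Longrightarrow> fsw x \<in> trel R X M \<longleftrightarrow> x \<in> trel R M X"
  using fsw_trel[of M X x] fsw_trel[of X M "fsw x"] by auto

lemma fsw_tpush:
  assumes x: "x \<in> tfree R M A" and f: "f \<in> carrier M \<rightarrow> carrier M'" and g: "g \<in> carrier A \<rightarrow> carrier A'"
  shows "fsw (tpush R M A M' A' f g x) = tpush R A M A' M' g f (fsw x)"
  using x
proof (induction rule: tfree_induct)
  case zero
  then show ?case by (simp only: tpush_fzero fsw_fzero)
next
  case (step y r p)
  obtain m a where p: "p = (m, a)" by (cases p)
  have m: "m \<in> carrier M" "a \<in> carrier A" using step p by auto
  have "tpush R M A M' A' f g (fadd R y (fsmult R r (fdelta R p))) =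
    fadd R (tpush R M A M' A' f g y) (fsmult R r (fdelta R (f m, g a)))"
    unfolding p using step m f g by (intro tpush_step') auto
  moreover have "tpush R A M A' M' g f (fadd R (fsw y) (fsmult R r (fdelta R (a, m)))) =
    fadd R (tpush R A M A' M' g f (fsw y)) (fsmult R r (fdelta R (g a, f m)))"
    using step m f g by (intro tpush_step') auto
  ultimately show ?case using step.IH unfolding p by (simp add: fsw_simps)
qed

context
  fixes M :: "('r,'m) module" and X :: "('r,'x) module"
  assumes mM: "module R M" and mX: "module R X"
begin

lemma tclass_iff: "y \<in> tclass R M X x \<longleftrightarrow> y \<in> tfree R M X \<and> teq M X y x"
  by (simp add: tclass_def teq_def)

lemma tclass_self: "x \<in> tfree R M X \<Longrightarrow> x \<in> tclass R M X x"
  by (simp add: tclass_iff teq_refl[OF mM mX])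

lemma tclass_eq_iff: "x \<in> tfree R M X \<Longrightarrow> y \<in> tfree R M X \<Longrightarrow> tclass R M X x = tclass R M X y \<longleftrightarrow> teq M X x y"
proof
  assume x: "x \<in> tfree R M X" "y \<in> tfree R M X" and e: "tclass R M X x = tclass R M X y"
  then have "x \<in> tclass R M X y" using tclass_self by blast
  then show "teq M X x y" by (simp add: tclass_iff)
next
  assume x: "x \<in> tfree R M X" "y \<in> tfree R M X" and e: "teq M X x y"
  have "z \<in> tclass R M X x \<longleftrightarrow> z \<in> tclass R M X y" for z
      unfolding tclass_iff using x e teq_trans[OF mM mX, of z x y] teq_trans[OF mM mX, of z y x]
        teq_sym[OF mM mX, of x y] by auto
  then show "tclass R M X x = tclass R M X y" by blast
qed

lemma tclass_some: "x \<in> tfree R M X \<Longrightarrow> (SOME z. z \<in> tclass R M X x) \<in> tfree R M X \<and>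
    teq M X (SOME z. z \<in> tclass R M X x) x"
proof -
  assume x: "x \<in> tfree R M X"
  have "\<exists>z. z \<in> tclass R M X x" using tclass_self[OF x] by blast
  then have "(SOME z. z \<in> tclass R M X x) \<in> tclass R M X x" by (rule someI_ex)
  then show ?thesis by (simp add: tclass_iff)
qed

lemma tensor_carrier: "carrier (tensor R M X) = tclass R M X ` tfree R M X"
  by (simp add: tensor_def)

lemma tensor_zero: "\<zero>\<^bsub>tensor R M X\<^esub> = tclass R M X (fzero R)"
  by (simp add: tensor_def)

lemma tensor_smult: "r \<in> carrier R \<Longrightarrow> x \<in> tfree R M X \<Longrightarrow>
   r \<odot>\<^bsub>tensor R M X\<^esub> tclass R M X x = tclass R M X (fsmult R r x)"
proof -
  assume r: "r \<in> carrier R" and x: "x \<in> tfree R M X"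
  let ?z = "SOME z. z \<in> tclass R M X x"
  have z: "?z \<in> tfree R M X" "teq M X ?z x" using tclass_some[OF x] by auto
  have "r \<odot>\<^bsub>tensor R M X\<^esub> tclass R M X x = tclass R M X (fsmult R r ?z)" by (simp add: tensor_def)
  also have "\<dots> = tclass R M X (fsmult R r x)"
    using z x r by (subst tclass_eq_iff) (auto intro: teq_smult[OF mM mX])
  finally show ?thesis .
qed

lemma tclass_zero_iff: "x \<in> tfree R M X \<Longrightarrow> tclass R M X x = \<zero>\<^bsub>tensor R M X\<^esub> \<longleftrightarrow> x \<in> trel R M X"
  unfolding tensor_zero using tclass_eq_iff[of x "fzero R"] teq_zero_iff[OF mM mX] by simp

end

lemma tensor_map_class:
  assumes mM: "module R M" and mA: "module R A" and mM': "module R M'" and mA': "module R A'"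
    and hf: "mod_hom R M M' f" and hg: "mod_hom R A A' g" and x: "x \<in> tfree R M A"
  shows "tensor_map R M A M' A' f g (tclass R M A x) = tclass R M' A' (tpush R M A M' A' f g x)"
proof -
  let ?z = "SOME z. z \<in> tclass R M A x"
  have z: "?z \<in> tfree R M A" "teq M A ?z x" using tclass_some[OF mM mA x] by auto
  have "tensor_map R M A M' A' f g (tclass R M A x) = tclass R M' A' (tpush R M A M' A' f g ?z)"
    by (simp add: tensor_map_def)
  also have "\<dots> = tclass R M' A' (tpush R M A M' A' f g x)"
    using z x by (subst tclass_eq_iff[OF mM' mA']) (auto intro: tpush_tfree tpush_teq[OF mM mA mM' mA' hf hg])
  finally show ?thesis .
qed

end

context cr begin

lemma uSe_intro:
  assumes m1: "module R M1" "module R X1" and m2: "module R M2" "module R X2" and m3: "module R M3" "module R X3"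
    and h1: "mod_hom R M1 M2 f1" "mod_hom R X1 X2 g1" and h2: "mod_hom R M2 M3 f2" "mod_hom R X2 X3 g2"
    and s: "s \<in> S" "s \<in> carrier R"
    and c1: "\<And>x. x \<in> tfree R M1 X1 \<Longrightarrow> tpush R M1 X1 M2 X2 f1 g1 x \<in> trel R M2 X2 \<Longrightarrow> fsmult R s x \<in> trel R M1 X1"
    and c2: "\<And>y. y \<in> tfree R M2 X2 \<Longrightarrow> tpush R M2 X2 M3 X3 f2 g2 y \<in> trel R M3 X3 \<Longrightarrow>
        \<exists>x\<in>tfree R M1 X1. teq M2 X2 (fsmult R s y) (tpush R M1 X1 M2 X2 f1 g1 x)"
    and c3: "\<And>x. x \<in> tfree R M1 X1 \<Longrightarrow> tpush R M2 X2 M3 X3 f2 g2 (fsmult R s (tpush R M1 X1 M2 X2 f1 g1 x)) \<in> trel R M3 X3"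
    and c4: "\<And>z. z \<in> tfree R M3 X3 \<Longrightarrow> \<exists>y\<in>tfree R M2 X2. teq M3 X3 (fsmult R s z) (tpush R M2 X2 M3 X3 f2 g2 y)"
  shows "u_S_exact R S (tensor R M1 X1) (tensor R M2 X2) (tensor R M3 X3)
     (tensor_map R M1 X1 M2 X2 f1 g1) (tensor_map R M2 X2 M3 X3 f2 g2)"
  unfolding u_S_exact_def
proof (intro bexI[OF _ s(1)] conjI ballI impI)
  let ?P1 = "tpush R M1 X1 M2 X2 f1 g1" and ?P2 = "tpush R M2 X2 M3 X3 f2 g2"
  fix a assume a: "a \<in> carrier (tensor R M1 X1)" and z: "tensor_map R M1 X1 M2 X2 f1 g1 a = \<zero>\<^bsub>tensor R M2 X2\<^esub>"
  from a obtain x where x: "x \<in> tfree R M1 X1" "a = tclass R M1 X1 x" by (auto simp: tensor_carrier[OF m1])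
  have t: "?P1 x \<in> tfree R M2 X2" by (rule tpush_tfree[OF x(1)])
  have "tclass R M2 X2 (?P1 x) = \<zero>\<^bsub>tensor R M2 X2\<^esub>" using z x tensor_map_class[OF m1 m2 h1] by simp
  then have "?P1 x \<in> trel R M2 X2" using tclass_zero_iff[OF m2 t] by simp
  then have "fsmult R s x \<in> trel R M1 X1" using c1 x by simp
  then show "s \<odot>\<^bsub>tensor R M1 X1\<^esub> a = \<zero>\<^bsub>tensor R M1 X1\<^esub>"
    using x s tensor_smult[OF m1] tclass_zero_iff[OF m1] by simp
next
  let ?P1 = "tpush R M1 X1 M2 X2 f1 g1" and ?P2 = "tpush R M2 X2 M3 X3 f2 g2"
  fix b assume b: "b \<in> carrier (tensor R M2 X2)" and z: "tensor_map R M2 X2 M3 X3 f2 g2 b = \<zero>\<^bsub>tensor R M3 X3\<^esub>"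
  from b obtain y where y: "y \<in> tfree R M2 X2" "b = tclass R M2 X2 y" by (auto simp: tensor_carrier[OF m2])
  have t: "?P2 y \<in> tfree R M3 X3" by (rule tpush_tfree[OF y(1)])
  have "tclass R M3 X3 (?P2 y) = \<zero>\<^bsub>tensor R M3 X3\<^esub>" using z y tensor_map_class[OF m2 m3 h2] by simp
  then have "?P2 y \<in> trel R M3 X3" using tclass_zero_iff[OF m3 t] by simp
  then obtain x where x: "x \<in> tfree R M1 X1" "teq M2 X2 (fsmult R s y) (?P1 x)" using c2 y by blast
  have t1: "?P1 x \<in> tfree R M2 X2" by (rule tpush_tfree[OF x(1)])
  have "s \<odot>\<^bsub>tensor R M2 X2\<^esub> b = tclass R M2 X2 (?P1 x)"
    using y x s tensor_smult[OF m2] tclass_eq_iff[OF m2 _ t1] by simp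
  also have "\<dots> = tensor_map R M1 X1 M2 X2 f1 g1 (tclass R M1 X1 x)" using tensor_map_class[OF m1 m2 h1 x(1)] by simp
  finally show "s \<odot>\<^bsub>tensor R M2 X2\<^esub> b \<in> tensor_map R M1 X1 M2 X2 f1 g1 ` carrier (tensor R M1 X1)"
    using x by (auto simp: tensor_carrier[OF m1])
next
  let ?P1 = "tpush R M1 X1 M2 X2 f1 g1" and ?P2 = "tpush R M2 X2 M3 X3 f2 g2"
  fix a assume a: "a \<in> carrier (tensor R M1 X1)"
  from a obtain x where x: "x \<in> tfree R M1 X1" "a = tclass R M1 X1 x" by (auto simp: tensor_carrier[OF m1])
  have t1: "?P1 x \<in> tfree R M2 X2" using tpush_tfree[OF x(1)] .
  have t2: "?P2 (fsmult R s (?P1 x)) \<in> tfree R M3 X3" using t1 s by (intro tpush_tfree) simp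
  have "tensor_map R M2 X2 M3 X3 f2 g2 (s \<odot>\<^bsub>tensor R M2 X2\<^esub> tensor_map R M1 X1 M2 X2 f1 g1 a)
     = tclass R M3 X3 (?P2 (fsmult R s (?P1 x)))"
    using x t1 s tensor_map_class[OF m1 m2 h1] tensor_smult[OF m2] tensor_map_class[OF m2 m3 h2] by simp
  also have "\<dots> = \<zero>\<^bsub>tensor R M3 X3\<^esub>"
    using c3[OF x(1)] tclass_zero_iff[OF m3 t2] by simp
  finally show "tensor_map R M2 X2 M3 X3 f2 g2 (s \<odot>\<^bsub>tensor R M2 X2\<^esub> tensor_map R M1 X1 M2 X2 f1 g1 a) = \<zero>\<^bsub>tensor R M3 X3\<^esub>" .
next
  let ?P1 = "tpush R M1 X1 M2 X2 f1 g1" and ?P2 = "tpush R M2 X2 M3 X3 f2 g2"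
  fix c assume c: "c \<in> carrier (tensor R M3 X3)"
  from c obtain z where z: "z \<in> tfree R M3 X3" "c = tclass R M3 X3 z" by (auto simp: tensor_carrier[OF m3])
  obtain y where y: "y \<in> tfree R M2 X2" "teq M3 X3 (fsmult R s z) (?P2 y)" using c4[OF z(1)] by blast
  have t: "?P2 y \<in> tfree R M3 X3" by (rule tpush_tfree[OF y(1)])
  have "s \<odot>\<^bsub>tensor R M3 X3\<^esub> c = tclass R M3 X3 (?P2 y)"
    using y z s tensor_smult[OF m3] tclass_eq_iff[OF m3 _ t] by simp
  also have "\<dots> = tensor_map R M2 X2 M3 X3 f2 g2 (tclass R M2 X2 y)" using tensor_map_class[OF m2 m3 h2 y(1)] by simp
  finally show "s \<odot>\<^bsub>tensor R M3 X3\<^esub> c \<in> tensor_map R M2 X2 M3 X3 f2 g2 ` carrier (tensor R M2 X2)"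
    using y by (auto simp: tensor_carrier[OF m2])
qed

lemma uSe_dest1:
  assumes m1: "module R M1" "module R X1" and m2: "module R M2" "module R X2" and m3: "module R M3" "module R X3"
    and h1: "mod_hom R M1 M2 f1" "mod_hom R X1 X2 g1" and SR: "S \<subseteq> carrier R"
    and u: "u_S_exact R S (tensor R M1 X1) (tensor R M2 X2) (tensor R M3 X3)
     (tensor_map R M1 X1 M2 X2 f1 g1) h"
  shows "\<exists>s\<in>S. \<forall>x\<in>tfree R M1 X1. tpush R M1 X1 M2 X2 f1 g1 x \<in> trel R M2 X2 \<longrightarrow> fsmult R s x \<in> trel R M1 X1"
proof -
  obtain s where s: "s \<in> S" and k: "\<forall>a\<in>carrier (tensor R M1 X1). tensor_map R M1 X1 M2 X2 f1 g1 a = \<zero>\<^bsub>tensor R M2 X2\<^esub>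
       \<longrightarrow> s \<odot>\<^bsub>tensor R M1 X1\<^esub> a = \<zero>\<^bsub>tensor R M1 X1\<^esub>"
    using u unfolding u_S_exact_def by blast
  have sR: "s \<in> carrier R" using s SR by blast
  show ?thesis
  proof (intro bexI[OF _ s] ballI impI)
    fix x assume x: "x \<in> tfree R M1 X1" and p: "tpush R M1 X1 M2 X2 f1 g1 x \<in> trel R M2 X2"
    have a: "tclass R M1 X1 x \<in> carrier (tensor R M1 X1)" using x by (simp add: tensor_carrier[OF m1])
    have t: "tpush R M1 X1 M2 X2 f1 g1 x \<in> tfree R M2 X2" by (rule tpush_tfree[OF x])
    have "tensor_map R M1 X1 M2 X2 f1 g1 (tclass R M1 X1 x) = \<zero>\<^bsub>tensor R M2 X2\<^esub>"
      using p x tensor_map_class[OF m1 m2 h1] tclass_zero_iff[OF m2 t] by simp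
    then have "s \<odot>\<^bsub>tensor R M1 X1\<^esub> tclass R M1 X1 x = \<zero>\<^bsub>tensor R M1 X1\<^esub>" using k a by blast
    then show "fsmult R s x \<in> trel R M1 X1" using tensor_smult[OF m1 sR x] tclass_zero_iff[OF m1] x sR by simp
  qed
qed

end

context cr begin

lemma fid_sm2: "r \<in> carrier R \<Longrightarrow> s \<in> carrier R \<Longrightarrow> x \<in> FV \<Longrightarrow> y \<in> FV \<Longrightarrow>
  fsmult R s (fadd R y (fsmult R r x)) = fadd R (fsmult R s y) (fsmult R r (fsmult R s x))"
proof (rule ext)
  fix p assume "r \<in> carrier R" "s \<in> carrier R" "x \<in> FV" "y \<in> FV"
  then have "x p \<in> carrier R" "y p \<in> carrier R" "r \<in> carrier R" "s \<in> carrier R" by auto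
  then show "fsmult R s (fadd R y (fsmult R r x)) p = fadd R (fsmult R s y) (fsmult R r (fsmult R s x)) p"
    by (simp add: fapp) algebra
qed

lemma fid_E: "r \<in> carrier R \<Longrightarrow> s \<in> carrier R \<Longrightarrow> y \<in> FV \<Longrightarrow> d1 \<in> FV \<Longrightarrow> Q \<in> FV \<Longrightarrow> d2 \<in> FV \<Longrightarrow>
  fadd R (fsmult R (s \<otimes> s) (fadd R y (fsmult R r d1))) (fneg R (fsmult R s (fadd R Q (fsmult R r d2))))
  = fadd R (fadd R (fsmult R (s \<otimes> s) y) (fneg R (fsmult R s Q))) (fsmult R r (fsmult R s (fadd R (fsmult R s d1) (fneg R d2))))"
proof (rule ext)
  fix p assume "r \<in> carrier R" "s \<in> carrier R" "y \<in> FV" "d1 \<in> FV" "Q \<in> FV" "d2 \<in> FV"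
  then have "y p \<in> carrier R" "d1 p \<in> carrier R" "Q p \<in> carrier R" "d2 p \<in> carrier R" "r \<in> carrier R" "s \<in> carrier R" by auto
  then show "fadd R (fsmult R (s \<otimes> s) (fadd R y (fsmult R r d1))) (fneg R (fsmult R s (fadd R Q (fsmult R r d2)))) p
  = fadd R (fadd R (fsmult R (s \<otimes> s) y) (fneg R (fsmult R s Q))) (fsmult R r (fsmult R s (fadd R (fsmult R s d1) (fneg R d2)))) p"
    by (simp add: fapp) algebra
qed

lemma fid_back: "u \<in> FV \<Longrightarrow> v \<in> FV \<Longrightarrow> fadd R (fadd R u (fneg R v)) v = u"
proof (rule ext)
  fix p assume "u \<in> FV" "v \<in> FV"
  then have "u p \<in> carrier R" "v p \<in> carrier R" by auto
  then show "fadd R (fadd R u (fneg R v)) v p = u p" by (simp add: fapp) algebra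
qed

lemma fid_comm_sm: "r \<in> carrier R \<Longrightarrow> s \<in> carrier R \<Longrightarrow> x \<in> FV \<Longrightarrow>
  fsmult R s (fsmult R r x) = fsmult R r (fsmult R s x)"
  by (simp add: fsmult_assoc m_comm)

context
  fixes A :: "('r,'a) module" and B :: "('r,'b) module" and C :: "('r,'c) module" and X :: "('r,'x) module"
    and f g s
  assumes mA: "module R A" and mB: "module R B" and mC: "module R C" and mX: "module R X"
    and hf: "mod_hom R A B f" and hg: "mod_hom R B C g" and sR: "s \<in> carrier R"
    and e2: "\<And>b. b \<in> carrier B \<Longrightarrow> g b = \<zero>\<^bsub>C\<^esub> \<Longrightarrow> s \<odot>\<^bsub>B\<^esub> b \<in> f ` carrier A"
    and e3: "\<And>a. a \<in> carrier A \<Longrightarrow> g (s \<odot>\<^bsub>B\<^esub> f a) = \<zero>\<^bsub>C\<^esub>"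
    and e4: "\<And>c. c \<in> carrier C \<Longrightarrow> s \<odot>\<^bsub>C\<^esub> c \<in> g ` carrier B"
begin

lemma fc: "a \<in> carrier A \<Longrightarrow> f a \<in> carrier B" using mh_closed[OF hf] .
lemma gc: "b \<in> carrier B \<Longrightarrow> g b \<in> carrier C" using mh_closed[OF hg] .

lemma rx_F4: "w \<in> tfree R C X \<Longrightarrow> \<exists>y\<in>tfree R B X. teq C X (fsmult R s w) (tpush R B X C X g id y)"
proof (induction rule: tfree_induct)
  case zero
  show ?case
    by (intro bexI[of _ "fzero R"]) (simp_all add: tpush_fzero sR teq_refl[OF mC mX])
next
  case (step y0 r p)
  obtain c x where p: "p = (c, x)" by (cases p)
  have cx: "c \<in> carrier C" "x \<in> carrier X" using step p by auto
  obtain y1 where y1: "y1 \<in> tfree R B X" "teq C X (fsmult R s y0) (tpush R B X C X g id y1)" using step by blast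
  obtain b where b: "b \<in> carrier B" "s \<odot>\<^bsub>C\<^esub> c = g b" using e4[OF cx(1)] by blast
  let ?y = "fadd R y1 (fsmult R r (fdelta R (b, x)))"
  have "tpush R B X C X g id ?y = fadd R (tpush R B X C X g id y1) (fsmult R r (fdelta R (g b, x)))"
    using y1 step b cx gc by (subst tpush_step') auto
  moreover have "fsmult R s (fadd R y0 (fsmult R r (fdelta R p))) =
      fadd R (fsmult R s y0) (fsmult R r (fsmult R s (fdelta R (c, x))))"
    unfolding p using step sR by (intro fid_sm2) auto
  moreover have "teq C X (fsmult R r (fsmult R s (fdelta R (c, x)))) (fsmult R r (fdelta R (g b, x)))"
  proof -
    have "teq C X (fdelta R (s \<odot>\<^bsub>C\<^esub> c, x)) (fsmult R s (fdelta R (c, x)))"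
      using tb_lsmult[OF mC mX sR cx] .
    then have "teq C X (fsmult R s (fdelta R (c, x))) (fdelta R (g b, x))"
      using teq_sym[OF mC mX] sR b by simp
    then show ?thesis using teq_smult[OF mC mX] step sR by simp
  qed
  ultimately have "teq C X (fsmult R s (fadd R y0 (fsmult R r (fdelta R p)))) (tpush R B X C X g id ?y)"
    using teq_add[OF mC mX _ _ _ _ y1(2)] step sR y1 by (simp add: tpush_FV)
  moreover have "?y \<in> tfree R B X" using y1 step b cx by simp
  ultimately show ?case by blast
qed

lemma rx_F3: "z \<in> tfree R A X \<Longrightarrow> tpush R B X C X g id (fsmult R s (tpush R A X B X f id z)) \<in> trel R C X"
proof -
  assume z: "z \<in> tfree R A X"
  have "fsmult R s (tpush R B X C X g id (tpush R A X B X f id z)) \<in> trel R C X"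
    using z
  proof (induction rule: tfree_induct)
    case zero
    then show ?case by (simp add: tpush_fzero sR)
  next
    case (step y r p)
    obtain a x where p: "p = (a, x)" by (cases p)
    have ax: "a \<in> carrier A" "x \<in> carrier X" using step p by auto
    have t1: "tpush R A X B X f id y \<in> tfree R B X" using step by (intro tpush_tfree) auto
    have "tpush R B X C X g id (tpush R A X B X f id (fadd R y (fsmult R r (fdelta R p)))) =
      fadd R (tpush R B X C X g id (tpush R A X B X f id y)) (fsmult R r (fdelta R (g (f a), x)))"
      unfolding p using step ax t1 fc gc by (simp add: tpush_step')
    then have e: "fsmult R s (tpush R B X C X g id (tpush R A X B X f id (fadd R y (fsmult R r (fdelta R p))))) =
      fadd R (fsmult R s (tpush R B X C X g id (tpush R A X B X f id y))) (fsmult R r (fsmult R s (fdelta R (g (f a), x))))"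
      using step sR by (simp add: fid_sm2 tpush_FV)
    have "teq C X (fsmult R s (fdelta R (g (f a), x))) (fdelta R (s \<odot>\<^bsub>C\<^esub> g (f a), x))"
      using tb_lsmult[OF mC mX sR gc[OF fc[OF ax(1)]] ax(2)] teq_sym[OF mC mX] sR by simp
    moreover have "s \<odot>\<^bsub>C\<^esub> g (f a) = \<zero>\<^bsub>C\<^esub>"
      using e3[OF ax(1)] mh_smult[OF hg sR fc[OF ax(1)]] by simp
    ultimately have t: "teq C X (fsmult R s (fdelta R (g (f a), x))) (fdelta R (\<zero>\<^bsub>C\<^esub>, x))" by simp
    have h: "fsmult R s (fdelta R (g (f a), x)) \<in> trel R C X"
      using teq_rel[OF mC mX _ _ t tb_lzero[OF mC mX ax(2)]] sR by simp
    show ?case unfolding e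
      by (rule trel_fadd[OF step.IH trel_fsmult[OF \<open>r \<in> carrier R\<close> h]])
  qed
  then show ?thesis using z sR by (simp add: tpush_fsmult tpush_tfree)
qed

definition "NN = {y \<in> tfree R B X. \<exists>z\<in>tfree R A X. teq B X y (tpush R A X B X f id z)}"

lemma NN_add: "u \<in> NN \<Longrightarrow> v \<in> NN \<Longrightarrow> fadd R u v \<in> NN"
proof -
  assume "u \<in> NN" "v \<in> NN"
  then obtain z1 z2 where z: "u \<in> tfree R B X" "v \<in> tfree R B X" "z1 \<in> tfree R A X" "z2 \<in> tfree R A X"
    "teq B X u (tpush R A X B X f id z1)" "teq B X v (tpush R A X B X f id z2)" unfolding NN_def by blast
  have "teq B X (fadd R u v) (tpush R A X B X f id (fadd R z1 z2))"
    using teq_add[OF mB mX _ _ _ _ z(5,6)] z by (simp add: tpush_fadd tpush_FV)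
  then show ?thesis unfolding NN_def using z by (intro CollectI conjI bexI[of _ "fadd R z1 z2"]) auto
qed

lemma NN_smult: "r \<in> carrier R \<Longrightarrow> u \<in> NN \<Longrightarrow> fsmult R r u \<in> NN"
proof -
  assume r: "r \<in> carrier R" and "u \<in> NN"
  then obtain z1 where z: "u \<in> tfree R B X" "z1 \<in> tfree R A X"
    "teq B X u (tpush R A X B X f id z1)" unfolding NN_def by blast
  have "teq B X (fsmult R r u) (tpush R A X B X f id (fsmult R r z1))"
    using teq_smult[OF mB mX r _ _ z(3)] z r by (simp add: tpush_fsmult tpush_FV)
  then show ?thesis unfolding NN_def using z r by (intro CollectI conjI bexI[of _ "fsmult R r z1"]) auto
qed

lemma NN_teq: "u \<in> tfree R B X \<Longrightarrow> v \<in> NN \<Longrightarrow> teq B X u v \<Longrightarrow> u \<in> NN"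
proof -
  assume u: "u \<in> tfree R B X" and "v \<in> NN" and uv: "teq B X u v"
  then obtain z1 where z: "v \<in> tfree R B X" "z1 \<in> tfree R A X"
    "teq B X v (tpush R A X B X f id z1)" unfolding NN_def by blast
  have "teq B X u (tpush R A X B X f id z1)"
    using teq_trans[OF mB mX _ _ _ uv z(3)] u z by (simp add: tpush_FV)
  then show ?thesis unfolding NN_def using z u by blast
qed

lemma NN_trel: "u \<in> trel R B X \<Longrightarrow> u \<in> NN"
proof -
  assume u: "u \<in> trel R B X"
  have "teq B X u (tpush R A X B X f id (fzero R))"
    using u teq_zero_iff[OF mB mX] mB mX by (simp add: tpush_fzero)
  then show ?thesis unfolding NN_def using u mB mX by (intro CollectI conjI bexI[of _ "fzero R"]) auto
qed

lemma NN_ker: "b \<in> carrier B \<Longrightarrow> x \<in> carrier X \<Longrightarrow> g b = \<zero>\<^bsub>C\<^esub> \<Longrightarrow> fsmult R s (fdelta R (b, x)) \<in> NN"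
proof -
  assume b: "b \<in> carrier B" "x \<in> carrier X" "g b = \<zero>\<^bsub>C\<^esub>"
  obtain a where a: "a \<in> carrier A" "s \<odot>\<^bsub>B\<^esub> b = f a" using e2[OF b(1,3)] by blast
  have "teq B X (fsmult R s (fdelta R (b, x))) (fdelta R (s \<odot>\<^bsub>B\<^esub> b, x))"
    using tb_lsmult[OF mB mX sR b(1,2)] teq_sym[OF mB mX] sR by simp
  then have "teq B X (fsmult R s (fdelta R (b, x))) (tpush R A X B X f id (fdelta R (a, x)))"
    using a b fc by (simp add: tpush_fdelta)
  then show ?thesis unfolding NN_def using a b sR by (intro CollectI conjI bexI[of _ "fdelta R (a, x)"]) auto
qed

lemma Lkey: "b \<in> carrier B \<Longrightarrow> b' \<in> carrier B \<Longrightarrow> x \<in> carrier X \<Longrightarrow> v \<in> tfree R B X \<Longrightarrow> u \<in> tfree R B X \<Longrightarrow>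
  teq B X (fdelta R (b, x)) v \<Longrightarrow> teq B X (fdelta R (b', x)) u \<Longrightarrow> g b = g b' \<Longrightarrow>
  fsmult R s (fadd R v (fneg R u)) \<in> NN"
proof -
  assume h: "b \<in> carrier B" "b' \<in> carrier B" "x \<in> carrier X" "v \<in> tfree R B X" "u \<in> tfree R B X"
    "teq B X (fdelta R (b, x)) v" "teq B X (fdelta R (b', x)) u" "g b = g b'"
  interpret C: module R C by (rule mC)
  have k: "g (b \<ominus>\<^bsub>B\<^esub> b') = \<zero>\<^bsub>C\<^esub>"
    using mh_minus[OF mB mC hg h(1,2)] h(8) gc[OF h(2)] by (simp add: C.r_neg C.minus_eq)
  have kB: "b \<ominus>\<^bsub>B\<^esub> b' \<in> carrier B" using h mB by simp
  have t1: "teq B X (fdelta R (b \<ominus>\<^bsub>B\<^esub> b', x)) (fadd R (fdelta R (b, x)) (fneg R (fdelta R (b', x))))"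
    using tb_lsub[OF mB mX h(1,2,3)] .
  have t2: "teq B X (fadd R (fdelta R (b, x)) (fneg R (fdelta R (b', x)))) (fadd R v (fneg R u))"
    using teq_add[OF mB mX _ _ _ _ h(6) teq_neg[OF mB mX _ _ h(7)]] h by simp
  have "teq B X (fdelta R (b \<ominus>\<^bsub>B\<^esub> b', x)) (fadd R v (fneg R u))"
    using teq_trans[OF mB mX _ _ _ t1 t2] h by simp
  then have "teq B X (fsmult R s (fadd R v (fneg R u))) (fsmult R s (fdelta R (b \<ominus>\<^bsub>B\<^esub> b', x)))"
    using teq_smult[OF mB mX sR] teq_sym[OF mB mX] h kB by simp
  from NN_teq[OF _ NN_ker[OF kB h(3) k] this] show ?thesis using h sR by simp
qed


lemma Claim1:
  assumes bC: "\<And>c. c \<in> carrier C \<Longrightarrow> \<beta> c \<in> carrier B" and bg: "\<And>c. c \<in> carrier C \<Longrightarrow> g (\<beta> c) = s \<odot>\<^bsub>C\<^esub> c"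
    and y: "y \<in> tfree R B X"
  shows "fadd R (fsmult R (s \<otimes> s) y) (fneg R (fsmult R s (tpush R C X B X \<beta> id (tpush R B X C X g id y)))) \<in> NN"
  using y
proof (induction rule: tfree_induct)
  case zero
  then show ?case using NN_trel by (simp add: tpush_fzero sR)
next
  case (step y0 r p)
  obtain b x where p: "p = (b, x)" by (cases p)
  have bx: "b \<in> carrier B" "x \<in> carrier X" using step p by auto
  have t1: "tpush R B X C X g id y0 \<in> tfree R C X" using step by (intro tpush_tfree) auto
  have gb: "g b \<in> carrier C" using gc bx by simp
  have e1: "tpush R C X B X \<beta> id (tpush R B X C X g id (fadd R y0 (fsmult R r (fdelta R p)))) =
     fadd R (tpush R C X B X \<beta> id (tpush R B X C X g id y0)) (fsmult R r (fdelta R (\<beta> (g b), x)))"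
    unfolding p using step bx t1 gb bC by (simp add: tpush_step')
  let ?Q = "tpush R C X B X \<beta> id (tpush R B X C X g id y0)"
  have QF: "?Q \<in> FV" using t1 by (simp add: tpush_FV)
  have e: "fadd R (fsmult R (s \<otimes> s) (fadd R y0 (fsmult R r (fdelta R p))))
       (fneg R (fsmult R s (tpush R C X B X \<beta> id (tpush R B X C X g id (fadd R y0 (fsmult R r (fdelta R p)))))))
     = fadd R (fadd R (fsmult R (s \<otimes> s) y0) (fneg R (fsmult R s ?Q)))
        (fsmult R r (fsmult R s (fadd R (fsmult R s (fdelta R (b, x))) (fneg R (fdelta R (\<beta> (g b), x))))))"
    unfolding e1 unfolding p using step sR QF by (intro fid_E) auto
  have bb: "\<beta> (g b) \<in> carrier B" using bC gb by simp
  have sb: "s \<odot>\<^bsub>B\<^esub> b \<in> carrier B" using mB sR bx by simp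
  have k: "fsmult R s (fadd R (fsmult R s (fdelta R (b, x))) (fneg R (fdelta R (\<beta> (g b), x)))) \<in> NN"
  proof (rule Lkey[OF sb bb bx(2)])
    show "fsmult R s (fdelta R (b, x)) \<in> tfree R B X" using bx sR by simp
    show "fdelta R (\<beta> (g b), x) \<in> tfree R B X" using bb bx by simp
    show "teq B X (fdelta R (s \<odot>\<^bsub>B\<^esub> b, x)) (fsmult R s (fdelta R (b, x)))" by (rule tb_lsmult[OF mB mX sR bx])
    show "teq B X (fdelta R (\<beta> (g b), x)) (fdelta R (\<beta> (g b), x))" using teq_refl[OF mB mX] by simp
    show "g (s \<odot>\<^bsub>B\<^esub> b) = g (\<beta> (g b))" using mh_smult[OF hg sR bx(1)] bg[OF gb] by simp
  qed
  show ?case unfolding e by (rule NN_add[OF step.IH NN_smult[OF \<open>r \<in> carrier R\<close> k]])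
qed

lemma Claim2:
  assumes bC: "\<And>c. c \<in> carrier C \<Longrightarrow> \<beta> c \<in> carrier B" and bg: "\<And>c. c \<in> carrier C \<Longrightarrow> g (\<beta> c) = s \<odot>\<^bsub>C\<^esub> c"
    and w: "w \<in> trel R C X"
  shows "fsmult R s (tpush R C X B X \<beta> id w) \<in> NN"
proof -
  let ?P = "tpush R C X B X \<beta> id"
  have "trel R C X \<subseteq> {w \<in> tfree R C X. fsmult R s (?P w) \<in> NN}"
  proof (rule trel_minimal)
    show "fzero R \<in> {w \<in> tfree R C X. fsmult R s (?P w) \<in> NN}"
      using NN_trel by (simp add: tpush_fzero sR)
  next
    fix x y assume "x \<in> {w \<in> tfree R C X. fsmult R s (?P w) \<in> NN}" "y \<in> {w \<in> tfree R C X. fsmult R s (?P w) \<in> NN}"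
    then have h: "x \<in> tfree R C X" "y \<in> tfree R C X" "fsmult R s (?P x) \<in> NN" "fsmult R s (?P y) \<in> NN" by auto
    have "fsmult R s (?P (fadd R x y)) = fadd R (fsmult R s (?P x)) (fsmult R s (?P y))"
      using h sR by (simp add: tpush_fadd fsmult_fadd tpush_FV)
    then show "fadd R x y \<in> {w \<in> tfree R C X. fsmult R s (?P w) \<in> NN}"
      using NN_add[OF h(3,4)] h by simp
  next
    fix r x assume r: "r \<in> carrier R" and "x \<in> {w \<in> tfree R C X. fsmult R s (?P w) \<in> NN}"
    then have h: "x \<in> tfree R C X" "fsmult R s (?P x) \<in> NN" by auto
    have "fsmult R s (?P (fsmult R r x)) = fsmult R r (fsmult R s (?P x))"
      using h sR r by (simp add: tpush_fsmult fid_comm_sm[OF r sR] tpush_FV)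
    then show "fsmult R r x \<in> {w \<in> tfree R C X. fsmult R s (?P w) \<in> NN}"
      using NN_smult[OF r h(2)] h r by simp
  next
    show "tgens R C X \<subseteq> {w \<in> tfree R C X. fsmult R s (?P w) \<in> NN}"
    proof
      fix w assume w: "w \<in> tgens R C X"
      have wt: "w \<in> tfree R C X" using w tgens_tfree[OF mC mX] by blast
      have "fsmult R s (?P w) \<in> NN"
        using w unfolding tgens_def
      proof (elim UnE CollectE exE conjE)
        fix c c' x assume h: "w = fadd R (fdelta R (c \<oplus>\<^bsub>C\<^esub> c', x)) (fneg R (fadd R (fdelta R (c, x)) (fdelta R (c', x))))"
          "c \<in> carrier C" "c' \<in> carrier C" "x \<in> carrier X"
        have cc: "c \<oplus>\<^bsub>C\<^esub> c' \<in> carrier C" using mC h by simp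
        have "?P w = fadd R (fdelta R (\<beta> (c \<oplus>\<^bsub>C\<^esub> c'), x)) (fneg R (fadd R (fdelta R (\<beta> c, x)) (fdelta R (\<beta> c', x))))"
          using h cc bC by (simp add: tpush_fadd tpush_fneg tpush_fdelta)
        moreover have "fsmult R s (fadd R (fdelta R (\<beta> (c \<oplus>\<^bsub>C\<^esub> c'), x)) (fneg R (fadd R (fdelta R (\<beta> c, x)) (fdelta R (\<beta> c', x))))) \<in> NN"
        proof (rule Lkey)
          show "\<beta> (c \<oplus>\<^bsub>C\<^esub> c') \<in> carrier B" "\<beta> c \<oplus>\<^bsub>B\<^esub> \<beta> c' \<in> carrier B" "x \<in> carrier X"
            using bC cc h mB by auto
          show "fdelta R (\<beta> (c \<oplus>\<^bsub>C\<^esub> c'), x) \<in> tfree R B X" "fadd R (fdelta R (\<beta> c, x)) (fdelta R (\<beta> c', x)) \<in> tfree R B X"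
            using bC cc h by auto
          show "teq B X (fdelta R (\<beta> (c \<oplus>\<^bsub>C\<^esub> c'), x)) (fdelta R (\<beta> (c \<oplus>\<^bsub>C\<^esub> c'), x))"
            using teq_refl[OF mB mX] by simp
          show "teq B X (fdelta R (\<beta> c \<oplus>\<^bsub>B\<^esub> \<beta> c', x)) (fadd R (fdelta R (\<beta> c, x)) (fdelta R (\<beta> c', x)))"
            using tb_ladd[OF mB mX] bC h by simp
          show "g (\<beta> (c \<oplus>\<^bsub>C\<^esub> c')) = g (\<beta> c \<oplus>\<^bsub>B\<^esub> \<beta> c')"
            using bg[OF cc] bg[OF h(2)] bg[OF h(3)] mh_add[OF hg] bC h module.smult_r_distr[OF mC sR] by simp
        qed
        ultimately show ?thesis by simp
      next
        fix c x x' assume h: "w = fadd R (fdelta R (c, x \<oplus>\<^bsub>X\<^esub> x')) (fneg R (fadd R (fdelta R (c, x)) (fdelta R (c, x'))))"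
          "c \<in> carrier C" "x \<in> carrier X" "x' \<in> carrier X"
        have xx: "x \<oplus>\<^bsub>X\<^esub> x' \<in> carrier X" using mX h by simp
        have "?P w = fadd R (fdelta R (\<beta> c, x \<oplus>\<^bsub>X\<^esub> x')) (fneg R (fadd R (fdelta R (\<beta> c, x)) (fdelta R (\<beta> c, x'))))"
          using h xx bC by (simp add: tpush_fadd tpush_fneg tpush_fdelta)
        moreover have "fadd R (fdelta R (\<beta> c, x \<oplus>\<^bsub>X\<^esub> x')) (fneg R (fadd R (fdelta R (\<beta> c, x)) (fdelta R (\<beta> c, x')))) \<in> trel R B X"
          using tb_radd[OF mB mX bC[OF h(2)] h(3,4)] by (simp add: teq_def)
        ultimately show ?thesis using NN_trel sR by simp
      next
        fix r c x assume h: "w = fadd R (fdelta R (r \<odot>\<^bsub>C\<^esub> c, x)) (fneg R (fsmult R r (fdelta R (c, x))))"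
          "r \<in> carrier R" "c \<in> carrier C" "x \<in> carrier X"
        have cc: "r \<odot>\<^bsub>C\<^esub> c \<in> carrier C" using mC h by simp
        have "?P w = fadd R (fdelta R (\<beta> (r \<odot>\<^bsub>C\<^esub> c), x)) (fneg R (fsmult R r (fdelta R (\<beta> c, x))))"
          using h cc bC by (simp add: tpush_fadd tpush_fneg tpush_fsmult tpush_fdelta)
        moreover have "fsmult R s (fadd R (fdelta R (\<beta> (r \<odot>\<^bsub>C\<^esub> c), x)) (fneg R (fsmult R r (fdelta R (\<beta> c, x))))) \<in> NN"
        proof (rule Lkey)
          show "\<beta> (r \<odot>\<^bsub>C\<^esub> c) \<in> carrier B" "r \<odot>\<^bsub>B\<^esub> \<beta> c \<in> carrier B" "x \<in> carrier X"
            using bC cc h mB by auto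
          show "fdelta R (\<beta> (r \<odot>\<^bsub>C\<^esub> c), x) \<in> tfree R B X" "fsmult R r (fdelta R (\<beta> c, x)) \<in> tfree R B X"
            using bC cc h by auto
          show "teq B X (fdelta R (\<beta> (r \<odot>\<^bsub>C\<^esub> c), x)) (fdelta R (\<beta> (r \<odot>\<^bsub>C\<^esub> c), x))"
            using teq_refl[OF mB mX] by simp
          show "teq B X (fdelta R (r \<odot>\<^bsub>B\<^esub> \<beta> c, x)) (fsmult R r (fdelta R (\<beta> c, x)))"
            using tb_lsmult[OF mB mX] bC h by simp
          have "s \<odot>\<^bsub>C\<^esub> (r \<odot>\<^bsub>C\<^esub> c) = r \<odot>\<^bsub>C\<^esub> (s \<odot>\<^bsub>C\<^esub> c)"
            using module.smult_assoc1[OF mC sR h(2) h(3)] module.smult_assoc1[OF mC h(2) sR h(3)] sR h(2)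
            by (simp add: m_comm)
          then show "g (\<beta> (r \<odot>\<^bsub>C\<^esub> c)) = g (r \<odot>\<^bsub>B\<^esub> \<beta> c)"
            using bg[OF cc] bg[OF h(3)] mh_smult[OF hg h(2) bC[OF h(3)]] by simp
        qed
        ultimately show ?thesis by simp
      next
        fix r c x assume h: "w = fadd R (fdelta R (c, r \<odot>\<^bsub>X\<^esub> x)) (fneg R (fsmult R r (fdelta R (c, x))))"
          "r \<in> carrier R" "c \<in> carrier C" "x \<in> carrier X"
        have xx: "r \<odot>\<^bsub>X\<^esub> x \<in> carrier X" using mX h by simp
        have "?P w = fadd R (fdelta R (\<beta> c, r \<odot>\<^bsub>X\<^esub> x)) (fneg R (fsmult R r (fdelta R (\<beta> c, x))))"
          using h xx bC by (simp add: tpush_fadd tpush_fneg tpush_fsmult tpush_fdelta)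
        moreover have "fadd R (fdelta R (\<beta> c, r \<odot>\<^bsub>X\<^esub> x)) (fneg R (fsmult R r (fdelta R (\<beta> c, x)))) \<in> trel R B X"
          using tb_rsmult[OF mB mX h(2) bC[OF h(3)] h(4)] by (simp add: teq_def)
        ultimately show ?thesis using NN_trel sR by simp
      qed
      then show "w \<in> {w \<in> tfree R C X. fsmult R s (?P w) \<in> NN}" using wt by blast
    qed
  qed blast
  then show ?thesis using w by blast
qed

lemma rx_F2: "y \<in> tfree R B X \<Longrightarrow> tpush R B X C X g id y \<in> trel R C X \<Longrightarrow>
  \<exists>z\<in>tfree R A X. teq B X (fsmult R (s \<otimes> s) y) (tpush R A X B X f id z)"
proof -
  assume y: "y \<in> tfree R B X" and yk: "tpush R B X C X g id y \<in> trel R C X"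
  define \<beta> where "\<beta> c = (SOME b. b \<in> carrier B \<and> g b = s \<odot>\<^bsub>C\<^esub> c)" for c
  have bb: "\<beta> c \<in> carrier B \<and> g (\<beta> c) = s \<odot>\<^bsub>C\<^esub> c" if "c \<in> carrier C" for c
  proof -
    have "\<exists>b. b \<in> carrier B \<and> g b = s \<odot>\<^bsub>C\<^esub> c" using e4[OF that] by force
    then show ?thesis unfolding \<beta>_def by (rule someI_ex)
  qed
  have bC: "\<And>c. c \<in> carrier C \<Longrightarrow> \<beta> c \<in> carrier B" using bb by blast
  have bg: "\<And>c. c \<in> carrier C \<Longrightarrow> g (\<beta> c) = s \<odot>\<^bsub>C\<^esub> c" using bb by blast
  let ?Q = "tpush R C X B X \<beta> id (tpush R B X C X g id y)"
  have QF: "?Q \<in> FV" using y by (simp add: tpush_FV)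
  have n1: "fadd R (fsmult R (s \<otimes> s) y) (fneg R (fsmult R s ?Q)) \<in> NN" by (rule Claim1[OF bC bg y])
  have n2: "fsmult R s ?Q \<in> NN" by (rule Claim2[OF bC bg yk])
  have "fsmult R (s \<otimes> s) y = fadd R (fadd R (fsmult R (s \<otimes> s) y) (fneg R (fsmult R s ?Q))) (fsmult R s ?Q)"
    using y sR QF by (simp add: fid_back)
  then have "fsmult R (s \<otimes> s) y \<in> NN" using NN_add[OF n1 n2] by simp
  then show ?thesis unfolding NN_def by blast
qed

end
end

definition freemod :: "'r ring \<Rightarrow> 'i set \<Rightarrow> ('r, 'i \<Rightarrow> 'r) module" where
  "freemod R I = \<lparr>carrier = {p. (\<forall>i. p i \<in> carrier R) \<and> (\<forall>i. i \<notin> I \<longrightarrow> p i = \<zero>\<^bsub>R\<^esub>) \<and> finite {i. p i \<noteq> \<zero>\<^bsub>R\<^esub>}},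
     mult = (\<lambda>x y. fzero R), one = fzero R, zero = fzero R, add = fadd R, smult = fsmult R\<rparr>"

definition fsumf :: "'r ring \<Rightarrow> ('i \<Rightarrow> 'p \<Rightarrow> 'r) \<Rightarrow> 'i set \<Rightarrow> 'p \<Rightarrow> 'r" where
  "fsumf R h J = (\<lambda>q. finsum R (\<lambda>i. h i q) J)"

context cr begin

lemma freemod_carrier: "p \<in> carrier (freemod R I) \<longleftrightarrow> p \<in> FV \<and> (\<forall>i. i \<notin> I \<longrightarrow> p i = \<zero>) \<and> finite {i. p i \<noteq> \<zero>}"
  unfolding freemod_def FV_def by simp

lemma freemod_simps[simp]: "\<zero>\<^bsub>freemod R I\<^esub> = fzero R" "x \<oplus>\<^bsub>freemod R I\<^esub> y = fadd R x y"
  "r \<odot>\<^bsub>freemod R I\<^esub> x = fsmult R r x"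
  by (simp_all add: freemod_def)

lemma freemodI: "p \<in> FV \<Longrightarrow> (\<And>i. i \<notin> I \<Longrightarrow> p i = \<zero>) \<Longrightarrow> {i. p i \<noteq> \<zero>} \<subseteq> F \<Longrightarrow> finite F \<Longrightarrow>
   p \<in> carrier (freemod R I)"
  unfolding freemod_carrier by (blast intro: finite_subset)

lemma freemod_FV: "p \<in> carrier (freemod R I) \<Longrightarrow> p \<in> FV" by (simp add: freemod_carrier)
lemma freemod_out: "p \<in> carrier (freemod R I) \<Longrightarrow> i \<notin> I \<Longrightarrow> p i = \<zero>" by (simp add: freemod_carrier)
lemma freemod_fin: "p \<in> carrier (freemod R I) \<Longrightarrow> finite {i. p i \<noteq> \<zero>}" by (simp add: freemod_carrier)

lemma freemod_fadd: "p \<in> carrier (freemod R I) \<Longrightarrow> q \<in> carrier (freemod R I) \<Longrightarrow> fadd R p q \<in> carrier (freemod R I)"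
  apply (rule freemodI[where F="{i. p i \<noteq> \<zero>} \<union> {i. q i \<noteq> \<zero>}"])
  apply (simp add: freemod_FV)
  apply (simp add: freemod_out fapp)
  apply (auto simp: fapp)[1]
  by (simp add: freemod_fin)

lemma freemod_fsmult: "r \<in> carrier R \<Longrightarrow> p \<in> carrier (freemod R I) \<Longrightarrow> fsmult R r p \<in> carrier (freemod R I)"
  apply (rule freemodI[where F="{i. p i \<noteq> \<zero>}"])
  apply (simp add: freemod_FV)
  apply (simp add: freemod_out fapp)
  apply (auto simp: fapp)[1]
  by (simp add: freemod_fin)

lemma freemod_fneg: "p \<in> carrier (freemod R I) \<Longrightarrow> fneg R p \<in> carrier (freemod R I)"
  apply (rule freemodI[where F="{i. p i \<noteq> \<zero>}"])
  apply (simp add: freemod_FV)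
  apply (simp add: freemod_out fapp)
  apply (auto simp: fapp)[1]
  by (simp add: freemod_fin)

lemma freemod_fzero: "fzero R \<in> carrier (freemod R I)"
  by (rule freemodI[where F="{}"]) (auto simp: fapp)

lemma freemod_fdelta: "i \<in> I \<Longrightarrow> fdelta R i \<in> carrier (freemod R I)"
  by (rule freemodI[where F="{i}"]) (auto simp: fdelta_app)

lemma freemod_module: "module R (freemod R I)"
proof (rule moduleI)
  show "cring R" by (rule is_cring)
  show "abelian_group (freemod R I)"
  proof (rule abelian_groupI)
    fix x y z assume x: "x \<in> carrier (freemod R I)" and y: "y \<in> carrier (freemod R I)" and z: "z \<in> carrier (freemod R I)"
    show "x \<oplus>\<^bsub>freemod R I\<^esub> y \<in> carrier (freemod R I)" using x y by (simp add: freemod_fadd)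
    show "x \<oplus>\<^bsub>freemod R I\<^esub> y \<oplus>\<^bsub>freemod R I\<^esub> z = x \<oplus>\<^bsub>freemod R I\<^esub> (y \<oplus>\<^bsub>freemod R I\<^esub> z)"
      using x y z by (simp add: fadd_assoc freemod_FV)
    show "x \<oplus>\<^bsub>freemod R I\<^esub> y = y \<oplus>\<^bsub>freemod R I\<^esub> x" using x y by (simp add: fadd_comm freemod_FV)
    show "\<zero>\<^bsub>freemod R I\<^esub> \<oplus>\<^bsub>freemod R I\<^esub> x = x" using x by (simp add: freemod_FV)
    show "\<exists>y\<in>carrier (freemod R I). y \<oplus>\<^bsub>freemod R I\<^esub> x = \<zero>\<^bsub>freemod R I\<^esub>"
      using x freemod_fneg[OF x] by (intro bexI[of _ "fneg R x"]) (simp_all add: fadd_comm freemod_FV)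
  next
    show "\<zero>\<^bsub>freemod R I\<^esub> \<in> carrier (freemod R I)" by (simp add: freemod_fzero)
  qed
next
  fix a b x y assume a: "a \<in> carrier R" and b: "b \<in> carrier R" and x: "x \<in> carrier (freemod R I)" and y: "y \<in> carrier (freemod R I)"
  show "a \<odot>\<^bsub>freemod R I\<^esub> x \<in> carrier (freemod R I)" using a x by (simp add: freemod_fsmult)
  show "(a \<oplus> b) \<odot>\<^bsub>freemod R I\<^esub> x = a \<odot>\<^bsub>freemod R I\<^esub> x \<oplus>\<^bsub>freemod R I\<^esub> b \<odot>\<^bsub>freemod R I\<^esub> x"
    using a b x by (simp add: fadd_smult_distr freemod_FV)
  show "a \<odot>\<^bsub>freemod R I\<^esub> (x \<oplus>\<^bsub>freemod R I\<^esub> y) = a \<odot>\<^bsub>freemod R I\<^esub> x \<oplus>\<^bsub>freemod R I\<^esub> a \<odot>\<^bsub>freemod R I\<^esub> y"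
    using a x y by (simp add: fsmult_fadd freemod_FV)
  show "(a \<otimes> b) \<odot>\<^bsub>freemod R I\<^esub> x = a \<odot>\<^bsub>freemod R I\<^esub> (b \<odot>\<^bsub>freemod R I\<^esub> x)"
    using a b x by (simp add: fsmult_assoc freemod_FV)
next
  fix x assume x: "x \<in> carrier (freemod R I)"
  show "\<one> \<odot>\<^bsub>freemod R I\<^esub> x = x" using x by (simp add: freemod_FV)
qed

lemma freemod_finsum_app:
  assumes J: "finite J" and h: "h \<in> J \<rightarrow> carrier (freemod R I)"
  shows "finsum (freemod R I) h J j = finsum R (\<lambda>i. h i j) J"
  using J h
proof (induction J rule: finite_induct)
  case empty
  have "finsum (freemod R I) h {} = fzero R"
    using abelian_monoid.finsum_empty[OF abelian_group.axioms(1)[OF module.axioms(2)[OF freemod_module]]] by simp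
  then show ?case by (simp add: fzero_app)
next
  case (insert i J)
  interpret P: module R "freemod R I" by (rule freemod_module)
  have hJ: "h \<in> J \<rightarrow> carrier (freemod R I)" using insert by auto
  have hc: "h k j \<in> carrier R" if "k \<in> insert i J" for k
  proof -
    have "h k \<in> carrier (freemod R I)" using insert(4) that by blast
    then show ?thesis by (rule FV_D[OF freemod_FV])
  qed
  have "finsum (freemod R I) h (insert i J) = h i \<oplus>\<^bsub>freemod R I\<^esub> finsum (freemod R I) h J"
    using insert by (intro P.finsum_insert) auto
  then have "finsum (freemod R I) h (insert i J) j = h i j \<oplus> finsum (freemod R I) h J j" by (simp add: fapp)
  also have "\<dots> = h i j \<oplus> finsum R (\<lambda>i. h i j) J" using insert hJ by simp
  also have "\<dots> = finsum R (\<lambda>i. h i j) (insert i J)"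
    using insert hc by (subst finsum_insert) (auto simp: Pi_def)
  finally show ?case .
qed

lemma freemod_expand:
  assumes p: "p \<in> carrier (freemod R I)" and J: "finite J" "J \<subseteq> I" "{i. p i \<noteq> \<zero>} \<subseteq> J"
  shows "finsum (freemod R I) (\<lambda>i. fsmult R (p i) (fdelta R i)) J = p"
proof (rule ext)
  fix j
  have pF: "\<And>i. p i \<in> carrier R" using freemod_FV[OF p] by simp
  have h: "(\<lambda>i. fsmult R (p i) (fdelta R i)) \<in> J \<rightarrow> carrier (freemod R I)"
    using J pF by (auto intro!: freemod_fsmult freemod_fdelta)
  have "finsum (freemod R I) (\<lambda>i. fsmult R (p i) (fdelta R i)) J j = finsum R (\<lambda>i. p i \<otimes> fdelta R i j) J"
    using freemod_finsum_app[OF J(1) h] by (simp add: fapp)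
  also have "\<dots> = finsum R (\<lambda>i. if j = i then p i else \<zero>) J"
    using pF by (intro finsum_cong') (auto simp: fdelta_app)
  also have "\<dots> = p j"
  proof (cases "j \<in> J")
    case True
    then show ?thesis using finsum_singleton[OF True J(1), of p] pF by auto
  next
    case False
    then have "p j = \<zero>" using J(3) by blast
    moreover have "finsum R (\<lambda>i. if j = i then p i else \<zero>) J = finsum R (\<lambda>i. \<zero>) J"
      using False pF by (intro finsum_cong') auto
    ultimately show ?thesis by simp
  qed
  finally show "finsum (freemod R I) (\<lambda>i. fsmult R (p i) (fdelta R i)) J j = p j" .
qed

end

definition fpi :: "'r ring \<Rightarrow> ('r,'m) module \<Rightarrow> ('m \<Rightarrow> 'r) \<Rightarrow> 'm" where
  "fpi R M p = finsum M (\<lambda>m. p m \<odot>\<^bsub>M\<^esub> m) {m \<in> carrier M. p m \<noteq> \<zero>\<^bsub>R\<^esub>}"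

definition kmod :: "'r ring \<Rightarrow> ('r,'m) module \<Rightarrow> ('r, 'm \<Rightarrow> 'r) module" where
  "kmod R M = (freemod R (carrier M))\<lparr>carrier := {p \<in> carrier (freemod R (carrier M)). fpi R M p = \<zero>\<^bsub>M\<^esub>}\<rparr>"

context cr begin

context
  fixes M :: "('r,'m) module"
  assumes mM: "module R M"
begin

lemma fpi_alt:
  assumes p: "p \<in> carrier (freemod R (carrier M))" and D: "finite D" "D \<subseteq> carrier M" "{m. p m \<noteq> \<zero>} \<subseteq> D"
  shows "fpi R M p = finsum M (\<lambda>m. p m \<odot>\<^bsub>M\<^esub> m) D"
proof -
  interpret M: module R M by (rule mM)
  have pF: "\<And>i. p i \<in> carrier R" using freemod_FV[OF p] by simp
  have sub: "{m \<in> carrier M. p m \<noteq> \<zero>} \<subseteq> D" using D by blast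
  show ?thesis unfolding fpi_def
  proof (rule M.add.finprod_mono_neutral_cong_left[OF D(1) sub])
    show "\<And>i. i \<in> D - {m \<in> carrier M. p m \<noteq> \<zero>} \<Longrightarrow> p i \<odot>\<^bsub>M\<^esub> i = \<zero>\<^bsub>M\<^esub>"
      using D(2) by auto
    show "(\<lambda>m. p m \<odot>\<^bsub>M\<^esub> m) \<in> D \<rightarrow> carrier M" using D(2) pF by auto
  qed simp
qed

lemma fpi_closed: "p \<in> carrier (freemod R (carrier M)) \<Longrightarrow> fpi R M p \<in> carrier M"
proof -
  assume p: "p \<in> carrier (freemod R (carrier M))"
  interpret M: module R M by (rule mM)
  have pF: "\<And>i. p i \<in> carrier R" using freemod_FV[OF p] by simp
  show ?thesis unfolding fpi_def using pF by (intro M.finsum_closed) auto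
qed

lemma fpi_hom: "mod_hom R (freemod R (carrier M)) M (fpi R M)"
  unfolding mod_hom_def
proof (intro conjI ballI funcsetI)
  interpret M: module R M by (rule mM)
  fix x assume "x \<in> carrier (freemod R (carrier M))"
  then show "fpi R M x \<in> carrier M" by (rule fpi_closed)
next
  interpret M: module R M by (rule mM)
  fix x y assume x: "x \<in> carrier (freemod R (carrier M))" and y: "y \<in> carrier (freemod R (carrier M))"
  let ?D = "{m. x m \<noteq> \<zero>} \<union> {m. y m \<noteq> \<zero>}"
  have fD: "finite ?D" using freemod_fin[OF x] freemod_fin[OF y] by simp
  have sD: "?D \<subseteq> carrier M" using freemod_out[OF x] freemod_out[OF y] by blast
  have xy: "fadd R x y \<in> carrier (freemod R (carrier M))" using x y by (rule freemod_fadd)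
  have sxy: "{m. fadd R x y m \<noteq> \<zero>} \<subseteq> ?D" by (auto simp: fapp)
  have xF: "\<And>i. x i \<in> carrier R" using freemod_FV[OF x] by simp
  have yF: "\<And>i. y i \<in> carrier R" using freemod_FV[OF y] by simp
  have "fpi R M (fadd R x y) = finsum M (\<lambda>m. fadd R x y m \<odot>\<^bsub>M\<^esub> m) ?D" by (rule fpi_alt[OF xy fD sD sxy])
  also have "\<dots> = finsum M (\<lambda>m. x m \<odot>\<^bsub>M\<^esub> m \<oplus>\<^bsub>M\<^esub> y m \<odot>\<^bsub>M\<^esub> m) ?D"
    using sD xF yF by (intro M.finsum_cong') (auto simp: fapp M.smult_l_distr)
  also have "\<dots> = finsum M (\<lambda>m. x m \<odot>\<^bsub>M\<^esub> m) ?D \<oplus>\<^bsub>M\<^esub> finsum M (\<lambda>m. y m \<odot>\<^bsub>M\<^esub> m) ?D"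
    using sD xF yF by (intro M.finsum_addf) auto
  also have "\<dots> = fpi R M x \<oplus>\<^bsub>M\<^esub> fpi R M y"
    using fpi_alt[OF x fD sD] fpi_alt[OF y fD sD] by auto
  finally show "fpi R M (x \<oplus>\<^bsub>freemod R (carrier M)\<^esub> y) = fpi R M x \<oplus>\<^bsub>M\<^esub> fpi R M y" by simp
next
  interpret M: module R M by (rule mM)
  fix r x assume r: "r \<in> carrier R" and x: "x \<in> carrier (freemod R (carrier M))"
  let ?D = "{m. x m \<noteq> \<zero>}"
  have fD: "finite ?D" using freemod_fin[OF x] by simp
  have sD: "?D \<subseteq> carrier M" using freemod_out[OF x] by blast
  have xy: "fsmult R r x \<in> carrier (freemod R (carrier M))" using r x by (rule freemod_fsmult)
  have xF: "\<And>i. x i \<in> carrier R" using freemod_FV[OF x] by simp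
  have sxy: "{m. fsmult R r x m \<noteq> \<zero>} \<subseteq> ?D" using r xF by (auto simp: fapp)
  have "fpi R M (fsmult R r x) = finsum M (\<lambda>m. fsmult R r x m \<odot>\<^bsub>M\<^esub> m) ?D" by (rule fpi_alt[OF xy fD sD sxy])
  also have "\<dots> = finsum M (\<lambda>m. r \<odot>\<^bsub>M\<^esub> (x m \<odot>\<^bsub>M\<^esub> m)) ?D"
    using sD xF r by (intro M.finsum_cong') (auto simp: fapp M.smult_assoc1)
  also have "\<dots> = r \<odot>\<^bsub>M\<^esub> finsum M (\<lambda>m. x m \<odot>\<^bsub>M\<^esub> m) ?D"
    using sD xF r fD by (intro M.finsum_smult_ldistr[symmetric]) auto
  also have "\<dots> = r \<odot>\<^bsub>M\<^esub> fpi R M x" using fpi_alt[OF x fD sD] by simp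
  finally show "fpi R M (r \<odot>\<^bsub>freemod R (carrier M)\<^esub> x) = r \<odot>\<^bsub>M\<^esub> fpi R M x" by simp
qed

lemma fpi_delta: "m \<in> carrier M \<Longrightarrow> fpi R M (fdelta R m) = m"
proof -
  assume m: "m \<in> carrier M"
  interpret M: module R M by (rule mM)
  have "fpi R M (fdelta R m) = finsum M (\<lambda>m'. fdelta R m m' \<odot>\<^bsub>M\<^esub> m') {m}"
    using m by (intro fpi_alt freemod_fdelta) (auto simp: fdelta_app)
  then show ?thesis using m by (simp add: fdelta_app)
qed

lemma kmod_carrier: "carrier (kmod R M) = {p \<in> carrier (freemod R (carrier M)). fpi R M p = \<zero>\<^bsub>M\<^esub>}"
  by (simp add: kmod_def)

lemma kmod_submodule: "submodule {p \<in> carrier (freemod R (carrier M)). fpi R M p = \<zero>\<^bsub>M\<^esub>} R (freemod R (carrier M))"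
proof -
  interpret P: module R "freemod R (carrier M)" by (rule freemod_module)
  interpret M: module R M by (rule mM)
  have z: "fpi R M (fzero R) = \<zero>\<^bsub>M\<^esub>" using mh_zero[OF freemod_module mM fpi_hom] by simp
  show ?thesis
  proof (rule P.submoduleI)
    show "{p \<in> carrier (freemod R (carrier M)). fpi R M p = \<zero>\<^bsub>M\<^esub>} \<subseteq> carrier (freemod R (carrier M))" by blast
    show "\<zero>\<^bsub>freemod R (carrier M)\<^esub> \<in> {p \<in> carrier (freemod R (carrier M)). fpi R M p = \<zero>\<^bsub>M\<^esub>}"
      using z freemod_fzero by simp
  next
    fix a assume a: "a \<in> {p \<in> carrier (freemod R (carrier M)). fpi R M p = \<zero>\<^bsub>M\<^esub>}"
    then have "\<ominus>\<^bsub>freemod R (carrier M)\<^esub> a = (\<ominus> \<one>) \<odot>\<^bsub>freemod R (carrier M)\<^esub> a"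
      using P.smult_l_minus[of \<one> a] P.smult_one[of a] by (simp del: freemod_simps)
    moreover have "fpi R M ((\<ominus> \<one>) \<odot>\<^bsub>freemod R (carrier M)\<^esub> a) = \<zero>\<^bsub>M\<^esub>"
      using a mh_smult[OF fpi_hom, of "\<ominus> \<one>" a] by simp
    ultimately show "\<ominus>\<^bsub>freemod R (carrier M)\<^esub> a \<in> {p \<in> carrier (freemod R (carrier M)). fpi R M p = \<zero>\<^bsub>M\<^esub>}"
      using a freemod_fsmult[of "\<ominus> \<one>" a] by simp
  next
    fix a b assume a: "a \<in> {p \<in> carrier (freemod R (carrier M)). fpi R M p = \<zero>\<^bsub>M\<^esub>}"
      and b: "b \<in> {p \<in> carrier (freemod R (carrier M)). fpi R M p = \<zero>\<^bsub>M\<^esub>}"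
    then show "a \<oplus>\<^bsub>freemod R (carrier M)\<^esub> b \<in> {p \<in> carrier (freemod R (carrier M)). fpi R M p = \<zero>\<^bsub>M\<^esub>}"
      using mh_add[OF fpi_hom, of a b] freemod_fadd[of a _ b] by auto
  next
    fix r x assume r: "r \<in> carrier R" and x: "x \<in> {p \<in> carrier (freemod R (carrier M)). fpi R M p = \<zero>\<^bsub>M\<^esub>}"
    then show "r \<odot>\<^bsub>freemod R (carrier M)\<^esub> x \<in> {p \<in> carrier (freemod R (carrier M)). fpi R M p = \<zero>\<^bsub>M\<^esub>}"
      using mh_smult[OF fpi_hom r, of x] freemod_fsmult[OF r, of x] by auto
  qed
qed

lemma kmod_module: "module R (kmod R M)"
  unfolding kmod_def by (rule submodule.submodule_is_module[OF kmod_submodule freemod_module])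

lemma kmod_hom: "mod_hom R (kmod R M) (freemod R (carrier M)) id"
  unfolding mod_hom_def by (auto simp: kmod_def)

lemma kmod_exact: "short_exact (kmod R M) (freemod R (carrier M)) M id (fpi R M)"
  unfolding short_exact_def
proof (intro conjI)
  have z: "fpi R M (fzero R) = \<zero>\<^bsub>M\<^esub>" using mh_zero[OF freemod_module mM fpi_hom] by simp
  show "{a \<in> carrier (kmod R M). id a = \<zero>\<^bsub>freemod R (carrier M)\<^esub>} = {\<zero>\<^bsub>kmod R M\<^esub>}"
    using z freemod_fzero by (auto simp: kmod_def freemod_def)
  show "{b \<in> carrier (freemod R (carrier M)). fpi R M b = \<zero>\<^bsub>M\<^esub>} = id ` carrier (kmod R M)"
    by (simp add: kmod_def)
  show "fpi R M ` carrier (freemod R (carrier M)) = carrier M"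
  proof
    show "fpi R M ` carrier (freemod R (carrier M)) \<subseteq> carrier M" using fpi_closed by blast
    show "carrier M \<subseteq> fpi R M ` carrier (freemod R (carrier M))"
    proof
      fix m assume m: "m \<in> carrier M"
      then show "m \<in> fpi R M ` carrier (freemod R (carrier M))"
        using fpi_delta[OF m] freemod_fdelta[OF m] by (intro image_eqI[of _ _ "fdelta R m"]) auto
    qed
  qed
qed

end
end


definition phi :: "'r ring \<Rightarrow> ('r,'y) module \<Rightarrow> ('y \<times> ('i \<Rightarrow> 'r) \<Rightarrow> 'r) \<Rightarrow> 'i \<Rightarrow> 'y" where
  "phi R Y x j = finsum Y (\<lambda>q. (x q \<otimes>\<^bsub>R\<^esub> snd q j) \<odot>\<^bsub>Y\<^esub> fst q) {q. x q \<noteq> \<zero>\<^bsub>R\<^esub>}"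

context cr begin

lemma fsumf_empty: "fsumf R h {} = fzero R"
  by (rule ext) (simp add: fsumf_def fapp)

lemma fsumf_insert: "finite J \<Longrightarrow> i \<notin> J \<Longrightarrow> (\<And>k. k \<in> insert i J \<Longrightarrow> h k \<in> FV) \<Longrightarrow>
  fsumf R h (insert i J) = fadd R (h i) (fsumf R h J)"
proof (rule ext)
  fix q assume h: "finite J" "i \<notin> J" "\<And>k. k \<in> insert i J \<Longrightarrow> h k \<in> FV"
  have "\<And>k. k \<in> insert i J \<Longrightarrow> h k q \<in> carrier R" using h(3) by simp
  then show "fsumf R h (insert i J) q = fadd R (h i) (fsumf R h J) q"
    unfolding fsumf_def fadd_app using h by (subst finsum_insert) (auto simp: Pi_def)
qed

lemma fsumf_FV: "(\<And>k. k \<in> J \<Longrightarrow> h k \<in> FV) \<Longrightarrow> fsumf R h J \<in> FV"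
  unfolding fsumf_def by (intro FV_I finsum_closed) (auto simp: Pi_def)

lemma fsumf_tfree: "finite J \<Longrightarrow> (\<And>k. k \<in> J \<Longrightarrow> h k \<in> tfree R M X) \<Longrightarrow> fsumf R h J \<in> tfree R M X"
proof (induction J rule: finite_induct)
  case empty
  then show ?case by (simp add: fsumf_empty)
next
  case (insert i J)
  have "\<And>k. k \<in> insert i J \<Longrightarrow> h k \<in> FV" using insert.prems by (blast intro: tfree_FV)
  then show ?case using insert by (subst fsumf_insert) auto
qed

lemma fsumf_trel: assumes mM: "module R M" and mX: "module R X" shows "finite J \<Longrightarrow> (\<And>k. k \<in> J \<Longrightarrow> h k \<in> trel R M X) \<Longrightarrow> fsumf R h J \<in> trel R M X"
proof (induction J rule: finite_induct)
  case empty
  then show ?case by (simp add: fsumf_empty)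
next
  case (insert i J)
  have "\<And>k. k \<in> insert i J \<Longrightarrow> h k \<in> FV" using insert.prems trel_FV[OF mM mX] by blast
  then show ?case using insert mM mX by (subst fsumf_insert) auto
qed

lemma fsumf_fadd: "finite J \<Longrightarrow> (\<And>k. k \<in> J \<Longrightarrow> h k \<in> FV) \<Longrightarrow> (\<And>k. k \<in> J \<Longrightarrow> h' k \<in> FV) \<Longrightarrow>
  fsumf R (\<lambda>i. fadd R (h i) (h' i)) J = fadd R (fsumf R h J) (fsumf R h' J)"
proof (rule ext)
  fix q assume h: "finite J" "\<And>k. k \<in> J \<Longrightarrow> h k \<in> FV" "\<And>k. k \<in> J \<Longrightarrow> h' k \<in> FV"
  show "fsumf R (\<lambda>i. fadd R (h i) (h' i)) J q = fadd R (fsumf R h J) (fsumf R h' J) q"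
    unfolding fsumf_def fadd_app using h by (intro finsum_addf) (auto simp: Pi_def)
qed

lemma fsumf_fsmult: "finite J \<Longrightarrow> r \<in> carrier R \<Longrightarrow> (\<And>k. k \<in> J \<Longrightarrow> h k \<in> FV) \<Longrightarrow>
  fsumf R (\<lambda>i. fsmult R r (h i)) J = fsmult R r (fsumf R h J)"
proof (rule ext)
  fix q assume h: "finite J" "r \<in> carrier R" "\<And>k. k \<in> J \<Longrightarrow> h k \<in> FV"
  show "fsumf R (\<lambda>i. fsmult R r (h i)) J q = fsmult R r (fsumf R h J) q"
    unfolding fsumf_def fsmult_app using h by (intro finsum_rdistr[symmetric]) (auto simp: Pi_def)
qed

lemma fsumf_teq: assumes mM: "module R M" and mX: "module R X" shows "finite J \<Longrightarrow> (\<And>k. k \<in> J \<Longrightarrow> h k \<in> tfree R M X) \<Longrightarrow>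
   (\<And>k. k \<in> J \<Longrightarrow> h' k \<in> tfree R M X) \<Longrightarrow> (\<And>k. k \<in> J \<Longrightarrow> teq M X (h k) (h' k)) \<Longrightarrow>
   teq M X (fsumf R h J) (fsumf R h' J)"
proof (induction J rule: finite_induct)
  case empty
  then show ?case by (simp add: fsumf_empty teq_refl[OF mM mX])
next
  case (insert i J)
  have "\<And>k. k \<in> insert i J \<Longrightarrow> h k \<in> FV" "\<And>k. k \<in> insert i J \<Longrightarrow> h' k \<in> FV"
    using insert.prems by (blast intro: tfree_FV)+
  then have e1: "fsumf R h (insert i J) = fadd R (h i) (fsumf R h J)"
    and e2: "fsumf R h' (insert i J) = fadd R (h' i) (fsumf R h' J)" using insert by (auto intro: fsumf_insert)
  have t: "fsumf R h J \<in> tfree R M X" "fsumf R h' J \<in> tfree R M X" using insert by (auto intro: fsumf_tfree)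
  have hi: "h i \<in> tfree R M X" "h' i \<in> tfree R M X" using insert.prems by auto
  show ?case unfolding e1 e2
    by (rule teq_add[OF mM mX tfree_FV[OF hi(1)] tfree_FV[OF t(1)] tfree_FV[OF hi(2)] tfree_FV[OF t(2)]])
       (use insert in auto)
qed

end

context cr begin

lemma freemod_val[simp]: "p \<in> carrier (freemod R I) \<Longrightarrow> p j \<in> carrier R"
  by (rule FV_D[OF freemod_FV])

context
  fixes Y :: "('r,'y) module" and I :: "'i set"
  assumes mY: "module R Y"
begin

lemma phi_alt:
  assumes x: "x \<in> tfree R Y (freemod R I)" and D: "finite D" "D \<subseteq> carrier Y \<times> carrier (freemod R I)"
    "{q. x q \<noteq> \<zero>} \<subseteq> D"
  shows "phi R Y x j = finsum Y (\<lambda>q. (x q \<otimes> snd q j) \<odot>\<^bsub>Y\<^esub> fst q) D"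
proof -
  interpret Y: module R Y by (rule mY)
  have c: "(x q \<otimes> snd q j) \<odot>\<^bsub>Y\<^esub> fst q \<in> carrier Y" if "q \<in> D" for q
  proof -
    have "snd q \<in> carrier (freemod R I)" "fst q \<in> carrier Y" using that D(2) by auto
    then show ?thesis using freemod_FV x by simp
  qed
  show ?thesis unfolding phi_def
  proof (rule Y.add.finprod_mono_neutral_cong_left[OF D(1) D(3)])
    show "\<And>i. i \<in> D - {q. x q \<noteq> \<zero>} \<Longrightarrow> (x i \<otimes> snd i j) \<odot>\<^bsub>Y\<^esub> fst i = \<zero>\<^bsub>Y\<^esub>"
    proof -
      fix i assume i: "i \<in> D - {q. x q \<noteq> \<zero>}"
      have "snd i \<in> carrier (freemod R I)" "fst i \<in> carrier Y" using i D(2) by auto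
      then show "(x i \<otimes> snd i j) \<odot>\<^bsub>Y\<^esub> fst i = \<zero>\<^bsub>Y\<^esub>" using i freemod_FV by simp
    qed
    show "(\<lambda>q. (x q \<otimes> snd q j) \<odot>\<^bsub>Y\<^esub> fst q) \<in> D \<rightarrow> carrier Y" using c by blast
  qed simp
qed

lemma phi_closed: "x \<in> tfree R Y (freemod R I) \<Longrightarrow> phi R Y x j \<in> carrier Y"
proof -
  assume x: "x \<in> tfree R Y (freemod R I)"
  interpret Y: module R Y by (rule mY)
  have D: "finite {q. x q \<noteq> \<zero>}" "{q. x q \<noteq> \<zero>} \<subseteq> carrier Y \<times> carrier (freemod R I)"
    using tfree_fin[OF x] tfree_supp[OF x] by auto
  show ?thesis unfolding phi_alt[OF x D subset_refl]
  proof (rule Y.finsum_closed, rule funcsetI)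
    fix q assume "q \<in> {q. x q \<noteq> \<zero>}"
    then have "snd q \<in> carrier (freemod R I)" "fst q \<in> carrier Y" using D(2) by auto
    then show "(x q \<otimes> snd q j) \<odot>\<^bsub>Y\<^esub> fst q \<in> carrier Y" using freemod_FV x by simp
  qed
qed

lemma phi_fadd: "x \<in> tfree R Y (freemod R I) \<Longrightarrow> y \<in> tfree R Y (freemod R I) \<Longrightarrow>
   phi R Y (fadd R x y) j = phi R Y x j \<oplus>\<^bsub>Y\<^esub> phi R Y y j"
proof -
  assume x: "x \<in> tfree R Y (freemod R I)" and y: "y \<in> tfree R Y (freemod R I)"
  interpret Y: module R Y by (rule mY)
  let ?D = "{p. x p \<noteq> \<zero>} \<union> {p. y p \<noteq> \<zero>}"
  have fD: "finite ?D" using tfree_fin[OF x] tfree_fin[OF y] by simp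
  have sD: "?D \<subseteq> carrier Y \<times> carrier (freemod R I)" using tfree_supp[OF x] tfree_supp[OF y] by blast
  have xy: "fadd R x y \<in> tfree R Y (freemod R I)" using x y by simp
  have sxy: "{p. fadd R x y p \<noteq> \<zero>} \<subseteq> ?D" by (auto simp: fapp)
  have c: "snd q j \<in> carrier R" "fst q \<in> carrier Y" if "q \<in> ?D" for q
    using that sD freemod_FV by auto
  have "phi R Y (fadd R x y) j = finsum Y (\<lambda>q. (fadd R x y q \<otimes> snd q j) \<odot>\<^bsub>Y\<^esub> fst q) ?D"
    by (rule phi_alt[OF xy fD sD sxy])
  also have "\<dots> = finsum Y (\<lambda>q. (x q \<otimes> snd q j) \<odot>\<^bsub>Y\<^esub> fst q \<oplus>\<^bsub>Y\<^esub> (y q \<otimes> snd q j) \<odot>\<^bsub>Y\<^esub> fst q) ?D"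
    using c x y by (intro Y.finsum_cong') (auto simp: fapp l_distr Y.smult_l_distr)
  also have "\<dots> = finsum Y (\<lambda>q. (x q \<otimes> snd q j) \<odot>\<^bsub>Y\<^esub> fst q) ?D \<oplus>\<^bsub>Y\<^esub> finsum Y (\<lambda>q. (y q \<otimes> snd q j) \<odot>\<^bsub>Y\<^esub> fst q) ?D"
    using c x y by (intro Y.finsum_addf) auto
  also have "\<dots> = phi R Y x j \<oplus>\<^bsub>Y\<^esub> phi R Y y j"
    using phi_alt[OF x fD sD] phi_alt[OF y fD sD] by auto
  finally show ?thesis .
qed

lemma phi_fsmult: "r \<in> carrier R \<Longrightarrow> x \<in> tfree R Y (freemod R I) \<Longrightarrow>
   phi R Y (fsmult R r x) j = r \<odot>\<^bsub>Y\<^esub> phi R Y x j"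
proof -
  assume r: "r \<in> carrier R" and x: "x \<in> tfree R Y (freemod R I)"
  interpret Y: module R Y by (rule mY)
  let ?D = "{p. x p \<noteq> \<zero>}"
  have fD: "finite ?D" using tfree_fin[OF x] by simp
  have sD: "?D \<subseteq> carrier Y \<times> carrier (freemod R I)" using tfree_supp[OF x] by blast
  have xy: "fsmult R r x \<in> tfree R Y (freemod R I)" using r x by simp
  have sxy: "{p. fsmult R r x p \<noteq> \<zero>} \<subseteq> ?D" using r x by (auto simp: fapp)
  have c: "snd q j \<in> carrier R" "fst q \<in> carrier Y" if "q \<in> ?D" for q
    using that sD freemod_FV by auto
  have "phi R Y (fsmult R r x) j = finsum Y (\<lambda>q. (fsmult R r x q \<otimes> snd q j) \<odot>\<^bsub>Y\<^esub> fst q) ?D"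
    by (rule phi_alt[OF xy fD sD sxy])
  also have "\<dots> = finsum Y (\<lambda>q. r \<odot>\<^bsub>Y\<^esub> ((x q \<otimes> snd q j) \<odot>\<^bsub>Y\<^esub> fst q)) ?D"
    using c x r by (intro Y.finsum_cong') (auto simp: fapp m_assoc Y.smult_assoc1)
  also have "\<dots> = r \<odot>\<^bsub>Y\<^esub> finsum Y (\<lambda>q. (x q \<otimes> snd q j) \<odot>\<^bsub>Y\<^esub> fst q) ?D"
    using c x r fD by (intro Y.finsum_smult_ldistr[symmetric]) auto
  also have "\<dots> = r \<odot>\<^bsub>Y\<^esub> phi R Y x j" using phi_alt[OF x fD sD] by simp
  finally show ?thesis .
qed

lemma phi_fzero: "phi R Y (fzero R) j = \<zero>\<^bsub>Y\<^esub>"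
proof -
  interpret Y: module R Y by (rule mY)
  show ?thesis unfolding phi_def by (simp add: fapp)
qed

lemma phi_fdelta: "b \<in> carrier Y \<Longrightarrow> p \<in> carrier (freemod R I) \<Longrightarrow> phi R Y (fdelta R (b, p)) j = p j \<odot>\<^bsub>Y\<^esub> b"
proof -
  assume b: "b \<in> carrier Y" and p: "p \<in> carrier (freemod R I)"
  interpret Y: module R Y by (rule mY)
  have "phi R Y (fdelta R (b, p)) j = finsum Y (\<lambda>q. (fdelta R (b, p) q \<otimes> snd q j) \<odot>\<^bsub>Y\<^esub> fst q) {(b, p)}"
    using b p by (intro phi_alt) (auto simp: fdelta_app)
  then show ?thesis using b p freemod_FV[OF p] by (simp add: fdelta_app)
qed

lemma phi_fneg: "x \<in> tfree R Y (freemod R I) \<Longrightarrow> phi R Y (fneg R x) j = \<ominus>\<^bsub>Y\<^esub> phi R Y x j"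
proof -
  assume x: "x \<in> tfree R Y (freemod R I)"
  interpret Y: module R Y by (rule mY)
  have "phi R Y (fneg R x) j = (\<ominus> \<one>) \<odot>\<^bsub>Y\<^esub> phi R Y x j"
    using x by (simp add: fneg_smult phi_fsmult)
  also have "\<dots> = \<ominus>\<^bsub>Y\<^esub> phi R Y x j" using phi_closed[OF x] by (simp add: Y.smult_l_minus)
  finally show ?thesis .
qed

end
end


definition Usupp :: "'r ring \<Rightarrow> ('a \<times> ('i \<Rightarrow> 'r) \<Rightarrow> 'r) \<Rightarrow> 'i set" where
  "Usupp R y = (\<Union>q\<in>{q. y q \<noteq> \<zero>\<^bsub>R\<^esub>}. {i. snd q i \<noteq> \<zero>\<^bsub>R\<^esub>})"

context cr begin

context
  fixes Y :: "('r,'y) module" and I :: "'i set"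
  assumes mY: "module R Y"
begin

lemma phi_trel: "x \<in> trel R Y (freemod R I) \<Longrightarrow> phi R Y x j = \<zero>\<^bsub>Y\<^esub>"
proof -
  assume x: "x \<in> trel R Y (freemod R I)"
  interpret Y: module R Y by (rule mY)
  note mP = freemod_module[of I]
  let ?N = "{x \<in> tfree R Y (freemod R I). \<forall>j. phi R Y x j = \<zero>\<^bsub>Y\<^esub>}"
  have "trel R Y (freemod R I) \<subseteq> ?N"
  proof (rule trel_minimal)
    show "fzero R \<in> ?N" by (simp add: phi_fzero[OF mY])
  next
    fix x y assume "x \<in> ?N" "y \<in> ?N"
    then show "fadd R x y \<in> ?N" by (auto simp: phi_fadd[OF mY, where I=I])
  next
    fix r x assume "r \<in> carrier R" "x \<in> ?N"
    then show "fsmult R r x \<in> ?N" by (auto simp: phi_fsmult[OF mY, where I=I])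
  next
    show "tgens R Y (freemod R I) \<subseteq> ?N"
    proof
      fix x assume x: "x \<in> tgens R Y (freemod R I)"
      have xt: "x \<in> tfree R Y (freemod R I)" using x tgens_tfree[OF mY mP] by blast
      have "phi R Y x j = \<zero>\<^bsub>Y\<^esub>" for j
        using x unfolding tgens_def
      proof (elim UnE CollectE exE conjE)
        fix m m' a assume h: "x = fadd R (fdelta R (m \<oplus>\<^bsub>Y\<^esub> m', a)) (fneg R (fadd R (fdelta R (m, a)) (fdelta R (m', a))))"
          "m \<in> carrier Y" "m' \<in> carrier Y" "a \<in> carrier (freemod R I)"
        have "phi R Y x j = a j \<odot>\<^bsub>Y\<^esub> (m \<oplus>\<^bsub>Y\<^esub> m') \<oplus>\<^bsub>Y\<^esub> \<ominus>\<^bsub>Y\<^esub> (a j \<odot>\<^bsub>Y\<^esub> m \<oplus>\<^bsub>Y\<^esub> a j \<odot>\<^bsub>Y\<^esub> m')"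
          using h by (simp add: phi_fadd[OF mY, where I=I] phi_fneg[OF mY, where I=I] phi_fdelta[OF mY, where I=I])
        then show ?thesis using h by (simp add: Y.smult_r_distr Y.r_neg)
      next
        fix m a a' assume h: "x = fadd R (fdelta R (m, a \<oplus>\<^bsub>freemod R I\<^esub> a')) (fneg R (fadd R (fdelta R (m, a)) (fdelta R (m, a'))))"
          "m \<in> carrier Y" "a \<in> carrier (freemod R I)" "a' \<in> carrier (freemod R I)"
        have aa: "fadd R a a' \<in> carrier (freemod R I)" using h freemod_fadd by blast
        have "phi R Y x j = (a j \<oplus> a' j) \<odot>\<^bsub>Y\<^esub> m \<oplus>\<^bsub>Y\<^esub> \<ominus>\<^bsub>Y\<^esub> (a j \<odot>\<^bsub>Y\<^esub> m \<oplus>\<^bsub>Y\<^esub> a' j \<odot>\<^bsub>Y\<^esub> m)"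
          using h aa by (simp add: phi_fadd[OF mY, where I=I] phi_fneg[OF mY, where I=I] phi_fdelta[OF mY, where I=I] fapp)
        then show ?thesis using h by (simp add: Y.smult_l_distr Y.r_neg)
      next
        fix r m a assume h: "x = fadd R (fdelta R (r \<odot>\<^bsub>Y\<^esub> m, a)) (fneg R (fsmult R r (fdelta R (m, a))))"
          "r \<in> carrier R" "m \<in> carrier Y" "a \<in> carrier (freemod R I)"
        have "phi R Y x j = a j \<odot>\<^bsub>Y\<^esub> (r \<odot>\<^bsub>Y\<^esub> m) \<oplus>\<^bsub>Y\<^esub> \<ominus>\<^bsub>Y\<^esub> (r \<odot>\<^bsub>Y\<^esub> (a j \<odot>\<^bsub>Y\<^esub> m))"
          using h by (simp add: phi_fadd[OF mY, where I=I] phi_fneg[OF mY, where I=I] phi_fdelta[OF mY, where I=I] phi_fsmult[OF mY, where I=I])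
        moreover have "a j \<odot>\<^bsub>Y\<^esub> (r \<odot>\<^bsub>Y\<^esub> m) = r \<odot>\<^bsub>Y\<^esub> (a j \<odot>\<^bsub>Y\<^esub> m)"
          using h Y.smult_assoc1[of "a j" r m] Y.smult_assoc1[of r "a j" m] by (simp add: m_comm)
        ultimately show ?thesis using h by (simp add: Y.r_neg)
      next
        fix r m a assume h: "x = fadd R (fdelta R (m, r \<odot>\<^bsub>freemod R I\<^esub> a)) (fneg R (fsmult R r (fdelta R (m, a))))"
          "r \<in> carrier R" "m \<in> carrier Y" "a \<in> carrier (freemod R I)"
        have aa: "fsmult R r a \<in> carrier (freemod R I)" using h freemod_fsmult by blast
        have "phi R Y x j = (r \<otimes> a j) \<odot>\<^bsub>Y\<^esub> m \<oplus>\<^bsub>Y\<^esub> \<ominus>\<^bsub>Y\<^esub> (r \<odot>\<^bsub>Y\<^esub> (a j \<odot>\<^bsub>Y\<^esub> m))"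
          using h aa by (simp add: phi_fadd[OF mY, where I=I] phi_fneg[OF mY, where I=I] phi_fdelta[OF mY, where I=I] phi_fsmult[OF mY, where I=I] fapp)
        then show ?thesis using h by (simp add: Y.smult_assoc1 Y.r_neg)
      qed
      then show "x \<in> ?N" using xt by blast
    qed
  qed blast
  then show ?thesis using x by blast
qed

end

lemma phi_push:
  fixes A :: "('r,'a) module" and B :: "('r,'b) module" and I :: "'i set" and j :: 'i
  assumes mA: "module R A" and mB: "module R B" and hf: "mod_hom R A B f" and y: "y \<in> tfree R A (freemod R I)"
  shows "phi R B (tpush R A (freemod R I) B (freemod R I) f id y) j = f (phi R A y j)"
  using y
proof (induction rule: tfree_induct)
  case zero
  have z1: "phi R B (fzero R :: 'b \<times> ('i \<Rightarrow> 'r) \<Rightarrow> 'r) j = \<zero>\<^bsub>B\<^esub>" by (rule phi_fzero[OF mB])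
  have z2: "phi R A (fzero R :: 'a \<times> ('i \<Rightarrow> 'r) \<Rightarrow> 'r) j = \<zero>\<^bsub>A\<^esub>" by (rule phi_fzero[OF mA])
  show ?case unfolding tpush_fzero z1 z2 using mh_zero[OF mA mB hf] by simp
next
  case (step y0 r p)
  obtain a q where p: "p = (a, q)" by (cases p)
  have aq: "a \<in> carrier A" "q \<in> carrier (freemod R I)" using step p by auto
  have t: "tpush R A (freemod R I) B (freemod R I) f id y0 \<in> tfree R B (freemod R I)"
    using step by (intro tpush_tfree) auto
  have fa: "f a \<in> carrier B" using mh_closed[OF hf aq(1)] .
  have "tpush R A (freemod R I) B (freemod R I) f id (fadd R y0 (fsmult R r (fdelta R p))) =
    fadd R (tpush R A (freemod R I) B (freemod R I) f id y0) (fsmult R r (fdelta R (f a, q)))"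
    unfolding p using step aq fa by (subst tpush_step') auto
  then have "phi R B (tpush R A (freemod R I) B (freemod R I) f id (fadd R y0 (fsmult R r (fdelta R p)))) j
     = phi R B (tpush R A (freemod R I) B (freemod R I) f id y0) j \<oplus>\<^bsub>B\<^esub> r \<odot>\<^bsub>B\<^esub> (q j \<odot>\<^bsub>B\<^esub> f a)"
    using step.hyps t aq fa by (simp add: phi_fadd[OF mB, where I=I] phi_fsmult[OF mB, where I=I] phi_fdelta[OF mB, where I=I])
  also have "\<dots> = f (phi R A y0 j) \<oplus>\<^bsub>B\<^esub> r \<odot>\<^bsub>B\<^esub> (q j \<odot>\<^bsub>B\<^esub> f a)"
    by (simp only: step.IH)
  also have "\<dots> = f (phi R A y0 j \<oplus>\<^bsub>A\<^esub> r \<odot>\<^bsub>A\<^esub> (q j \<odot>\<^bsub>A\<^esub> a))"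
    using step.hyps aq phi_closed[OF mA, where I=I] mh_add[OF hf] mh_smult[OF hf] mA by simp
  also have "\<dots> = f (phi R A (fadd R y0 (fsmult R r (fdelta R p))) j)"
    unfolding p using step.hyps aq by (simp add: phi_fadd[OF mA, where I=I] phi_fsmult[OF mA, where I=I] phi_fdelta[OF mA, where I=I])
  finally show ?case .
qed

end

context cr begin

context
  fixes A :: "('r,'a) module" and I :: "'i set"
  assumes mA: "module R A"
begin

lemma mP: "module R (freemod R I)" by (rule freemod_module)

lemma radd_sum: "finite J \<Longrightarrow> a \<in> carrier A \<Longrightarrow> h ` J \<subseteq> carrier (freemod R I) \<Longrightarrow>
  teq A (freemod R I) (fsumf R (\<lambda>i. fdelta R (a, h i)) J) (fdelta R (a, finsum (freemod R I) h J))"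
proof (induction J rule: finite_induct)
  case empty
  interpret P: module R "freemod R I" by (rule mP)
  have "fdelta R (a, \<zero>\<^bsub>freemod R I\<^esub>) \<in> trel R A (freemod R I)" using tb_rzero[OF mA mP empty.prems(1)] .
  then have "teq A (freemod R I) (fdelta R (a, \<zero>\<^bsub>freemod R I\<^esub>)) (fzero R)" using teq_zero_iff[OF mA mP] by simp
  then have "teq A (freemod R I) (fzero R) (fdelta R (a, \<zero>\<^bsub>freemod R I\<^esub>))" using teq_sym[OF mA mP] by simp
  then show ?case by (simp add: fsumf_empty del: freemod_simps)
next
  case (insert i J)
  interpret P: module R "freemod R I" by (rule mP)
  have hi: "h i \<in> carrier (freemod R I)" and hJ: "h ` J \<subseteq> carrier (freemod R I)" using insert.prems by auto
  have S: "finsum (freemod R I) h J \<in> carrier (freemod R I)" using hJ by (intro P.finsum_closed) auto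
  have e1: "finsum (freemod R I) h (insert i J) = h i \<oplus>\<^bsub>freemod R I\<^esub> finsum (freemod R I) h J"
    using insert hi hJ by (intro P.finsum_insert) auto
  have e2: "fsumf R (\<lambda>i. fdelta R (a, h i)) (insert i J) = fadd R (fdelta R (a, h i)) (fsumf R (\<lambda>i. fdelta R (a, h i)) J)"
    using insert by (intro fsumf_insert) auto
  have IH: "teq A (freemod R I) (fsumf R (\<lambda>i. fdelta R (a, h i)) J) (fdelta R (a, finsum (freemod R I) h J))"
    using insert hJ by simp
  have t1: "teq A (freemod R I) (fadd R (fdelta R (a, h i)) (fsumf R (\<lambda>i. fdelta R (a, h i)) J))
       (fadd R (fdelta R (a, h i)) (fdelta R (a, finsum (freemod R I) h J)))"
    using teq_add[OF mA mP _ _ _ _ teq_refl[OF mA mP] IH] by (simp add: fsumf_FV)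
  have t2: "teq A (freemod R I) (fdelta R (a, h i \<oplus>\<^bsub>freemod R I\<^esub> finsum (freemod R I) h J))
      (fadd R (fdelta R (a, h i)) (fdelta R (a, finsum (freemod R I) h J)))"
    using tb_radd[OF mA mP insert.prems(1) hi S] .
  show ?case unfolding e1 e2
    using teq_trans[OF mA mP _ _ _ t1 teq_sym[OF mA mP _ _ t2]] by (simp add: fsumf_FV del: freemod_simps)
qed

lemma Psi_delta:
  assumes a: "a \<in> carrier A" and p: "p \<in> carrier (freemod R I)" and J: "finite J" "J \<subseteq> I" "{i. p i \<noteq> \<zero>} \<subseteq> J"
  shows "teq A (freemod R I) (fsumf R (\<lambda>i. fdelta R (p i \<odot>\<^bsub>A\<^esub> a, fdelta R i)) J) (fdelta R (a, p))"
proof -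
  have ei: "fdelta R i \<in> carrier (freemod R I)" if "i \<in> J" for i by (rule freemod_fdelta) (use that J(2) in blast)
  have pi: "p i \<in> carrier R" for i using p by simp
  have step: "teq A (freemod R I) (fdelta R (p i \<odot>\<^bsub>A\<^esub> a, fdelta R i)) (fdelta R (a, fsmult R (p i) (fdelta R i)))"
    if "i \<in> J" for i
  proof -
    have t1: "teq A (freemod R I) (fdelta R (p i \<odot>\<^bsub>A\<^esub> a, fdelta R i)) (fsmult R (p i) (fdelta R (a, fdelta R i)))"
      using tb_lsmult[OF mA mP pi a ei[OF that]] .
    have t2: "teq A (freemod R I) (fdelta R (a, p i \<odot>\<^bsub>freemod R I\<^esub> fdelta R i)) (fsmult R (p i) (fdelta R (a, fdelta R i)))"
      using tb_rsmult[OF mA mP pi a ei[OF that]] .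
    show ?thesis using teq_trans[OF mA mP _ _ _ t1 teq_sym[OF mA mP _ _ t2]] by (simp add: pi)
  qed
  have h1: "teq A (freemod R I) (fsumf R (\<lambda>i. fdelta R (p i \<odot>\<^bsub>A\<^esub> a, fdelta R i)) J)
      (fsumf R (\<lambda>i. fdelta R (a, fsmult R (p i) (fdelta R i))) J)"
  proof (rule fsumf_teq[OF mA mP J(1)])
    fix k assume k: "k \<in> J"
    show "fdelta R (p k \<odot>\<^bsub>A\<^esub> a, fdelta R k) \<in> tfree R A (freemod R I)" using k ei a mA pi by simp
    show "fdelta R (a, fsmult R (p k) (fdelta R k)) \<in> tfree R A (freemod R I)"
      using a freemod_fsmult[OF pi ei[OF k]] by simp
    show "teq A (freemod R I) (fdelta R (p k \<odot>\<^bsub>A\<^esub> a, fdelta R k)) (fdelta R (a, fsmult R (p k) (fdelta R k)))"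
      by (rule step[OF k])
  qed
  have h2: "teq A (freemod R I) (fsumf R (\<lambda>i. fdelta R (a, fsmult R (p i) (fdelta R i))) J)
      (fdelta R (a, finsum (freemod R I) (\<lambda>i. fsmult R (p i) (fdelta R i)) J))"
    using radd_sum[OF J(1) a, of "\<lambda>i. fsmult R (p i) (fdelta R i)"] freemod_fsmult[OF pi ei] by auto
  have e: "finsum (freemod R I) (\<lambda>i. fsmult R (p i) (fdelta R i)) J = p" by (rule freemod_expand[OF p J])
  show ?thesis using teq_trans[OF mA mP _ _ _ h1 h2] unfolding e by (simp add: fsumf_FV)
qed


lemma Usupp_fin: "y \<in> tfree R A (freemod R I) \<Longrightarrow> finite (Usupp R y) \<and> Usupp R y \<subseteq> I"
proof -
  assume y: "y \<in> tfree R A (freemod R I)"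
  have sq: "snd q \<in> carrier (freemod R I)" if "y q \<noteq> \<zero>" for q using tfree_supp[OF y] that by auto
  have "finite {i. snd q i \<noteq> \<zero>}" if "q \<in> {q. y q \<noteq> \<zero>}" for q using freemod_fin[OF sq] that by simp
  then have f: "finite (Usupp R y)" unfolding Usupp_def using tfree_fin[OF y] by blast
  have "Usupp R y \<subseteq> I"
  proof
    fix i assume "i \<in> Usupp R y"
    then obtain q where q: "y q \<noteq> \<zero>" "snd q i \<noteq> \<zero>" unfolding Usupp_def by blast
    show "i \<in> I"
    proof (rule ccontr)
      assume "i \<notin> I"
      then have "snd q i = \<zero>" using freemod_out[OF sq[OF q(1)]] by simp
      then show False using q by simp
    qed
  qed
  then show ?thesis using f by simp
qed

lemma Usupp_mono: "{q. y q \<noteq> \<zero>} \<subseteq> {q. y' q \<noteq> \<zero>} \<Longrightarrow> Usupp R y \<subseteq> Usupp R y'"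
  unfolding Usupp_def by blast

lemma nf:
  assumes J: "finite J" "J \<subseteq> I" and y: "y \<in> tfree R A (freemod R I)"
  shows "Usupp R y \<subseteq> J \<longrightarrow> teq A (freemod R I) y (fsumf R (\<lambda>i. fdelta R (phi R A y i, fdelta R i)) J)"
  using y
proof (induction rule: tfree_induct)
  case zero
  have z0: "phi R A (fzero R :: 'a \<times> ('i \<Rightarrow> 'r) \<Rightarrow> 'r) k = \<zero>\<^bsub>A\<^esub>" for k by (rule phi_fzero[OF mA])
  have "fsumf R (\<lambda>i. fdelta R (phi R A (fzero R) i, fdelta R i)) J \<in> trel R A (freemod R I)"
    unfolding z0 using J by (intro fsumf_trel[OF mA mP J(1)]) (auto intro!: tb_lzero[OF mA mP] freemod_fdelta)
  then have "teq A (freemod R I) (fsumf R (\<lambda>i. fdelta R (phi R A (fzero R) i, fdelta R i)) J) (fzero R)"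
    using teq_zero_iff[OF mA mP] by (simp add: fsumf_FV)
  then show ?case using teq_sym[OF mA mP] by (simp add: fsumf_FV)
next
  case (step y0 r p)
  obtain a q where p: "p = (a, q)" by (cases p)
  have aq: "a \<in> carrier A" "q \<in> carrier (freemod R I)" using step p by auto
  let ?y = "fadd R y0 (fsmult R r (fdelta R p))"
  let ?E = "\<lambda>v. fsumf R (\<lambda>i. fdelta R (v i, fdelta R i)) J"
  have ei: "fdelta R i \<in> carrier (freemod R I)" if "i \<in> J" for i by (rule freemod_fdelta) (use that J(2) in blast)
  show ?case
  proof
    assume U: "Usupp R ?y \<subseteq> J"
    show "teq A (freemod R I) ?y (?E (phi R A ?y))"
    proof (cases "r = \<zero>")
      case True
      then have "?y = y0" using step by simp
      then show ?thesis using step.IH U by simp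
    next
      case False
      have sub: "{x. y0 x \<noteq> \<zero>} \<subseteq> {x. ?y x \<noteq> \<zero>}"
      proof
        fix x assume x: "x \<in> {x. y0 x \<noteq> \<zero>}"
        then have "x \<noteq> p" using step by auto
        then show "x \<in> {x. ?y x \<noteq> \<zero>}" using x step by (simp add: fapp fdelta_app)
      qed
      have U0: "Usupp R y0 \<subseteq> J" using Usupp_mono[OF sub] U by blast
      have IH: "teq A (freemod R I) y0 (?E (phi R A y0))" using step.IH U0 by simp
      have yp: "?y p \<noteq> \<zero>" using step False by (simp add: fapp fdelta_app)
      have "{i. snd p i \<noteq> \<zero>} \<subseteq> Usupp R ?y" unfolding Usupp_def using yp by blast
      then have qJ: "{i. q i \<noteq> \<zero>} \<subseteq> J" using U p by simp
      have phiy: "phi R A ?y i = phi R A y0 i \<oplus>\<^bsub>A\<^esub> r \<odot>\<^bsub>A\<^esub> (q i \<odot>\<^bsub>A\<^esub> a)" for i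
        unfolding p using step aq by (simp add: phi_fadd[OF mA, where I=I] phi_fsmult[OF mA, where I=I] phi_fdelta[OF mA, where I=I])
      have pc: "phi R A y0 i \<in> carrier A" for i using phi_closed[OF mA, where I=I] step by simp
      have rc: "r \<odot>\<^bsub>A\<^esub> (q i \<odot>\<^bsub>A\<^esub> a) \<in> carrier A" "q i \<odot>\<^bsub>A\<^esub> a \<in> carrier A" for i
        using step aq mA by auto
      have T1: "teq A (freemod R I) (?E (phi R A ?y))
          (fsumf R (\<lambda>i. fadd R (fdelta R (phi R A y0 i, fdelta R i)) (fdelta R (r \<odot>\<^bsub>A\<^esub> (q i \<odot>\<^bsub>A\<^esub> a), fdelta R i))) J)"
        unfolding phiy
        by (rule fsumf_teq[OF mA mP J(1)]) (use ei pc rc mA in \<open>auto intro: tb_ladd[OF mA mP]\<close>)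
      have E2: "fsumf R (\<lambda>i. fadd R (fdelta R (phi R A y0 i, fdelta R i)) (fdelta R (r \<odot>\<^bsub>A\<^esub> (q i \<odot>\<^bsub>A\<^esub> a), fdelta R i))) J
         = fadd R (?E (phi R A y0)) (fsumf R (\<lambda>i. fdelta R (r \<odot>\<^bsub>A\<^esub> (q i \<odot>\<^bsub>A\<^esub> a), fdelta R i)) J)"
        using J(1) by (intro fsumf_fadd) auto
      have T3: "teq A (freemod R I) (fsumf R (\<lambda>i. fdelta R (r \<odot>\<^bsub>A\<^esub> (q i \<odot>\<^bsub>A\<^esub> a), fdelta R i)) J)
          (fsumf R (\<lambda>i. fsmult R r (fdelta R (q i \<odot>\<^bsub>A\<^esub> a, fdelta R i))) J)"
        by (rule fsumf_teq[OF mA mP J(1)]) (use ei rc step in \<open>auto intro: tb_lsmult[OF mA mP]\<close>)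
      have E4: "fsumf R (\<lambda>i. fsmult R r (fdelta R (q i \<odot>\<^bsub>A\<^esub> a, fdelta R i))) J
          = fsmult R r (fsumf R (\<lambda>i. fdelta R (q i \<odot>\<^bsub>A\<^esub> a, fdelta R i)) J)"
        using J(1) step by (intro fsumf_fsmult) auto
      have T5: "teq A (freemod R I) (fsmult R r (fsumf R (\<lambda>i. fdelta R (q i \<odot>\<^bsub>A\<^esub> a, fdelta R i)) J))
          (fsmult R r (fdelta R (a, q)))"
        using teq_smult[OF mA mP _ _ _ Psi_delta[OF aq J(1,2) qJ]] step by (simp add: fsumf_FV)
      have F: "?E (phi R A y0) \<in> FV" "?E (phi R A ?y) \<in> FV"
        "fsumf R (\<lambda>i. fdelta R (r \<odot>\<^bsub>A\<^esub> (q i \<odot>\<^bsub>A\<^esub> a), fdelta R i)) J \<in> FV"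
        "fsumf R (\<lambda>i. fdelta R (q i \<odot>\<^bsub>A\<^esub> a, fdelta R i)) J \<in> FV"
        by (simp_all add: fsumf_FV)
      have T35: "teq A (freemod R I) (fsumf R (\<lambda>i. fdelta R (r \<odot>\<^bsub>A\<^esub> (q i \<odot>\<^bsub>A\<^esub> a), fdelta R i)) J)
          (fsmult R r (fdelta R (a, q)))"
        using teq_trans[OF mA mP _ _ _ T3[unfolded E4] T5] F step by simp
      have T6: "teq A (freemod R I) (?E (phi R A ?y)) (fadd R (?E (phi R A y0)) (fsmult R r (fdelta R (a, q))))"
        using teq_trans[OF mA mP _ _ _ T1[unfolded E2]
            teq_add[OF mA mP _ _ _ _ teq_refl[OF mA mP F(1)] T35]] F step by simp
      have T7: "teq A (freemod R I) ?y (fadd R (?E (phi R A y0)) (fsmult R r (fdelta R (a, q))))"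
        unfolding p using teq_add[OF mA mP _ _ _ _ IH teq_refl[OF mA mP, of "fsmult R r (fdelta R (a, q))"]] F step
        by simp
      show ?thesis using teq_trans[OF mA mP _ _ _ T7 teq_sym[OF mA mP _ _ T6]] F step by simp
    qed
  qed
qed

lemma free_left:
  assumes mB: "module R B" and hf: "mod_hom R A B f" and sR: "s \<in> carrier R"
    and tor: "\<And>a. a \<in> carrier A \<Longrightarrow> f a = \<zero>\<^bsub>B\<^esub> \<Longrightarrow> s \<odot>\<^bsub>A\<^esub> a = \<zero>\<^bsub>A\<^esub>"
    and y: "y \<in> tfree R A (freemod R I)"
    and k: "tpush R A (freemod R I) B (freemod R I) f id y \<in> trel R B (freemod R I)"
  shows "fsmult R s y \<in> trel R A (freemod R I)"
proof -
  let ?J = "Usupp R y"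
  have J: "finite ?J" "?J \<subseteq> I" using Usupp_fin[OF y] by auto
  have z: "s \<odot>\<^bsub>A\<^esub> phi R A y i = \<zero>\<^bsub>A\<^esub>" for i
  proof -
    have "phi R B (tpush R A (freemod R I) B (freemod R I) f id y) i = \<zero>\<^bsub>B\<^esub>"
      by (rule phi_trel[OF mB k])
    then have "f (phi R A y i) = \<zero>\<^bsub>B\<^esub>" using phi_push[OF mA mB hf y] by simp
    then show ?thesis using tor phi_closed[OF mA y] by simp
  qed
  have sy: "fsmult R s y \<in> tfree R A (freemod R I)" using sR y by simp
  have sub: "{q. fsmult R s y q \<noteq> \<zero>} \<subseteq> {q. y q \<noteq> \<zero>}" using sR y by (auto simp: fapp)
  have U: "Usupp R (fsmult R s y) \<subseteq> ?J" by (rule Usupp_mono[OF sub])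
  have t: "teq A (freemod R I) (fsmult R s y) (fsumf R (\<lambda>i. fdelta R (phi R A (fsmult R s y) i, fdelta R i)) ?J)"
    using nf[OF J sy] U by simp
  have e: "phi R A (fsmult R s y) i = \<zero>\<^bsub>A\<^esub>" for i using phi_fsmult[OF mA sR y] z by simp
  have "fsumf R (\<lambda>i. fdelta R (phi R A (fsmult R s y) i, fdelta R i)) ?J \<in> trel R A (freemod R I)"
    unfolding e using J by (intro fsumf_trel[OF mA mP J(1)]) (auto intro!: tb_lzero[OF mA mP] freemod_fdelta)
  then show ?thesis using teq_rel[OF mA mP _ _ t] sy by (simp add: fsumf_FV)
qed

end
end

context cr begin

lemma idfun: "id \<in> carrier M \<rightarrow> carrier M" by simp

lemma tpush_commute:
  assumes x: "x \<in> tfree R M1 X1" and f: "f \<in> carrier M1 \<rightarrow> carrier M2" and g: "g \<in> carrier X1 \<rightarrow> carrier X2"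
  shows "tpush R M2 X1 M2 X2 id g (tpush R M1 X1 M2 X1 f id x) = tpush R M1 X2 M2 X2 f id (tpush R M1 X1 M1 X2 id g x)"
proof -
  have "tpush R M2 X1 M2 X2 id g (tpush R M1 X1 M2 X1 f id x) = tpush R M1 X1 M2 X2 (\<lambda>m. id (f m)) (\<lambda>a. g (id a)) x"
    using x f g by (intro tpush_comp) auto
  also have "\<dots> = tpush R M1 X1 M2 X2 (\<lambda>m. f (id m)) (\<lambda>a. id (g a)) x" by simp
  also have "\<dots> = tpush R M1 X2 M2 X2 f id (tpush R M1 X1 M1 X2 id g x)"
    using x f g by (intro tpush_comp[symmetric]) auto
  finally show ?thesis .
qed

lemma tpush_zero_map:
  assumes mM2: "module R M2" and mX2: "module R X2" and x: "x \<in> tfree R M1 X1"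
    and f: "\<And>m. m \<in> carrier M1 \<Longrightarrow> f m = \<zero>\<^bsub>M2\<^esub>" and g: "g \<in> carrier X1 \<rightarrow> carrier X2"
  shows "tpush R M1 X1 M2 X2 f g x \<in> trel R M2 X2"
  using x
proof (induction rule: tfree_induct)
  case zero
  then show ?case by (simp add: tpush_fzero)
next
  case (step y r p)
  obtain m a where p: "p = (m, a)" by (cases p)
  have ma: "m \<in> carrier M1" "a \<in> carrier X1" using step p by auto
  have ga: "g a \<in> carrier X2" using g ma by auto
  have "tpush R M1 X1 M2 X2 f g (fadd R y (fsmult R r (fdelta R p))) =
     fadd R (tpush R M1 X1 M2 X2 f g y) (fsmult R r (fdelta R (f m, g a)))"
    unfolding p using step ma ga f mM2 by (intro tpush_step') auto
  moreover have "fdelta R (f m, g a) \<in> trel R M2 X2" using f[OF ma(1)] tb_lzero[OF mM2 mX2 ga] by simp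
  ultimately show ?case using step by simp
qed

context
  fixes M :: "('r,'m) module" and A :: "('r,'a) module" and B :: "('r,'b) module" and C :: "('r,'c) module"
    and f g s
  assumes mM: "module R M" and mA: "module R A" and mB: "module R B" and mC: "module R C"
    and hf: "mod_hom R A B f" and hg: "mod_hom R B C g" and sR: "s \<in> carrier R"
    and e2: "\<And>b. b \<in> carrier B \<Longrightarrow> g b = \<zero>\<^bsub>C\<^esub> \<Longrightarrow> s \<odot>\<^bsub>B\<^esub> b \<in> f ` carrier A"
    and e3: "\<And>a. a \<in> carrier A \<Longrightarrow> g (s \<odot>\<^bsub>B\<^esub> f a) = \<zero>\<^bsub>C\<^esub>"
    and e4: "\<And>c. c \<in> carrier C \<Longrightarrow> s \<odot>\<^bsub>C\<^esub> c \<in> g ` carrier B"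
begin

lemma fF: "f \<in> carrier A \<rightarrow> carrier B" by (rule mh_funcset[OF hf])
lemma gF: "g \<in> carrier B \<rightarrow> carrier C" by (rule mh_funcset[OF hg])

lemma RF4: "w \<in> tfree R M C \<Longrightarrow> \<exists>y\<in>tfree R M B. teq M C (fsmult R s w) (tpush R M B M C id g y)"
proof -
  assume w: "w \<in> tfree R M C"
  obtain y' where y': "y' \<in> tfree R B M" "teq C M (fsmult R s (fsw w)) (tpush R B M C M g id y')"
    using rx_F4[OF mA mB mC mM hf hg sR e2 e3 e4 fsw_tfree[OF w]] by blast
  have e: "fsw (tpush R M B M C id g (fsw y')) = tpush R B M C M g id y'"
    using fsw_tpush[OF fsw_tfree[OF y'(1)] idfun gF] by simp
  have "teq C M (fsw (fsmult R s w)) (fsw (tpush R M B M C id g (fsw y')))"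
    using y'(2) e by (simp add: fsw_fsmult)
  then have "teq M C (fsmult R s w) (tpush R M B M C id g (fsw y'))" using fsw_teq_iff[OF mM mC] by blast
  then show ?thesis using fsw_tfree[OF y'(1)] by blast
qed

lemma RF3: "z \<in> tfree R M A \<Longrightarrow> tpush R M B M C id g (fsmult R s (tpush R M A M B id f z)) \<in> trel R M C"
proof -
  assume z: "z \<in> tfree R M A"
  have t1: "tpush R M A M B id f z \<in> tfree R M B" by (rule tpush_tfree[OF z])
  have "fsw (tpush R M B M C id g (fsmult R s (tpush R M A M B id f z))) =
     tpush R B M C M g id (fsmult R s (tpush R A M B M f id (fsw z)))"
    using fsw_tpush[OF fsmult_tfree[OF sR t1] idfun gF] fsw_tpush[OF z idfun fF] by (simp add: fsw_fsmult)
  moreover have "tpush R B M C M g id (fsmult R s (tpush R A M B M f id (fsw z))) \<in> trel R C M"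
    by (rule rx_F3[OF mA mB mC mM hf hg sR e2 e3 e4 fsw_tfree[OF z]])
  ultimately show ?thesis using fsw_trel_iff[OF mM mC] by metis
qed

lemma RF2: "y \<in> tfree R M B \<Longrightarrow> tpush R M B M C id g y \<in> trel R M C \<Longrightarrow>
  \<exists>z\<in>tfree R M A. teq M B (fsmult R (s \<otimes> s) y) (tpush R M A M B id f z)"
proof -
  assume y: "y \<in> tfree R M B" and k: "tpush R M B M C id g y \<in> trel R M C"
  have "fsw (tpush R M B M C id g y) = tpush R B M C M g id (fsw y)" using fsw_tpush[OF y idfun gF] .
  then have k': "tpush R B M C M g id (fsw y) \<in> trel R C M" using k fsw_trel[OF mM mC] by metis
  obtain z' where z': "z' \<in> tfree R A M" "teq B M (fsmult R (s \<otimes> s) (fsw y)) (tpush R A M B M f id z')"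
    using rx_F2[OF mA mB mC mM hf hg sR e2 e3 e4 fsw_tfree[OF y] k'] by blast
  have e: "fsw (tpush R M A M B id f (fsw z')) = tpush R A M B M f id z'"
    using fsw_tpush[OF fsw_tfree[OF z'(1)] idfun fF] by simp
  have "teq B M (fsw (fsmult R (s \<otimes> s) y)) (fsw (tpush R M A M B id f (fsw z')))"
    using z'(2) e by (simp add: fsw_fsmult)
  then have "teq M B (fsmult R (s \<otimes> s) y) (tpush R M A M B id f (fsw z'))" using fsw_teq_iff[OF mM mB] by blast
  then show ?thesis using fsw_tfree[OF z'(1)] by blast
qed

end

lemma Rfree:
  assumes mA: "module R A" and mB: "module R B" and hf: "mod_hom R A B f" and sR: "s \<in> carrier R"
    and tor: "\<And>a. a \<in> carrier A \<Longrightarrow> f a = \<zero>\<^bsub>B\<^esub> \<Longrightarrow> s \<odot>\<^bsub>A\<^esub> a = \<zero>\<^bsub>A\<^esub>"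
    and y: "y \<in> tfree R (freemod R I) A"
    and k: "tpush R (freemod R I) A (freemod R I) B id f y \<in> trel R (freemod R I) B"
  shows "fsmult R s y \<in> trel R (freemod R I) A"
proof -
  note mP = freemod_module[of I]
  have "fsw (tpush R (freemod R I) A (freemod R I) B id f y) = tpush R A (freemod R I) B (freemod R I) f id (fsw y)"
    using fsw_tpush[OF y idfun mh_funcset[OF hf]] .
  then have k': "tpush R A (freemod R I) B (freemod R I) f id (fsw y) \<in> trel R B (freemod R I)"
    using k fsw_trel[OF mP mB] by metis
  have "fsmult R s (fsw y) \<in> trel R A (freemod R I)"
    by (rule free_left[OF mA mB hf sR tor fsw_tfree[OF y] k'])
  then have "fsw (fsmult R s y) \<in> trel R A (freemod R I)" by (simp add: fsw_fsmult)
  then show ?thesis using fsw_trel_iff[OF mP mA] by blast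
qed

end

context cr begin

lemma fsmult_fneg: "r \<in> carrier R \<Longrightarrow> x \<in> FV \<Longrightarrow> fsmult R r (fneg R x) = fneg R (fsmult R r x)"
  by (rule ext) (simp add: fapp r_minus)

lemma se_conds:
  assumes mA: "module R A" and mB: "module R B" and mC: "module R C"
    and hf: "mod_hom R A B f" and hg: "mod_hom R B C g" and se: "short_exact A B C f g"
  shows "\<And>a. a \<in> carrier A \<Longrightarrow> f a = \<zero>\<^bsub>B\<^esub> \<Longrightarrow> \<one> \<odot>\<^bsub>A\<^esub> a = \<zero>\<^bsub>A\<^esub>"
    and "\<And>b. b \<in> carrier B \<Longrightarrow> g b = \<zero>\<^bsub>C\<^esub> \<Longrightarrow> \<one> \<odot>\<^bsub>B\<^esub> b \<in> f ` carrier A"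
    and "\<And>a. a \<in> carrier A \<Longrightarrow> g (\<one> \<odot>\<^bsub>B\<^esub> f a) = \<zero>\<^bsub>C\<^esub>"
    and "\<And>c. c \<in> carrier C \<Longrightarrow> \<one> \<odot>\<^bsub>C\<^esub> c \<in> g ` carrier B"
proof -
  have k1: "{a \<in> carrier A. f a = \<zero>\<^bsub>B\<^esub>} = {\<zero>\<^bsub>A\<^esub>}" and k2: "{b \<in> carrier B. g b = \<zero>\<^bsub>C\<^esub>} = f ` carrier A"
    and k3: "g ` carrier B = carrier C" using se unfolding short_exact_def by auto
  show "\<And>a. a \<in> carrier A \<Longrightarrow> f a = \<zero>\<^bsub>B\<^esub> \<Longrightarrow> \<one> \<odot>\<^bsub>A\<^esub> a = \<zero>\<^bsub>A\<^esub>"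
    using k1 mA by (auto simp: module.smult_one)
  show "\<And>b. b \<in> carrier B \<Longrightarrow> g b = \<zero>\<^bsub>C\<^esub> \<Longrightarrow> \<one> \<odot>\<^bsub>B\<^esub> b \<in> f ` carrier A"
    using k2 mB by (auto simp: module.smult_one)
  show "\<And>a. a \<in> carrier A \<Longrightarrow> g (\<one> \<odot>\<^bsub>B\<^esub> f a) = \<zero>\<^bsub>C\<^esub>"
  proof -
    fix a assume a: "a \<in> carrier A"
    have "f a \<in> {b \<in> carrier B. g b = \<zero>\<^bsub>C\<^esub>}" using k2 a by blast
    then show "g (\<one> \<odot>\<^bsub>B\<^esub> f a) = \<zero>\<^bsub>C\<^esub>" using mB by (simp add: module.smult_one)
  qed
  show "\<And>c. c \<in> carrier C \<Longrightarrow> \<one> \<odot>\<^bsub>C\<^esub> c \<in> g ` carrier B"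
    using k3 mC by (auto simp: module.smult_one)
qed

lemma se_uSe:
  assumes mA: "module R A" and mB: "module R B" and mC: "module R C"
    and hf: "mod_hom R A B f" and hg: "mod_hom R B C g" and se: "short_exact A B C f g" and S: "\<one> \<in> S"
  shows "u_S_exact R S A B C f g"
  unfolding u_S_exact_def using se_conds[OF assms(1-6)] S by blast

lemma chase:
  fixes M :: "('r,'m) module" and A :: "('r,'a) module" and B :: "('r,'b) module" and C :: "('r,'c) module"
  assumes mM: "module R M" and mA: "module R A" and mB: "module R B" and mC: "module R C"
    and hf: "mod_hom R A B f" and hg: "mod_hom R B C g" and sR: "s \<in> carrier R" and tR: "t \<in> carrier R"
    and e1: "\<And>a. a \<in> carrier A \<Longrightarrow> f a = \<zero>\<^bsub>B\<^esub> \<Longrightarrow> s \<odot>\<^bsub>A\<^esub> a = \<zero>\<^bsub>A\<^esub>"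
    and e2: "\<And>b. b \<in> carrier B \<Longrightarrow> g b = \<zero>\<^bsub>C\<^esub> \<Longrightarrow> s \<odot>\<^bsub>B\<^esub> b \<in> f ` carrier A"
    and e3: "\<And>a. a \<in> carrier A \<Longrightarrow> g (s \<odot>\<^bsub>B\<^esub> f a) = \<zero>\<^bsub>C\<^esub>"
    and e4: "\<And>c. c \<in> carrier C \<Longrightarrow> s \<odot>\<^bsub>C\<^esub> c \<in> g ` carrier B"
    and flat1: "\<And>x. x \<in> tfree R (kmod R M) C \<Longrightarrow>
       tpush R (kmod R M) C (freemod R (carrier M)) C id id x \<in> trel R (freemod R (carrier M)) C \<Longrightarrow>
       fsmult R t x \<in> trel R (kmod R M) C"
    and x: "x \<in> tfree R M A" and k: "tpush R M A M B id f x \<in> trel R M B"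
  shows "fsmult R (s \<otimes> ((s \<otimes> s) \<otimes> (t \<otimes> s))) x \<in> trel R M A"
proof -
  let ?P = "freemod R (carrier M)" and ?K = "kmod R M" and ?pi = "fpi R M"
  have mP: "module R ?P" by (rule freemod_module)
  have mK: "module R ?K" by (rule kmod_module[OF mM])
  have hi: "mod_hom R ?K ?P id" by (rule kmod_hom[OF mM])
  have hp: "mod_hom R ?P M ?pi" by (rule fpi_hom[OF mM])
  note ex = se_conds[OF mK mP mM hi hp kmod_exact[OF mM]]
  have one: "\<one> \<in> carrier R" by simp
  have idM: "mod_hom R M M id" "mod_hom R A A id" "mod_hom R B B id" "mod_hom R C C id" "mod_hom R ?P ?P id"
    by (simp_all add: mh_id)
  have iKP: "id \<in> carrier ?K \<rightarrow> carrier ?P" using mh_funcset[OF hi] .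
  have piF: "?pi \<in> carrier ?P \<rightarrow> carrier M" using mh_funcset[OF hp] .
  have fF: "f \<in> carrier A \<rightarrow> carrier B" using mh_funcset[OF hf] .
  have gF: "g \<in> carrier B \<rightarrow> carrier C" using mh_funcset[OF hg] .
  have xF: "x \<in> FV" using x by simp
  obtain y where y: "y \<in> tfree R ?P A" and S1': "teq M A (fsmult R \<one> x) (tpush R ?P A M A ?pi id y)"
    using rx_F4[OF mK mP mM mA hi hp one ex(2) ex(3) ex(4) x] by blast
  let ?Py = "tpush R ?P A M A ?pi id y"
  have Pyt: "?Py \<in> tfree R M A" by (rule tpush_tfree[OF y])
  have S1: "teq M A x ?Py" using S1' xF by simp
  let ?fy = "tpush R ?P A ?P B id f y"
  have fyt: "?fy \<in> tfree R ?P B" by (rule tpush_tfree[OF y])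
  have c2: "tpush R M A M B id f ?Py = tpush R ?P B M B ?pi id ?fy"
    by (rule tpush_commute[OF y piF fF])
  have t2: "teq M B (tpush R M A M B id f x) (tpush R M A M B id f ?Py)"
    by (rule tpush_teq[OF mM mA mM mB idM(1) hf x Pyt S1])
  have S2: "tpush R ?P B M B ?pi id ?fy \<in> trel R M B"
    using teq_rel[OF mM mB _ _ teq_sym[OF mM mB _ _ t2] k] c2 x Pyt y by (simp add: tpush_FV)
  obtain z where z: "z \<in> tfree R ?K B" and S3': "teq ?P B (fsmult R (\<one> \<otimes> \<one>) ?fy) (tpush R ?K B ?P B id id z)"
    using rx_F2[OF mK mP mM mB hi hp one ex(2) ex(3) ex(4) fyt S2] by blast
  let ?iz = "tpush R ?K B ?P B id id z"
  have izt: "?iz \<in> tfree R ?P B" by (rule tpush_tfree[OF z])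
  have S3: "teq ?P B ?fy ?iz" using S3' fyt by simp
  let ?w1 = "tpush R ?K B ?K C id g z"
  have w1t: "?w1 \<in> tfree R ?K C" by (rule tpush_tfree[OF z])
  have c4: "tpush R ?P B ?P C id g ?iz = tpush R ?K C ?P C id id ?w1"
    by (rule tpush_commute[OF z iKP gF])
  have t4: "teq ?P C (tpush R ?P B ?P C id g ?iz) (tpush R ?P B ?P C id g ?fy)"
    by (rule tpush_teq[OF mP mB mP mC idM(5) hg izt fyt teq_sym[OF mP mB _ _ S3]]) (use izt fyt in simp_all)
  have r3: "tpush R ?P B ?P C id g (fsmult R s ?fy) \<in> trel R ?P C"
    by (rule RF3[OF mP mA mB mC hf hg sR e2 e3 e4 y])
  have gfyt: "tpush R ?P B ?P C id g ?fy \<in> tfree R ?P C" by (rule tpush_tfree[OF fyt])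
  have gizt: "tpush R ?P B ?P C id g ?iz \<in> tfree R ?P C" by (rule tpush_tfree[OF izt])
  have "fsmult R s (tpush R ?P B ?P C id g ?fy) \<in> trel R ?P C"
    using r3 fyt sR by (simp add: tpush_fsmult)
  then have "fsmult R s (tpush R ?P B ?P C id g ?iz) \<in> trel R ?P C"
    using teq_rel[OF mP mC _ _ teq_smult[OF mP mC sR _ _ t4]] gfyt gizt sR by simp
  then have S4: "tpush R ?K C ?P C id id (fsmult R s ?w1) \<in> trel R ?P C"
    using c4 w1t sR by (simp add: tpush_fsmult)
  have S5: "fsmult R t (fsmult R s ?w1) \<in> trel R ?K C" by (rule flat1[OF fsmult_tfree[OF sR w1t] S4])
  have e5: "fsmult R t (fsmult R s ?w1) = tpush R ?K B ?K C id g (fsmult R (t \<otimes> s) z)"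
    using z sR tR by (simp add: tpush_fsmult fsmult_assoc tpush_FV)
  have tsz: "fsmult R (t \<otimes> s) z \<in> tfree R ?K B" using z sR tR by simp
  obtain w where w: "w \<in> tfree R ?K A"
    and S6': "teq ?K B (fsmult R (s \<otimes> s) (fsmult R (t \<otimes> s) z)) (tpush R ?K A ?K B id f w)"
    using RF2[OF mK mA mB mC hf hg sR e2 e3 e4 tsz] S5 e5 by auto
  let ?c = "(s \<otimes> s) \<otimes> (t \<otimes> s)"
  have cR: "?c \<in> carrier R" using sR tR by simp
  have S6: "teq ?K B (fsmult R ?c z) (tpush R ?K A ?K B id f w)" using S6' z sR tR by (simp add: fsmult_assoc)
  let ?iw = "tpush R ?K A ?P A id id w"
  have iwt: "?iw \<in> tfree R ?P A" by (rule tpush_tfree[OF w])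
  let ?Y = "fadd R (fsmult R ?c y) (fneg R ?iw)"
  have Yt: "?Y \<in> tfree R ?P A" using y iwt cR by simp
  let ?u = "tpush R ?P A ?P B id f ?iw"
  have ut: "?u \<in> tfree R ?P B" by (rule tpush_tfree[OF iwt])
  have c7: "?u = tpush R ?K B ?P B id id (tpush R ?K A ?K B id f w)"
    by (rule tpush_commute[OF w iKP fF])
  have fwt: "tpush R ?K A ?K B id f w \<in> tfree R ?K B" by (rule tpush_tfree[OF w])
  have czt: "fsmult R ?c z \<in> tfree R ?K B" using z cR by simp
  have t7a: "teq ?P B ?u (tpush R ?K B ?P B id id (fsmult R ?c z))"
    unfolding c7 by (rule tpush_teq[OF mK mB mP mB hi idM(3) fwt czt teq_sym[OF mK mB _ _ S6]]) (use czt fwt in simp_all)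
  have e7: "tpush R ?K B ?P B id id (fsmult R ?c z) = fsmult R ?c ?iz" using z cR by (simp add: tpush_fsmult)
  have t7b: "teq ?P B (fsmult R ?c ?iz) (fsmult R ?c ?fy)"
    by (rule teq_smult[OF mP mB cR _ _ teq_sym[OF mP mB _ _ S3]]) (use izt fyt in simp_all)
  have t7: "teq ?P B ?u (fsmult R ?c ?fy)"
    using teq_trans[OF mP mB _ _ _ t7a[unfolded e7] t7b] ut fyt cR izt by simp
  have eY: "tpush R ?P A ?P B id f ?Y = fadd R (fsmult R ?c ?fy) (fneg R ?u)"
    using y iwt cR by (simp add: tpush_fadd tpush_fsmult tpush_fneg)
  have "teq ?P B (fadd R (fsmult R ?c ?fy) (fneg R ?u)) (fadd R (fsmult R ?c ?fy) (fneg R (fsmult R ?c ?fy)))"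
    by (rule teq_add[OF mP mB _ _ _ _ teq_refl[OF mP mB] teq_neg[OF mP mB _ _ t7]]) (use ut fyt cR in simp_all)
  then have S7: "tpush R ?P A ?P B id f ?Y \<in> trel R ?P B"
    unfolding eY using teq_rel[OF mP mB] ut fyt cR by (simp add: teq_zero_iff[OF mP mB])
  have S8: "fsmult R s ?Y \<in> trel R ?P A" by (rule Rfree[OF mA mB hf sR e1 Yt S7])
  have S9: "tpush R ?P A M A ?pi id (fsmult R s ?Y) \<in> trel R M A"
    by (rule tpush_trel[OF mP mA mM mA hp idM(2) S8])
  have piw: "tpush R ?P A M A ?pi id ?iw \<in> trel R M A"
  proof -
    have "tpush R ?P A M A ?pi id ?iw = tpush R ?K A M A (\<lambda>m. ?pi (id m)) (\<lambda>a. id (id a)) w"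
      by (rule tpush_comp[OF w iKP _ piF]) simp_all
    moreover have "tpush R ?K A M A (\<lambda>m. ?pi (id m)) (\<lambda>a. id (id a)) w \<in> trel R M A"
      by (rule tpush_zero_map[OF mM mA w]) (simp_all add: kmod_carrier[OF mM])
    ultimately show ?thesis by simp
  qed
  have e9: "tpush R ?P A M A ?pi id (fsmult R s ?Y) =
     fadd R (fsmult R (s \<otimes> ?c) ?Py) (fneg R (fsmult R s (tpush R ?P A M A ?pi id ?iw)))"
    using y iwt cR sR by (simp add: tpush_fadd tpush_fsmult tpush_fneg fsmult_fadd fsmult_assoc tpush_FV fsmult_fneg)
  have PyF: "?Py \<in> FV" using Pyt by simp
  have piwF: "tpush R ?P A M A ?pi id ?iw \<in> FV" using iwt by (simp add: tpush_FV)
  have "fsmult R (s \<otimes> ?c) ?Py = fadd R (tpush R ?P A M A ?pi id (fsmult R s ?Y)) (fsmult R s (tpush R ?P A M A ?pi id ?iw))"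
    unfolding e9 using PyF piwF cR sR by (simp add: fid_back)
  then have rel: "fsmult R (s \<otimes> ?c) ?Py \<in> trel R M A" using S9 piw sR by simp
  have "teq M A (fsmult R (s \<otimes> ?c) x) (fsmult R (s \<otimes> ?c) ?Py)"
    by (rule teq_smult[OF mM mA _ xF _ S1]) (use sR cR PyF in simp_all)
  note t9 = this
  show ?thesis using teq_rel[OF mM mA _ _ t9 rel] xF sR cR PyF by simp
qed

end

context cr begin

lemma finish:
  assumes m1: "module R M1" "module R X1" and m2: "module R M2" "module R X2" and m3: "module R M3" "module R X3"
    and h1: "mod_hom R M1 M2 f1" "mod_hom R X1 X2 g1" and h2: "mod_hom R M2 M3 f2" "mod_hom R X2 X3 g2"
    and sR: "s \<in> carrier R" and tR: "t \<in> carrier R" and s1S: "s \<otimes> ((s \<otimes> s) \<otimes> (t \<otimes> s)) \<in> S"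
    and c1: "\<And>x. x \<in> tfree R M1 X1 \<Longrightarrow> tpush R M1 X1 M2 X2 f1 g1 x \<in> trel R M2 X2 \<Longrightarrow>
        fsmult R (s \<otimes> ((s \<otimes> s) \<otimes> (t \<otimes> s))) x \<in> trel R M1 X1"
    and c2: "\<And>y. y \<in> tfree R M2 X2 \<Longrightarrow> tpush R M2 X2 M3 X3 f2 g2 y \<in> trel R M3 X3 \<Longrightarrow>
        \<exists>x\<in>tfree R M1 X1. teq M2 X2 (fsmult R (s \<otimes> s) y) (tpush R M1 X1 M2 X2 f1 g1 x)"
    and c3: "\<And>x. x \<in> tfree R M1 X1 \<Longrightarrow> tpush R M2 X2 M3 X3 f2 g2 (fsmult R s (tpush R M1 X1 M2 X2 f1 g1 x)) \<in> trel R M3 X3"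
    and c4: "\<And>z. z \<in> tfree R M3 X3 \<Longrightarrow> \<exists>y\<in>tfree R M2 X2. teq M3 X3 (fsmult R s z) (tpush R M2 X2 M3 X3 f2 g2 y)"
  shows "u_S_exact R S (tensor R M1 X1) (tensor R M2 X2) (tensor R M3 X3)
     (tensor_map R M1 X1 M2 X2 f1 g1) (tensor_map R M2 X2 M3 X3 f2 g2)"
proof -
  let ?s1 = "s \<otimes> ((s \<otimes> s) \<otimes> (t \<otimes> s))"
  let ?v = "s \<otimes> (t \<otimes> s)" and ?v' = "s \<otimes> (s \<otimes> (t \<otimes> s))"
  have vR: "?v \<in> carrier R" "?v' \<in> carrier R" using sR tR by auto
  have ev: "?v \<otimes> (s \<otimes> s) = ?s1" using sR tR by algebra
  have ev': "?v' \<otimes> s = ?s1" using sR tR by algebra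
  show ?thesis
  proof (rule uSe_intro[OF m1 m2 m3 h1 h2 s1S])
    show "?s1 \<in> carrier R" using sR tR by simp
    show "\<And>x. x \<in> tfree R M1 X1 \<Longrightarrow> tpush R M1 X1 M2 X2 f1 g1 x \<in> trel R M2 X2 \<Longrightarrow> fsmult R ?s1 x \<in> trel R M1 X1"
      by (rule c1)
  next
    fix y assume y: "y \<in> tfree R M2 X2" and k: "tpush R M2 X2 M3 X3 f2 g2 y \<in> trel R M3 X3"
    obtain x where x: "x \<in> tfree R M1 X1" "teq M2 X2 (fsmult R (s \<otimes> s) y) (tpush R M1 X1 M2 X2 f1 g1 x)"
      using c2[OF y k] by blast
    have "teq M2 X2 (fsmult R ?v (fsmult R (s \<otimes> s) y)) (fsmult R ?v (tpush R M1 X1 M2 X2 f1 g1 x))"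
      by (rule teq_smult[OF m2 vR(1) _ _ x(2)]) (use y x sR in \<open>simp_all add: tpush_FV\<close>)
    moreover have "fsmult R ?v (fsmult R (s \<otimes> s) y) = fsmult R ?s1 y" using y sR vR ev by (simp add: fsmult_assoc)
    moreover have "fsmult R ?v (tpush R M1 X1 M2 X2 f1 g1 x) = tpush R M1 X1 M2 X2 f1 g1 (fsmult R ?v x)"
      using x vR by (simp add: tpush_fsmult)
    ultimately show "\<exists>x\<in>tfree R M1 X1. teq M2 X2 (fsmult R ?s1 y) (tpush R M1 X1 M2 X2 f1 g1 x)"
      using x vR by (intro bexI[of _ "fsmult R ?v x"]) auto
  next
    fix x assume x: "x \<in> tfree R M1 X1"
    have t1: "tpush R M1 X1 M2 X2 f1 g1 x \<in> tfree R M2 X2" by (rule tpush_tfree[OF x])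
    have "tpush R M2 X2 M3 X3 f2 g2 (fsmult R ?s1 (tpush R M1 X1 M2 X2 f1 g1 x)) =
        fsmult R ?v' (tpush R M2 X2 M3 X3 f2 g2 (fsmult R s (tpush R M1 X1 M2 X2 f1 g1 x)))"
      using t1 sR tR vR ev' by (simp add: tpush_fsmult fsmult_assoc tpush_FV)
    then show "tpush R M2 X2 M3 X3 f2 g2 (fsmult R ?s1 (tpush R M1 X1 M2 X2 f1 g1 x)) \<in> trel R M3 X3"
      using c3[OF x] vR by simp
  next
    fix z assume z: "z \<in> tfree R M3 X3"
    obtain y where y: "y \<in> tfree R M2 X2" "teq M3 X3 (fsmult R s z) (tpush R M2 X2 M3 X3 f2 g2 y)"
      using c4[OF z] by blast
    have "teq M3 X3 (fsmult R ?v' (fsmult R s z)) (fsmult R ?v' (tpush R M2 X2 M3 X3 f2 g2 y))"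
      by (rule teq_smult[OF m3 vR(2) _ _ y(2)]) (use y z sR in \<open>simp_all add: tpush_FV\<close>)
    moreover have "fsmult R ?v' (fsmult R s z) = fsmult R ?s1 z" using z sR vR ev' by (simp add: fsmult_assoc)
    moreover have "fsmult R ?v' (tpush R M2 X2 M3 X3 f2 g2 y) = tpush R M2 X2 M3 X3 f2 g2 (fsmult R ?v' y)"
      using y vR by (simp add: tpush_fsmult)
    ultimately show "\<exists>y\<in>tfree R M2 X2. teq M3 X3 (fsmult R ?s1 z) (tpush R M2 X2 M3 X3 f2 g2 y)"
      using y vR by (intro bexI[of _ "fsmult R ?v' y"]) auto
  qed
qed

end

theorem proposition2p4:
  fixes R :: "'r ring" and S :: "'r set" and F :: "('r,'f) module"
  assumes "cring R" and "mult_subset R S" and "module R F"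
  shows "(u_S_flat TYPE('m \<Rightarrow> 'r) TYPE('m \<Rightarrow> 'r) TYPE('m) R S F \<longrightarrow>
            (\<forall>(A :: ('r,'a) module) (B :: ('r,'b) module) f g.
               module R A \<and> module R B \<and> mod_hom R A B f \<and> mod_hom R B F g \<and>
               u_S_exact R S A B F f g \<longrightarrow> u_S_pure TYPE('m) R S A B F f g))
       \<and> ((\<forall>(A :: ('r,'f \<Rightarrow> 'r) module) (B :: ('r,'f \<Rightarrow> 'r) module) f g.
               module R A \<and> module R B \<and> mod_hom R A B f \<and> mod_hom R B F g \<and>
               short_exact A B F f g \<longrightarrow>
               u_S_pure TYPE('x) R S A B F f g \<and> u_S_pure TYPE('y) R S A B F f g \<and>
               u_S_pure TYPE('z) R S A B F f g)
          \<longrightarrow> u_S_flat TYPE('x) TYPE('y) TYPE('z) R S F)"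
proof -
  interpret cr R by (rule cr.intro) (rule assms(1))
  have SR: "S \<subseteq> carrier R" and oneS: "\<one>\<^bsub>R\<^esub> \<in> S" and mulS: "\<And>a b. a \<in> S \<Longrightarrow> b \<in> S \<Longrightarrow> a \<otimes>\<^bsub>R\<^esub> b \<in> S"
    using assms(2) unfolding mult_subset_def by auto
  have mF: "module R F" by (rule assms(3))
  show ?thesis
  proof (intro conjI impI allI)
    fix A :: "('r,'a) module" and B :: "('r,'b) module" and f g
    assume flat: "u_S_flat TYPE('m \<Rightarrow> 'r) TYPE('m \<Rightarrow> 'r) TYPE('m) R S F"
      and h: "module R A \<and> module R B \<and> mod_hom R A B f \<and> mod_hom R B F g \<and> u_S_exact R S A B F f g"
    then have mA: "module R A" and mB: "module R B" and hf: "mod_hom R A B f" and hg: "mod_hom R B F g"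
      and ue: "u_S_exact R S A B F f g" by auto
    obtain s where sS: "s \<in> S"
      and e1: "\<And>a. a \<in> carrier A \<Longrightarrow> f a = \<zero>\<^bsub>B\<^esub> \<Longrightarrow> s \<odot>\<^bsub>A\<^esub> a = \<zero>\<^bsub>A\<^esub>"
      and e2: "\<And>b. b \<in> carrier B \<Longrightarrow> g b = \<zero>\<^bsub>F\<^esub> \<Longrightarrow> s \<odot>\<^bsub>B\<^esub> b \<in> f ` carrier A"
      and e3: "\<And>a. a \<in> carrier A \<Longrightarrow> g (s \<odot>\<^bsub>B\<^esub> f a) = \<zero>\<^bsub>F\<^esub>"
      and e4: "\<And>c. c \<in> carrier F \<Longrightarrow> s \<odot>\<^bsub>F\<^esub> c \<in> g ` carrier B"
      using ue unfolding u_S_exact_def by blast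
    have sR: "s \<in> carrier R" using sS SR by blast
    show "u_S_pure TYPE('m) R S A B F f g"
      unfolding u_S_pure_def
    proof (intro allI impI)
      fix M :: "('r,'m) module" assume mM: "module R M"
      let ?P = "freemod R (carrier M)" and ?K = "kmod R M" and ?pi = "fpi R M"
      have mP: "module R ?P" by (rule freemod_module)
      have mK: "module R ?K" by (rule kmod_module[OF mM])
      have hi: "mod_hom R ?K ?P id" by (rule kmod_hom[OF mM])
      have hp: "mod_hom R ?P M ?pi" by (rule fpi_hom[OF mM])
      have "u_S_exact R S ?K ?P M id ?pi" by (rule se_uSe[OF mK mP mM hi hp kmod_exact[OF mM] oneS])
      then have "u_S_exact R S (tensor R ?K F) (tensor R ?P F) (tensor R M F)
          (tensor_map R ?K F ?P F id id) (tensor_map R ?P F M F ?pi id)"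
        using flat mK mP mM hi hp unfolding u_S_flat_def by blast
      then obtain t where tS: "t \<in> S" and fl: "\<forall>x\<in>tfree R ?K F. tpush R ?K F ?P F id id x \<in> trel R ?P F \<longrightarrow>
          fsmult R t x \<in> trel R ?K F"
        using uSe_dest1[OF mK mF mP mF mM mF hi mh_id SR] by blast
      have tR: "t \<in> carrier R" using tS SR by blast
      have s1S: "s \<otimes>\<^bsub>R\<^esub> ((s \<otimes>\<^bsub>R\<^esub> s) \<otimes>\<^bsub>R\<^esub> (t \<otimes>\<^bsub>R\<^esub> s)) \<in> S" using sS tS mulS by simp
      show "u_S_exact R S (tensor R M A) (tensor R M B) (tensor R M F) (tensor_map R M A M B id f) (tensor_map R M B M F id g)"
      proof (rule finish[OF mM mA mM mB mM mF mh_id hf mh_id hg sR tR s1S])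
        show "\<And>x. x \<in> tfree R M A \<Longrightarrow> tpush R M A M B id f x \<in> trel R M B \<Longrightarrow>
            fsmult R (s \<otimes>\<^bsub>R\<^esub> ((s \<otimes>\<^bsub>R\<^esub> s) \<otimes>\<^bsub>R\<^esub> (t \<otimes>\<^bsub>R\<^esub> s))) x \<in> trel R M A"
          by (rule chase[OF mM mA mB mF hf hg sR tR e1 e2 e3 e4]) (use fl in blast)+
        show "\<And>y. y \<in> tfree R M B \<Longrightarrow> tpush R M B M F id g y \<in> trel R M F \<Longrightarrow>
            \<exists>x\<in>tfree R M A. teq M B (fsmult R (s \<otimes>\<^bsub>R\<^esub> s) y) (tpush R M A M B id f x)"
          by (rule RF2[OF mM mA mB mF hf hg sR e2 e3 e4])
        show "\<And>x. x \<in> tfree R M A \<Longrightarrow> tpush R M B M F id g (fsmult R s (tpush R M A M B id f x)) \<in> trel R M F"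
          by (rule RF3[OF mM mA mB mF hf hg sR e2 e3 e4])
        show "\<And>z. z \<in> tfree R M F \<Longrightarrow> \<exists>y\<in>tfree R M B. teq M F (fsmult R s z) (tpush R M B M F id g y)"
          by (rule RF4[OF mM mA mB mF hf hg sR e2 e3 e4])
      qed
    qed
  next
    assume H: "\<forall>(A :: ('r,'f \<Rightarrow> 'r) module) (B :: ('r,'f \<Rightarrow> 'r) module) f g.
               module R A \<and> module R B \<and> mod_hom R A B f \<and> mod_hom R B F g \<and>
               short_exact A B F f g \<longrightarrow>
               u_S_pure TYPE('x) R S A B F f g \<and> u_S_pure TYPE('y) R S A B F f g \<and>
               u_S_pure TYPE('z) R S A B F f g"
    let ?P = "freemod R (carrier F)" and ?K = "kmod R F" and ?pi = "fpi R F"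
    have mP: "module R ?P" by (rule freemod_module)
    have mK: "module R ?K" by (rule kmod_module[OF mF])
    have hi: "mod_hom R ?K ?P id" by (rule kmod_hom[OF mF])
    have hp: "mod_hom R ?P F ?pi" by (rule fpi_hom[OF mF])
    have pure: "u_S_pure TYPE('z) R S ?K ?P F id ?pi"
      using H mK mP hi hp kmod_exact[OF mF] by blast
    show "u_S_flat TYPE('x) TYPE('y) TYPE('z) R S F"
      unfolding u_S_flat_def
    proof (intro allI impI)
      fix A :: "('r,'x) module" and B :: "('r,'y) module" and C :: "('r,'z) module" and f g
      assume h: "module R A \<and> module R B \<and> module R C \<and> mod_hom R A B f \<and> mod_hom R B C g \<and> u_S_exact R S A B C f g"
      then have mA: "module R A" and mB: "module R B" and mC: "module R C" and hf: "mod_hom R A B f"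
        and hg: "mod_hom R B C g" and ue: "u_S_exact R S A B C f g" by auto
      obtain s where sS: "s \<in> S"
        and e1: "\<And>a. a \<in> carrier A \<Longrightarrow> f a = \<zero>\<^bsub>B\<^esub> \<Longrightarrow> s \<odot>\<^bsub>A\<^esub> a = \<zero>\<^bsub>A\<^esub>"
        and e2: "\<And>b. b \<in> carrier B \<Longrightarrow> g b = \<zero>\<^bsub>C\<^esub> \<Longrightarrow> s \<odot>\<^bsub>B\<^esub> b \<in> f ` carrier A"
        and e3: "\<And>a. a \<in> carrier A \<Longrightarrow> g (s \<odot>\<^bsub>B\<^esub> f a) = \<zero>\<^bsub>C\<^esub>"
        and e4: "\<And>c. c \<in> carrier C \<Longrightarrow> s \<odot>\<^bsub>C\<^esub> c \<in> g ` carrier B"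
        using ue unfolding u_S_exact_def by blast
      have sR: "s \<in> carrier R" using sS SR by blast
      have "u_S_exact R S (tensor R C ?K) (tensor R C ?P) (tensor R C F) (tensor_map R C ?K C ?P id id)
          (tensor_map R C ?P C F id ?pi)"
        using pure mC unfolding u_S_pure_def by blast
      then obtain t where tS: "t \<in> S" and pu: "\<forall>x\<in>tfree R C ?K. tpush R C ?K C ?P id id x \<in> trel R C ?P \<longrightarrow>
          fsmult R t x \<in> trel R C ?K"
        using uSe_dest1[OF mC mK mC mP mC mF mh_id hi SR] by blast
      have tR: "t \<in> carrier R" using tS SR by blast
      have s1S: "s \<otimes>\<^bsub>R\<^esub> ((s \<otimes>\<^bsub>R\<^esub> s) \<otimes>\<^bsub>R\<^esub> (t \<otimes>\<^bsub>R\<^esub> s)) \<in> S" using sS tS mulS by simp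
      have fl: "fsmult R t x \<in> trel R ?K C"
        if x: "x \<in> tfree R ?K C" and k: "tpush R ?K C ?P C id id x \<in> trel R ?P C" for x
      proof -
        have "fsw (tpush R ?K C ?P C id id x) = tpush R C ?K C ?P id id (fsw x)"
          using fsw_tpush[OF x mh_funcset[OF hi] idfun] .
        then have "tpush R C ?K C ?P id id (fsw x) \<in> trel R C ?P" using k fsw_trel[OF mP mC] by metis
        then have "fsmult R t (fsw x) \<in> trel R C ?K" using pu fsw_tfree[OF x] by blast
        then have "fsw (fsmult R t x) \<in> trel R C ?K" by (simp add: fsw_fsmult)
        then show ?thesis using fsw_trel_iff[OF mK mC] by blast
      qed
      show "u_S_exact R S (tensor R A F) (tensor R B F) (tensor R C F) (tensor_map R A F B F f id)
          (tensor_map R B F C F g id)"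
      proof (rule finish[OF mA mF mB mF mC mF hf mh_id hg mh_id sR tR s1S])
        fix x assume x: "x \<in> tfree R A F" and k: "tpush R A F B F f id x \<in> trel R B F"
        have "fsw (tpush R A F B F f id x) = tpush R F A F B id f (fsw x)"
          using fsw_tpush[OF x mh_funcset[OF hf] idfun] .
        then have k': "tpush R F A F B id f (fsw x) \<in> trel R F B" using k fsw_trel[OF mB mF] by metis
        have "fsmult R (s \<otimes>\<^bsub>R\<^esub> ((s \<otimes>\<^bsub>R\<^esub> s) \<otimes>\<^bsub>R\<^esub> (t \<otimes>\<^bsub>R\<^esub> s))) (fsw x) \<in> trel R F A"
          by (rule chase[OF mF mA mB mC hf hg sR tR e1 e2 e3 e4 fl fsw_tfree[OF x] k'])
        then have "fsw (fsmult R (s \<otimes>\<^bsub>R\<^esub> ((s \<otimes>\<^bsub>R\<^esub> s) \<otimes>\<^bsub>R\<^esub> (t \<otimes>\<^bsub>R\<^esub> s))) x) \<in> trel R F A" by (simp add: fsw_fsmult)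
        then show "fsmult R (s \<otimes>\<^bsub>R\<^esub> ((s \<otimes>\<^bsub>R\<^esub> s) \<otimes>\<^bsub>R\<^esub> (t \<otimes>\<^bsub>R\<^esub> s))) x \<in> trel R A F" using fsw_trel_iff[OF mA mF] by blast
      next
        show "\<And>y. y \<in> tfree R B F \<Longrightarrow> tpush R B F C F g id y \<in> trel R C F \<Longrightarrow>
            \<exists>x\<in>tfree R A F. teq B F (fsmult R (s \<otimes>\<^bsub>R\<^esub> s) y) (tpush R A F B F f id x)"
          by (rule rx_F2[OF mA mB mC mF hf hg sR e2 e3 e4])
        show "\<And>x. x \<in> tfree R A F \<Longrightarrow> tpush R B F C F g id (fsmult R s (tpush R A F B F f id x)) \<in> trel R C F"
          by (rule rx_F3[OF mA mB mC mF hf hg sR e2 e3 e4])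
        show "\<And>z. z \<in> tfree R C F \<Longrightarrow> \<exists>y\<in>tfree R B F. teq C F (fsmult R s z) (tpush R B F C F g id y)"
          by (rule rx_F4[OF mA mB mC mF hf hg sR e2 e3 e4])
      qed
    qed
  qed
qed


end
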